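(* (1) For every integer $n\ge 8$, the minimum of ${\rm cc}(G)$ over all $2$-connected graphs $G$ of order $n$ with girth at least $4$ equals $6$. (2) For every integer $n\ge 10$, the minimum of ${\rm cc}(G)$ over all $2$-connected graphs $G$ of order $n$ with girth at least $5$ equals $8$. (3) For every even integer $n\ge 12$, the minimum of ${\rm cc}(G)$ over all $2$-connected graphs $G$ of order $n$ with girth at least $6$ equals $8$; for every odd integer $n\ge 13$, this minimum equals $9$.
   Context: All graphs are finite and simple. The girth of a graph is the length of a shortest cycle. A cummerbund of a graph is a longest cycle; ${\rm cc}(G)$ is the number of vertices of $G$ lying in at least one cummerbund. *)

theory Defs
  imports Main
begin

definition simple_graph :: "'a set \<Rightarrow> ('a \<Rightarrow> 'a \<Rightarrow> bool) \<Rightarrow> bool" where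
  "simple_graph V E \<longleftrightarrow> finite V \<and> (\<forall>x y. E x y \<longrightarrow> x \<in> V \<and> y \<in> V)
     \<and> (\<forall>x y. E x y \<longrightarrow> E y x) \<and> (\<forall>x. \<not> E x x)"

definition is_cycle :: "('a \<Rightarrow> 'a \<Rightarrow> bool) \<Rightarrow> 'a list \<Rightarrow> bool" where
  "is_cycle E c \<longleftrightarrow> length c \<ge> 3 \<and> distinct c
     \<and> (\<forall>i < length c. E (c ! i) (c ! ((i + 1) mod length c)))"

definition girth_at_least :: "('a \<Rightarrow> 'a \<Rightarrow> bool) \<Rightarrow> nat \<Rightarrow> bool" where
  "girth_at_least E g \<longleftrightarrow> (\<forall>c. is_cycle E c \<longrightarrow> length c \<ge> g)"

definition connected_on :: "'a set \<Rightarrow> ('a \<Rightarrow> 'a \<Rightarrow> bool) \<Rightarrow> bool" where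
  "connected_on W E \<longleftrightarrow> W \<noteq> {} \<and>
     (\<forall>u\<in>W. \<forall>w\<in>W. (\<lambda>x y. x \<in> W \<and> y \<in> W \<and> E x y)\<^sup>*\<^sup>* u w)"

definition two_connected :: "'a set \<Rightarrow> ('a \<Rightarrow> 'a \<Rightarrow> bool) \<Rightarrow> bool" where
  "two_connected V E \<longleftrightarrow> card V > 2 \<and>
     (\<forall>S. S \<subseteq> V \<and> card S < 2 \<longrightarrow> connected_on (V - S) E)"

definition cummerbund :: "('a \<Rightarrow> 'a \<Rightarrow> bool) \<Rightarrow> 'a list \<Rightarrow> bool" where
  "cummerbund E c \<longleftrightarrow> is_cycle E c \<and> (\<forall>c'. is_cycle E c' \<longrightarrow> length c' \<le> length c)"

definition cc :: "'a set \<Rightarrow> ('a \<Rightarrow> 'a \<Rightarrow> bool) \<Rightarrow> nat" where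
  "cc V E = card {v \<in> V. \<exists>c. cummerbund E c \<and> v \<in> set c}"

text \<open>Values of cc over all 2-connected graphs of order n with girth at least g
  (every finite graph is isomorphic to one with natural-number vertices).\<close>
definition cc_values :: "nat \<Rightarrow> nat \<Rightarrow> nat set" where
  "cc_values n g = {cc V E | (V :: nat set) E. simple_graph V E \<and> card V = n
      \<and> two_connected V E \<and> girth_at_least E g}"

definition is_minimum :: "nat set \<Rightarrow> nat \<Rightarrow> bool" where
  "is_minimum S m \<longleftrightarrow> m \<in> S \<and> (\<forall>x\<in>S. m \<le> x)"

end

theory Submission
  imports Defs
begin

lemma mod_succ: fixes i L :: nat assumes "i < L" shows "(i + 1) mod L = (if i + 1 = L then 0 else i + 1)"
proof (cases "i + 1 = L")
  case True then show ?thesis by simp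
next
  case False then have "i + 1 < L" using assms by simp
  then show ?thesis by simp
qed

lemma mod_pred: "(i::nat) < L \<Longrightarrow> (i + L - 1) mod L = (if i = 0 then L - 1 else i - 1)"
proof (cases "i = 0")
  case False
  assume "i < L"
  then have "i + L - 1 = (i - 1) + L" using False by linarith
  then have "(i + L - 1) mod L = (i - 1 + L) mod L" by simp
  also have "\<dots> = (i - 1) mod L" by (rule mod_add_self2)
  also have "\<dots> = i - 1" using \<open>i < L\<close> by simp
  finally show ?thesis using False by simp
qed simp

lemma is_cycle_alt:
  "is_cycle E c \<longleftrightarrow> 3 \<le> length c \<and> distinct c \<and> successively E c \<and> E (last c) (hd c)"
proof
  assume a: "is_cycle E c"
  then have L: "3 \<le> length c" "distinct c" and e: "\<forall>i<length c. E (c ! i) (c ! ((i + 1) mod length c))"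
    by (auto simp: is_cycle_def)
  have "successively E c"
    unfolding successively_conv_nth
  proof (intro allI impI)
    fix i assume "Suc i < length c"
    then show "E (c ! i) (c ! Suc i)" using e[rule_format, of i] by simp
  qed
  moreover have "E (last c) (hd c)"
  proof -
    have "length c - 1 < length c" using L by simp
    from e[rule_format, OF this] L show ?thesis
    proof -
      have ne: "c \<noteq> []" using L by auto
      have "(length c - 1 + 1) mod length c = 0" using L by (cases "length c") auto
      then show ?thesis using e[rule_format, OF \<open>length c - 1 < length c\<close>] ne
        by (simp add: last_conv_nth hd_conv_nth)
    qed
  qed
  ultimately show "3 \<le> length c \<and> distinct c \<and> successively E c \<and> E (last c) (hd c)" using L by simp
next
  assume a: "3 \<le> length c \<and> distinct c \<and> successively E c \<and> E (last c) (hd c)"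
  show "is_cycle E c"
    unfolding is_cycle_def
  proof (intro conjI allI impI)
    fix i assume i: "i < length c"
    show "E (c ! i) (c ! ((i + 1) mod length c))"
    proof (cases "Suc i < length c")
      case True then show ?thesis using a successively_nth[of E c i] by simp
    next
      case False
      then have "i = length c - 1" using i by simp
      have ne: "c \<noteq> []" using a by auto
      have "E (c ! (length c - 1)) (c ! 0)" using a ne by (simp add: last_conv_nth hd_conv_nth)
      moreover obtain n where "length c = Suc n" using ne by (cases c) auto
      ultimately show ?thesis using \<open>i = length c - 1\<close> by simp
    qed
  qed (use a in auto)
qed

definition cnb :: "'a list \<Rightarrow> 'a \<Rightarrow> 'a \<Rightarrow> bool" where
  "cnb c x y \<longleftrightarrow> (\<exists>i<length c. (c!i = x \<and> c!((i+1) mod length c) = y) \<or> (c!i = y \<and> c!((i+1) mod length c) = x))"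

lemma cnb_sym: "cnb c x y \<Longrightarrow> cnb c y x"
  unfolding cnb_def by blast

lemma cnb_set: "cnb c x y \<Longrightarrow> x \<in> set c \<and> y \<in> set c"
  unfolding cnb_def
  by (metis length_pos_if_in_set mod_less_divisor nth_mem gr_implies_not0 not_gr0 less_nat_zero_code)

lemma cnb_E:
  assumes "is_cycle E c" "\<And>x y. E x y \<Longrightarrow> E y x" "cnb c x y"
  shows "E x y"
  using assms unfolding cnb_def is_cycle_def by metis

lemma cnb_two:
  assumes "is_cycle E c" "x \<in> set c"
  shows "\<exists>y z. y \<noteq> z \<and> cnb c x y \<and> cnb c x z"
proof -
  let ?L = "length c"
  obtain i where i: "i < ?L" "c ! i = x" using assms(2) by (metis in_set_conv_nth)
  have L: "3 \<le> ?L" "distinct c" using assms(1) by (auto simp: is_cycle_def)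
  define k where "k = (i + ?L - 1) mod ?L"
  have k: "k < ?L" "(k + 1) mod ?L = i"
  proof -
    show "k < ?L" using L unfolding k_def by (intro mod_less_divisor) auto
    show "(k + 1) mod ?L = i"
    proof (cases "i = 0")
      case True then show ?thesis using L by (cases "length c") (auto simp: k_def)
    next
      case False
      then have "k = i - 1" using i L mod_pred[of i ?L] by (simp add: k_def)
      then show ?thesis using False i by simp
    qed
  qed
  have ne: "(i + 1) mod ?L \<noteq> k"
  proof
    assume "(i + 1) mod ?L = k"
    then show False using L i mod_succ[of i ?L] mod_pred[of i ?L] unfolding k_def
      by (auto split: if_splits)
  qed
  have "c ! ((i + 1) mod ?L) \<noteq> c ! k"
    using ne L k(1) by (subst nth_eq_iff_index_eq) (auto intro: mod_less_divisor)
  moreover have "cnb c x (c ! ((i + 1) mod ?L))" using i unfolding cnb_def by blast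
  moreover have "cnb c x (c ! k)" using i k unfolding cnb_def by metis
  ultimately show ?thesis by blast
qed

lemma cnb_cases:
  assumes "is_cycle E c" "i < length c" "cnb c (c ! i) y"
  shows "y = c ! ((i + 1) mod length c) \<or> y = c ! ((i + length c - 1) mod length c)"
proof -
  let ?L = "length c"
  have L: "3 \<le> ?L" "distinct c" using assms(1) by (auto simp: is_cycle_def)
  obtain k where k: "k < ?L" and
    h: "(c!k = c!i \<and> c!((k+1) mod ?L) = y) \<or> (c!k = y \<and> c!((k+1) mod ?L) = c!i)"
    using assms(3) unfolding cnb_def by blast
  have m: "(k+1) mod ?L < ?L" using k by (intro mod_less_divisor) auto
  show ?thesis
  proof (cases "c!k = c!i \<and> c!((k+1) mod ?L) = y")
    case True
    then have "k = i" using L k assms(2) nth_eq_iff_index_eq by blast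
    then show ?thesis using True by simp
  next
    case False
    then have h2: "c!k = y" "c!((k+1) mod ?L) = c!i" using h by auto
    then have ki: "(k+1) mod ?L = i" using L m assms(2) nth_eq_iff_index_eq by blast
    have "k = (i + ?L - 1) mod ?L"
      using ki mod_succ[OF k] mod_pred[OF assms(2)] k by (auto split: if_splits)
    then show ?thesis using h2 by simp
  qed
qed

lemma cnb_three:
  assumes "is_cycle E c" "cnb c x y1" "cnb c x y2" "cnb c x y3"
  shows "y1 = y2 \<or> y1 = y3 \<or> y2 = y3"
proof -
  have "x \<in> set c" using assms(2) cnb_set by metis
  then obtain i where i: "i < length c" "x = c ! i" by (metis in_set_conv_nth)
  show ?thesis using cnb_cases[OF assms(1) i(1)] assms(2-4) i(2) by metis
qed

lemma successively_rtranclp: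
  "successively Q p \<Longrightarrow> p \<noteq> [] \<Longrightarrow> Q\<^sup>*\<^sup>* (hd p) (last p)"
proof (induction p)
  case (Cons a p)
  then show ?case
    by (cases p) (auto simp: successively_Cons intro: converse_rtranclp_into_rtranclp)
qed simp


definition thE :: "(nat \<Rightarrow> 'a list) \<Rightarrow> 'a \<Rightarrow> 'a \<Rightarrow> nat \<Rightarrow> 'a \<Rightarrow> 'a \<Rightarrow> bool" where
  "thE M u w K x y \<longleftrightarrow> (\<exists>k<K. \<exists>i. Suc i < length (u # M k @ [w]) \<and>
      ((u # M k @ [w]) ! i = x \<and> (u # M k @ [w]) ! Suc i = y \<or>
       (u # M k @ [w]) ! i = y \<and> (u # M k @ [w]) ! Suc i = x))"

definition thV :: "(nat \<Rightarrow> 'a list) \<Rightarrow> 'a \<Rightarrow> 'a \<Rightarrow> nat \<Rightarrow> 'a set" where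
  "thV M u w K = {u, w} \<union> (\<Union>k<K. set (M k))"

locale theta =
  fixes M :: "nat \<Rightarrow> 'a list" and u w :: 'a and K :: nat
  assumes K2: "2 \<le> K"
    and Mne: "\<And>k. k < K \<Longrightarrow> M k \<noteq> []"
    and Mdist: "\<And>k. k < K \<Longrightarrow> distinct (M k)"
    and uM: "\<And>k. k < K \<Longrightarrow> u \<notin> set (M k)"
    and wM: "\<And>k. k < K \<Longrightarrow> w \<notin> set (M k)"
    and uw: "u \<noteq> w"
    and Mdisj: "\<And>k k'. k < K \<Longrightarrow> k' < K \<Longrightarrow> k \<noteq> k' \<Longrightarrow> set (M k) \<inter> set (M k') = {}"
begin

abbreviation "P k \<equiv> u # M k @ [w]"
abbreviation "E \<equiv> thE M u w K"
abbreviation "V \<equiv> thV M u w K"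

lemma distP: "k < K \<Longrightarrow> distinct (P k)" using Mdist uM wM uw by auto

lemma E_sym: "E x y \<Longrightarrow> E y x" unfolding thE_def by blast

lemma succ_P: "k < K \<Longrightarrow> successively E (P k)"
  unfolding successively_conv_nth thE_def by blast

lemma E_irrefl: "\<not> E x x"
proof
  assume "E x x"
  then obtain k i where k: "k<K" "Suc i < length (P k)" "P k ! i = x" "P k ! Suc i = x"
    unfolding thE_def by blast
  then show False using distP[OF k(1)] nth_eq_iff_index_eq[of "P k" i "Suc i"] by simp
qed

lemma setP_V: "k < K \<Longrightarrow> set (P k) \<subseteq> V"
  unfolding thV_def by auto

lemma E_V: "E x y \<Longrightarrow> x \<in> V \<and> y \<in> V"
proof -
  assume "E x y"
  then obtain k i where k: "k<K" "Suc i < length (P k)"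
    "(P k ! i = x \<and> P k ! Suc i = y) \<or> (P k ! i = y \<and> P k ! Suc i = x)"
    unfolding thE_def by blast
  have "P k ! i \<in> set (P k)" "P k ! Suc i \<in> set (P k)" using k(2) by (metis nth_mem Suc_lessD)+
  then show ?thesis using k(3) setP_V[OF k(1)] by blast
qed

lemma P_nth_int: "1 \<le> t \<Longrightarrow> t \<le> length (M k) \<Longrightarrow> P k ! t = M k ! (t - 1)"
  by (cases t) (auto simp: nth_append)

lemma P_nth0: "P k ! 0 = u" by simp

lemma P_nth_last: "P k ! (length (M k) + 1) = w" by (simp add: nth_append)

lemma in_P_int: "k < K \<Longrightarrow> x \<in> set (P k) \<Longrightarrow> x \<noteq> u \<Longrightarrow> x \<noteq> w \<Longrightarrow> x \<in> set (M k)"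
  by auto

lemma nbr_int:
  assumes k: "k < K" and i: "0 < i" "i \<le> length (M k)" and e: "E (P k ! i) y"
  shows "y = P k ! (i - 1) \<or> y = P k ! (i + 1)"
proof -
  let ?x = "P k ! i"
  have xM: "?x \<in> set (M k)" using P_nth_int[of i k] i by simp
  obtain k' j where kj: "k'<K" "Suc j < length (P k')"
    "(P k' ! j = ?x \<and> P k' ! Suc j = y) \<or> (P k' ! j = y \<and> P k' ! Suc j = ?x)"
    using e unfolding thE_def by blast
  have "?x \<in> set (P k')" using kj by (metis nth_mem Suc_lessD)
  then have "?x \<in> set (M k')" using xM uM[OF k] wM[OF k] by auto
  then have kk: "k' = k" using Mdisj[OF kj(1) k] xM by blast
  have li: "i < length (P k)" using i by simp
  show ?thesis
  proof (cases "P k' ! j = ?x \<and> P k' ! Suc j = y")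
    case True
    then have "j = i" using kk distP[OF k] nth_eq_iff_index_eq[of "P k" j i] kj(2) li by auto
    then show ?thesis using True kk by simp
  next
    case False
    then have h: "P k ! j = y" "P k ! Suc j = ?x" using kj(3) kk by auto
    then have "Suc j = i" using distP[OF k] nth_eq_iff_index_eq[of "P k" "Suc j" i] kj(2) li kk by auto
    then show ?thesis using h by auto
  qed
qed

lemma nbr_u:
  assumes "E u y" shows "\<exists>k<K. y = hd (M k)"
proof -
  obtain k j where kj: "k<K" "Suc j < length (P k)"
    "(P k ! j = u \<and> P k ! Suc j = y) \<or> (P k ! j = y \<and> P k ! Suc j = u)"
    using assms unfolding thE_def by blast
  have d: "distinct (P k)" using distP[OF kj(1)] .
  show ?thesis
  proof (cases "P k ! j = u \<and> P k ! Suc j = y")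
    case True
    then have "j = 0" using d nth_eq_iff_index_eq[of "P k" j 0] kj(2) by auto
    then have "y = hd (M k)" using True Mne[OF kj(1)] by (cases "M k") auto
    then show ?thesis using kj(1) by blast
  next
    case False
    then have "P k ! Suc j = P k ! 0" using kj(3) by auto
    then have "Suc j = 0" using d nth_eq_iff_index_eq[of "P k" "Suc j" 0] kj(2) by auto
    then show ?thesis by simp
  qed
qed

lemma cyc_V: "is_cycle E c \<Longrightarrow> set c \<subseteq> V"
proof
  fix x assume c: "is_cycle E c" and x: "x \<in> set c"
  obtain y z where "cnb c x y" using cnb_two[OF c x] by blast
  then have "E x y" using cnb_E[OF c] E_sym by blast
  then show "x \<in> V" using E_V by blast
qed

lemma cyc_prop:
  assumes c: "is_cycle E c" and k: "k < K" and j: "j < length (M k)" and x: "M k ! j \<in> set c"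
  shows "cnb c (M k ! j) (P k ! j) \<and> cnb c (M k ! j) (P k ! (j + 2))"
proof -
  have xe: "M k ! j = P k ! (j + 1)" using P_nth_int[of "j+1" k] j by simp
  obtain y z where yz: "y \<noteq> z" "cnb c (M k ! j) y" "cnb c (M k ! j) z" using cnb_two[OF c x] by blast
  have "E (P k ! (j+1)) y" "E (P k ! (j+1)) z" using yz cnb_E[OF c] E_sym xe by metis+
  then have "y = P k ! j \<or> y = P k ! (j + 2)" "z = P k ! j \<or> z = P k ! (j + 2)"
    using nbr_int[OF k, of "j+1"] j by auto
  then show ?thesis using yz by auto
qed

lemma cyc_thread:
  assumes c: "is_cycle E c" and k: "k < K" and j: "j < length (M k)" and x: "M k ! j \<in> set c"
  shows "set (P k) \<subseteq> set c"
proof -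
  have s0: "P k ! (j+1) \<in> set c" using x P_nth_int[of "j+1" k] j by simp
  have down: "\<forall>d. d \<le> j + 1 \<longrightarrow> P k ! (j + 1 - d) \<in> set c"
  proof
    fix d show "d \<le> j + 1 \<longrightarrow> P k ! (j + 1 - d) \<in> set c"
    proof (induction d)
      case 0 then show ?case using s0 by simp
    next
      case (Suc d)
      show ?case
      proof
        assume sd: "Suc d \<le> j + 1"
        let ?t = "j + 1 - d"
        have t: "1 \<le> ?t" "?t \<le> length (M k)" using sd j by auto
        have "M k ! (?t - 1) \<in> set c" using Suc sd P_nth_int[OF t] by simp
        then have "cnb c (M k ! (?t - 1)) (P k ! (?t - 1))" using cyc_prop[OF c k, of "?t - 1"] t by auto
        then have "P k ! (?t - 1) \<in> set c" using cnb_set by metis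
        moreover have "?t - 1 = j + 1 - Suc d" by simp
        ultimately show "P k ! (j + 1 - Suc d) \<in> set c" by simp
      qed
    qed
  qed
  have up: "\<forall>d. j + 1 + d < length (P k) \<longrightarrow> P k ! (j + 1 + d) \<in> set c"
  proof
    fix d show "j + 1 + d < length (P k) \<longrightarrow> P k ! (j + 1 + d) \<in> set c"
    proof (induction d)
      case 0 then show ?case using s0 by simp
    next
      case (Suc d)
      show ?case
      proof
        assume sd: "j + 1 + Suc d < length (P k)"
        let ?t = "j + 1 + d"
        have t: "1 \<le> ?t" "?t \<le> length (M k)" using sd by auto
        have "M k ! (?t - 1) \<in> set c" using Suc sd P_nth_int[OF t] by simp
        then have "cnb c (M k ! (?t - 1)) (P k ! (?t - 1 + 2))" using cyc_prop[OF c k, of "?t - 1"] t by auto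
        then have "P k ! (?t - 1 + 2) \<in> set c" using cnb_set by metis
        moreover have "?t - 1 + 2 = j + 1 + Suc d" by simp
        ultimately show "P k ! (j + 1 + Suc d) \<in> set c" by simp
      qed
    qed
  qed
  show ?thesis
  proof
    fix y assume "y \<in> set (P k)"
    then obtain i where i: "i < length (P k)" "y = P k ! i" by (metis in_set_conv_nth)
    show "y \<in> set c"
    proof (cases "i \<le> j + 1")
      case True
      then show ?thesis using down[rule_format, of "j + 1 - i"] i by simp
    next
      case False
      then show ?thesis using up[rule_format, of "i - (j + 1)"] i by simp
    qed
  qed
qed

lemma int_thread:
  assumes c: "is_cycle E c" and x: "x \<in> set c" "x \<noteq> u" "x \<noteq> w"
  shows "\<exists>k<K. x \<in> set (M k) \<and> set (P k) \<subseteq> set c"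
proof -
  have "x \<in> V" using cyc_V[OF c] x by auto
  then obtain k where k: "k < K" "x \<in> set (M k)" using x unfolding thV_def by auto
  then obtain j where j: "j < length (M k)" "x = M k ! j" by (metis in_set_conv_nth)
  show ?thesis using cyc_thread[OF c k(1) j(1)] j x k by auto
qed

theorem cycle_two:
  assumes c: "is_cycle E c"
  shows "\<exists>k1 k2. k1 < K \<and> k2 < K \<and> k1 \<noteq> k2 \<and> set c = {u,w} \<union> set (M k1) \<union> set (M k2)"
proof -
  have L: "3 \<le> length c" "distinct c" using c by (auto simp: is_cycle_def)
  have "\<exists>x\<in>set c. x \<noteq> u \<and> x \<noteq> w"
  proof (rule ccontr)
    assume "\<not> ?thesis"
    then have "set c \<subseteq> {u, w}" by auto
    then have "card (set c) \<le> card {u, w}" by (intro card_mono) auto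
    also have "\<dots> \<le> 2" by (simp add: card_insert_le_m1)
    finally show False using L distinct_card[of c] by simp
  qed
  then obtain x where x: "x \<in> set c" "x \<noteq> u" "x \<noteq> w" by blast
  obtain k0 where "k0 < K" "set (P k0) \<subseteq> set c" using int_thread[OF c x] by blast
  then have uc: "u \<in> set c" by auto
  obtain y z where yz: "y \<noteq> z" "cnb c u y" "cnb c u z" using cnb_two[OF c uc] by blast
  obtain k1 where k1: "k1 < K" "y = hd (M k1)" using nbr_u yz(2) cnb_E[OF c] E_sym by metis
  obtain k2 where k2: "k2 < K" "z = hd (M k2)" using nbr_u yz(3) cnb_E[OF c] E_sym by metis
  have k12: "k1 \<noteq> k2" using yz k1 k2 by auto
  have t1: "set (P k1) \<subseteq> set c"
    using cyc_thread[OF c k1(1), of 0] Mne[OF k1(1)] yz(2) k1(2) cnb_set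
    by (metis hd_conv_nth length_greater_0_conv)
  have t2: "set (P k2) \<subseteq> set c"
    using cyc_thread[OF c k2(1), of 0] Mne[OF k2(1)] yz(3) k2(2) cnb_set
    by (metis hd_conv_nth length_greater_0_conv)
  have sub: "set c \<subseteq> {u,w} \<union> set (M k1) \<union> set (M k2)"
  proof
    fix v assume v: "v \<in> set c"
    show "v \<in> {u,w} \<union> set (M k1) \<union> set (M k2)"
    proof (cases "v = u \<or> v = w")
      case True then show ?thesis by auto
    next
      case False
      then obtain k where k: "k < K" "v \<in> set (M k)" "set (P k) \<subseteq> set c"
        using int_thread[OF c v] by blast
      have h: "hd (M k) = M k ! 0" using Mne[OF k(1)] by (simp add: hd_conv_nth)
      have "hd (M k) \<in> set c" using k(3) Mne[OF k(1)] by auto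
      then have "cnb c (hd (M k)) u" using cyc_prop[OF c k(1), of 0] Mne[OF k(1)] h by auto
      then have "cnb c u (hd (M k))" by (rule cnb_sym)
      then have "hd (M k) = y \<or> hd (M k) = z" using cnb_three[OF c yz(2) yz(3)] yz(1) by metis
      then have "k = k1 \<or> k = k2"
        using Mdisj[OF k(1) k1(1)] Mdisj[OF k(1) k2(1)] k1(2) k2(2) Mne k k1 k2
        by (metis disjoint_iff list.set_sel(1))
      then show ?thesis using k by auto
    qed
  qed
  have "{u,w} \<union> set (M k1) \<union> set (M k2) \<subseteq> set c" using t1 t2 by auto
  then show ?thesis using sub k1 k2 k12 by blast
qed

lemma card_two:
  assumes "k1 < K" "k2 < K" "k1 \<noteq> k2"
  shows "card ({u,w} \<union> set (M k1) \<union> set (M k2)) = 2 + length (M k1) + length (M k2)"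
proof -
  have d: "set (M k1) \<inter> set (M k2) = {}" using Mdisj assms by blast
  have e: "{u,w} \<union> set (M k1) \<union> set (M k2) = {u,w} \<union> (set (M k1) \<union> set (M k2))" by auto
  have "card ({u,w} \<union> (set (M k1) \<union> set (M k2))) = card {u,w} + card (set (M k1) \<union> set (M k2))"
    using uM wM assms by (intro card_Un_disjoint) auto
  then have "card ({u,w} \<union> set (M k1) \<union> set (M k2)) = card {u,w} + card (set (M k1) \<union> set (M k2))"
    using e by simp
  also have "\<dots> = 2 + length (M k1) + length (M k2)"
    using d uw Mdist assms by (simp add: card_Un_disjoint distinct_card)
  finally show ?thesis .
qed

lemma cycle_len:
  assumes c: "is_cycle E c"
  shows "\<exists>k1 k2. k1 < K \<and> k2 < K \<and> k1 \<noteq> k2 \<and> set c = {u,w} \<union> set (M k1) \<union> set (M k2)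
     \<and> length c = 2 + length (M k1) + length (M k2)"
proof -
  obtain k1 k2 where k: "k1 < K" "k2 < K" "k1 \<noteq> k2" "set c = {u,w} \<union> set (M k1) \<union> set (M k2)"
    using cycle_two[OF c] by blast
  have "length c = card (set c)" using c by (simp add: is_cycle_def distinct_card)
  then show ?thesis using k card_two[OF k(1-3)] by auto
qed

lemma succ_M: "k < K \<Longrightarrow> successively E (M k)"
  using succ_P[of k] by (simp add: successively_append_iff successively_Cons)

theorem cycle_exists:
  assumes k: "k1 < K" "k2 < K" "k1 \<noteq> k2"
  shows "is_cycle E (P k1 @ rev (M k2)) \<and> set (P k1 @ rev (M k2)) = {u,w} \<union> set (M k1) \<union> set (M k2)"
proof -
  let ?c = "P k1 @ rev (M k2)"
  have ne2: "M k2 \<noteq> []" using Mne k by auto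
  have d: "set (M k1) \<inter> set (M k2) = {}" using Mdisj k by blast
  have dist: "distinct ?c" using distP[OF k(1)] Mdist[OF k(2)] d uM[OF k(2)] wM[OF k(2)] by auto
  have s1: "successively E (P k1)" using succ_P k by auto
  have s2: "successively E (rev (M k2))"
    using succ_M[OF k(2)] E_sym by (simp add: successively_mono)
  have sP2: "successively E (u # M k2 @ [w])" using succ_P k by auto
  have e1: "E (last (M k2)) w"
    using sP2 ne2 by (simp add: successively_append_iff successively_Cons)
  have e2: "E u (hd (M k2))"
    using sP2 ne2 by (cases "M k2") (auto simp: successively_Cons)
  have sc: "successively E ?c"
    apply (subst successively_append_iff)
    using s1 s2 E_sym[OF e1] ne2 by (simp add: hd_rev)
  have cl: "E (last ?c) (hd ?c)" using E_sym[OF e2] ne2 by (simp add: last_rev)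
  have "3 \<le> length ?c" using ne2 by (cases "M k2") auto
  then show ?thesis using dist sc cl by (auto simp: is_cycle_alt)
qed

lemma finite_V: "finite V" unfolding thV_def by auto

lemma simple: "simple_graph V E"
  unfolding simple_graph_def using finite_V E_V E_sym E_irrefl by blast

theorem theta_girth:
  assumes "\<forall>k1<K. \<forall>k2<K. k1 \<noteq> k2 \<longrightarrow> g \<le> 2 + length (M k1) + length (M k2)"
  shows "girth_at_least E g"
  unfolding girth_at_least_def
proof (intro allI impI)
  fix c assume cyc: "is_cycle E c"
  obtain k1 k2 where k: "k1 < K" "k2 < K" "k1 \<noteq> k2" "length c = 2 + length (M k1) + length (M k2)"
    using cycle_len[OF cyc] by blast
  show "g \<le> length c" using assms k by auto
qed

theorem theta_cc:
  assumes K0: "1 < K"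
    and mx: "\<forall>k1<K. \<forall>k2<K. k1 \<noteq> k2 \<and> {k1,k2} \<noteq> {0,1} \<longrightarrow>
       length (M k1) + length (M k2) < length (M 0) + length (M 1)"
  shows "cc V E = 2 + length (M 0) + length (M 1)"
proof -
  let ?Lm = "2 + length (M 0) + length (M 1)"
  let ?S = "{u,w} \<union> set (M 0) \<union> set (M 1)"
  have c0: "is_cycle E (P 0 @ rev (M 1))" "set (P 0 @ rev (M 1)) = ?S"
    using cycle_exists[of 0 1] K0 by auto
  have l0: "length (P 0 @ rev (M 1)) = ?Lm" by simp
  have bound: "length c \<le> ?Lm" if cyc: "is_cycle E c" for c
  proof -
    obtain k1 k2 where k: "k1 < K" "k2 < K" "k1 \<noteq> k2" "length c = 2 + length (M k1) + length (M k2)"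
      using cycle_len[OF cyc] by blast
    show ?thesis
    proof (cases "{k1,k2} = {0,1}")
      case True
      then have "(k1 = 0 \<and> k2 = 1) \<or> (k1 = 1 \<and> k2 = 0)" by (auto simp: doubleton_eq_iff)
      then show ?thesis using k by auto
    next
      case False
      have "length (M k1) + length (M k2) < length (M 0) + length (M 1)"
        using mx[rule_format, of k1 k2] k(1,2,3) False by simp
      then show ?thesis using k(4) by simp
    qed
  qed
  have cum0: "cummerbund E (P 0 @ rev (M 1))"
    unfolding cummerbund_def using c0(1) l0 bound by simp
  have eq: "{v \<in> V. \<exists>c. cummerbund E c \<and> v \<in> set c} = ?S"
  proof
    show "?S \<subseteq> {v \<in> V. \<exists>c. cummerbund E c \<and> v \<in> set c}"
    proof
      fix v assume v: "v \<in> ?S"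
      have "v \<in> set (P 0 @ rev (M 1))" using v c0(2) by blast
      moreover then have "v \<in> V" using cyc_V[OF c0(1)] by blast
      ultimately show "v \<in> {v \<in> V. \<exists>c. cummerbund E c \<and> v \<in> set c}" using cum0 by blast
    qed
  next
    show "{v \<in> V. \<exists>c. cummerbund E c \<and> v \<in> set c} \<subseteq> ?S"
    proof
      fix v assume "v \<in> {v \<in> V. \<exists>c. cummerbund E c \<and> v \<in> set c}"
      then obtain c where v: "v \<in> V" "cummerbund E c" "v \<in> set c" by blast
      then have cc: "is_cycle E c" "?Lm \<le> length c"
        unfolding cummerbund_def using c0 l0 by metis+
      obtain k1 k2 where k: "k1 < K" "k2 < K" "k1 \<noteq> k2"
        "set c = {u,w} \<union> set (M k1) \<union> set (M k2)" "length c = 2 + length (M k1) + length (M k2)"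
        using cycle_len[OF cc(1)] by blast
      have "{k1,k2} = {0,1}"
      proof (rule ccontr)
        assume "{k1,k2} \<noteq> {0,1}"
        then have "length (M k1) + length (M k2) < length (M 0) + length (M 1)"
          using mx[rule_format, of k1 k2] k(1,2,3) \<open>{k1,k2} \<noteq> {0,1}\<close> by simp
        then show False using k(5) cc(2) by simp
      qed
      then have "set c = ?S" using k(4) by (auto simp: doubleton_eq_iff)
      then show "v \<in> ?S" using v by simp
    qed
  qed
  have "card ?S = ?Lm" using card_two[of 0 1] K0 by simp
  then show ?thesis unfolding cc_def eq .
qed


lemma card_V: "card V = 2 + (\<Sum>k<K. length (M k))"
proof -
  have d: "{u,w} \<inter> (\<Union>k<K. set (M k)) = {}" using uM wM by auto
  have "card (\<Union>k<K. set (M k)) = (\<Sum>k<K. card (set (M k)))"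
    using Mdisj by (intro card_UN_disjoint) auto
  also have "\<dots> = (\<Sum>k<K. length (M k))" using Mdist by (intro sum.cong) (auto simp: distinct_card)
  finally have "card (\<Union>k<K. set (M k)) = (\<Sum>k<K. length (M k))" .
  moreover have "card V = card {u,w} + card (\<Union>k<K. set (M k))"
    unfolding thV_def using d by (intro card_Un_disjoint) auto
  ultimately show ?thesis using uw by simp
qed

lemma path_conn:
  assumes "successively E p" "set p \<subseteq> W" "p \<noteq> []"
  shows "(\<lambda>x y. x \<in> W \<and> y \<in> W \<and> E x y)\<^sup>*\<^sup>* (hd p) (last p)"
proof -
  have "successively (\<lambda>x y. x \<in> W \<and> y \<in> W \<and> E x y) p"
    by (rule successively_mono[OF assms(1)]) (use assms(2) in auto)
  then show ?thesis using successively_rtranclp assms(3) by fast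
qed

lemma R_sym:
  assumes "(\<lambda>x y. x \<in> W \<and> y \<in> W \<and> E x y)\<^sup>*\<^sup>* a b"
  shows "(\<lambda>x y. x \<in> W \<and> y \<in> W \<and> E x y)\<^sup>*\<^sup>* b a"
  using assms
proof (induction rule: rtranclp_induct)
  case (step y z)
  have "(\<lambda>x y. x \<in> W \<and> y \<in> W \<and> E x y) z y" using step(2) E_sym by blast
  then show ?case using step(3) by (rule converse_rtranclp_into_rtranclp)
qed simp

lemma hub_reach:
  assumes S: "\<forall>a\<in>S. \<forall>b\<in>S. a = b" and x: "x \<in> V - S"
  shows "(u \<in> V - S \<and> (\<lambda>x y. x \<in> V - S \<and> y \<in> V - S \<and> E x y)\<^sup>*\<^sup>* x u) \<or>
         (w \<in> V - S \<and> (\<lambda>x y. x \<in> V - S \<and> y \<in> V - S \<and> E x y)\<^sup>*\<^sup>* x w)"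
proof (cases "x = u \<or> x = w")
  case True then show ?thesis using x by auto
next
  case False
  let ?W = "V - S"
  let ?R = "\<lambda>x y. x \<in> ?W \<and> y \<in> ?W \<and> E x y"
  obtain k where k: "k < K" "x \<in> set (M k)" using x False unfolding thV_def by auto
  obtain A B where AB: "M k = A @ x # B" using k(2) by (meson split_list)
  have dM: "distinct (M k)" using Mdist k(1) by simp
  have sP: "successively E (u # A @ x # B @ [w])" using succ_P[OF k(1)] AB by simp
  have s1: "successively E (u # A @ [x])"
    using sP successively_append_iff[of E "u # A @ [x]" "B @ [w]"] by simp
  have s2: "successively E (x # B @ [w])"
    using sP successively_append_iff[of E "u # A" "x # B @ [w]"] by simp
  have VP: "set (P k) \<subseteq> V" using setP_V k(1) by simp
  have disj12: "set (u # A @ [x]) \<inter> set (x # B @ [w]) = {x}"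
    using dM AB uM[OF k(1)] wM[OF k(1)] uw by auto
  show ?thesis
  proof (cases "set (u # A @ [x]) \<subseteq> ?W")
    case True
    have e: "hd (u # A @ [x]) = u" "last (u # A @ [x]) = x" by simp_all
    have "?R\<^sup>*\<^sup>* u x" using path_conn[OF s1 True list.simps(3), unfolded e] .
    then have "?R\<^sup>*\<^sup>* x u" by (rule R_sym)
    then show ?thesis using True by auto
  next
    case False
    then obtain s1' where s1': "s1' \<in> set (u # A @ [x])" "s1' \<in> S" using VP AB by auto
    have "set (x # B @ [w]) \<subseteq> ?W"
    proof
      fix y assume y: "y \<in> set (x # B @ [w])"
      have "y \<in> V" using y VP AB by auto
      moreover have "y \<notin> S"
      proof
        assume "y \<in> S"
        then have "y = s1'" using S s1' by blast
        then have "y = x" using disj12 y s1' by blast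
        then show False using x \<open>y \<in> S\<close> by simp
      qed
      ultimately show "y \<in> ?W" by simp
    qed
    note sub = this
    have e: "hd (x # B @ [w]) = x" "last (x # B @ [w]) = w" by simp_all
    have "?R\<^sup>*\<^sup>* x w" using path_conn[OF s2 sub list.simps(3), unfolded e] .
    then show ?thesis using \<open>set (x # B @ [w]) \<subseteq> ?W\<close> by auto
  qed
qed

lemma hubs_conn:
  assumes S: "\<forall>a\<in>S. \<forall>b\<in>S. a = b" and h: "u \<notin> S" "w \<notin> S"
  shows "(\<lambda>x y. x \<in> V - S \<and> y \<in> V - S \<and> E x y)\<^sup>*\<^sup>* u w"
proof -
  obtain k where k: "k < K" "set (M k) \<inter> S = {}"
  proof (cases "set (M 0) \<inter> S = {}")
    case True then show ?thesis using that[of 0] K2 by simp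
  next
    case False
    then obtain s where s: "s \<in> set (M 0)" "s \<in> S" by blast
    have "set (M 1) \<inter> S = {}"
    proof (rule ccontr)
      assume "set (M 1) \<inter> S \<noteq> {}"
      then obtain s' where "s' \<in> set (M 1)" "s' \<in> S" by blast
      then have "s' = s" using S s by blast
      then show False using Mdisj[of 0 1] K2 s \<open>s' \<in> set (M 1)\<close> by auto
    qed
    then show ?thesis using that[of 1] K2 by simp
  qed
  have sub: "set (P k) \<subseteq> V - S" using k h setP_V[OF k(1)] by auto
  have e: "hd (P k) = u" "last (P k) = w" by simp_all
  show ?thesis using path_conn[OF succ_P[OF k(1)] sub list.simps(3), unfolded e] .
qed

theorem theta_2conn: "two_connected V E"
  unfolding two_connected_def
proof (intro conjI allI impI)
  have "(\<Sum>k<K. length (M k)) \<ge> (\<Sum>k<K. (1::nat))"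
    using Mne by (intro sum_mono) (simp add: Suc_leI)
  then show "card V > 2" using card_V K2 by simp
next
  fix S assume S: "S \<subseteq> V \<and> card S < 2"
  have fS: "finite S" using S finite_V finite_subset by blast
  have S1: "\<forall>a\<in>S. \<forall>b\<in>S. a = b"
  proof (intro ballI)
    fix a b assume ab: "a \<in> S" "b \<in> S"
    show "a = b"
    proof (rule ccontr)
      assume "a \<noteq> b"
      then have "card {a,b} \<le> card S" using ab fS by (intro card_mono) auto
      then show False using S \<open>a \<noteq> b\<close> by simp
    qed
  qed
  let ?W = "V - S"
  let ?R = "\<lambda>x y. x \<in> ?W \<and> y \<in> ?W \<and> E x y"
  have ne: "?W \<noteq> {}"
  proof
    assume "?W = {}"
    then have "V \<subseteq> S" by auto
    then have "card V \<le> card S" using fS by (intro card_mono) auto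
    moreover have "card V > 2"
    proof -
      have "(\<Sum>k<K. length (M k)) \<ge> (\<Sum>k<K. (1::nat))"
        using Mne by (intro sum_mono) (simp add: Suc_leI)
      then show ?thesis using card_V K2 by simp
    qed
    ultimately show False using S by simp
  qed
  have conn: "?R\<^sup>*\<^sup>* a b" if a: "a \<in> ?W" and b: "b \<in> ?W" for a b
  proof -
    have hub_sym: "?R\<^sup>*\<^sup>* h1 h2" if "h1 \<in> {u,w}" "h2 \<in> {u,w}" "h1 \<in> ?W" "h2 \<in> ?W" for h1 h2
    proof -
      show ?thesis
      proof (cases "h1 = h2")
        case True then show ?thesis by simp
      next
        case False
        then have uw': "u \<notin> S" "w \<notin> S" using that by auto
        have uw2: "?R\<^sup>*\<^sup>* u w" using hubs_conn[OF S1 uw'] .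
        have wu2: "?R\<^sup>*\<^sup>* w u" using R_sym[OF uw2] .
        have "(h1 = u \<and> h2 = w) \<or> (h1 = w \<and> h2 = u)" using False that by auto
        then show ?thesis using uw2 wu2 by auto
      qed
    qed
    obtain h1 where h1: "h1 \<in> {u,w}" "h1 \<in> ?W" "?R\<^sup>*\<^sup>* a h1" using hub_reach[OF S1 a] by blast
    obtain h2 where h2: "h2 \<in> {u,w}" "h2 \<in> ?W" "?R\<^sup>*\<^sup>* b h2" using hub_reach[OF S1 b] by blast
    have "?R\<^sup>*\<^sup>* h1 h2" using hub_sym h1 h2 by blast
    moreover have "?R\<^sup>*\<^sup>* h2 b" using R_sym[OF h2(3)] .
    ultimately show ?thesis using h1(3) by (meson rtranclp_trans)
  qed
  show "connected_on ?W E" unfolding connected_on_def using ne conn by blast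
qed

end


lemma theta_values:
  assumes "theta M (0::nat) 1 K" and "1 < K"
    and "card (thV M 0 1 K) = n"
    and "\<forall>k1<K. \<forall>k2<K. k1 \<noteq> k2 \<longrightarrow> g \<le> 2 + length (M k1) + length (M k2)"
    and "\<forall>k1<K. \<forall>k2<K. k1 \<noteq> k2 \<and> {k1,k2} \<noteq> {0,1} \<longrightarrow>
       length (M k1) + length (M k2) < length (M 0) + length (M 1)"
  shows "2 + length (M 0) + length (M 1) \<in> cc_values n g"
proof -
  interpret theta M 0 1 K by fact
  have "cc (thV M 0 1 K) (thE M 0 1 K) = 2 + length (M 0) + length (M 1)"
    using theta_cc assms by blast
  moreover have "simple_graph (thV M 0 1 K) (thE M 0 1 K)" by (rule simple)
  moreover have "two_connected (thV M 0 1 K) (thE M 0 1 K)" by (rule theta_2conn)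
  moreover have "girth_at_least (thE M 0 1 K) g" using theta_girth assms(4) by blast
  ultimately show ?thesis unfolding cc_values_def using assms(3) by force
qed

lemma two_helper: "(k1::nat) \<noteq> k2 \<Longrightarrow> {k1,k2} \<noteq> {0,1} \<Longrightarrow> 2 \<le> k1 \<or> 2 \<le> k2"
proof (rule ccontr)
  assume a: "k1 \<noteq> k2" "{k1,k2} \<noteq> {0,1}" "\<not> (2 \<le> k1 \<or> 2 \<le> k2)"
  then have "(k1 = 0 \<and> k2 = 1) \<or> (k1 = 1 \<and> k2 = 0)" by auto
  then have "{k1,k2} = {0,1}" by auto
  then show False using a by simp
qed

definition M4 :: "nat \<Rightarrow> nat list" where
  "M4 k = (if k = 0 then [2,3] else if k = 1 then [4,5] else [k+4])"

definition M5 :: "nat \<Rightarrow> nat list" where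
  "M5 k = (if k = 0 then [2,3,4] else if k = 1 then [5,6,7] else [2*k+4, 2*k+5])"

definition M5o :: "nat \<Rightarrow> nat \<Rightarrow> nat list" where
  "M5o m k = (if k = m + 2 then [2*m+8] else M5 k)"

definition M6o :: "nat \<Rightarrow> nat list" where
  "M6o k = (if k = 0 then [2,3,4] else if k = 1 then [5,6,7,8] else [2*k+5, 2*k+6])"

lemma sum_shift2: "(\<Sum>k<(m::nat)+2. (f k :: nat)) = f 0 + f 1 + (\<Sum>k<m. f (k+2))"
proof -
  have "(\<Sum>k<m+2. f k) = (\<Sum>k<Suc (Suc m). f k)" by simp
  also have "\<dots> = f 0 + (\<Sum>k<Suc m. f (Suc k))" by (rule sum.lessThan_Suc_shift)
  also have "(\<Sum>k<Suc m. f (Suc k)) = f 1 + (\<Sum>k<m. f (Suc (Suc k)))" by (subst sum.lessThan_Suc_shift) simp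
  finally show ?thesis by (simp add: add.assoc)
qed

lemma up4: assumes "2 \<le> m" shows "6 \<in> cc_values (m + 6) 4"
proof -
  have th: "theta M4 0 1 (m+2)"
    by unfold_locales (auto simp: M4_def)
  have cardV: "card (thV M4 0 1 (m+2)) = m + 6"
  proof -
    have "(\<Sum>k<m+2. length (M4 k)) = m + 4" by (subst sum_shift2) (simp add: M4_def)
    then show ?thesis using theta.card_V[OF th] by simp
  qed
  have val: "2 + length (M4 0) + length (M4 1) = 6" by (simp add: M4_def)
  have gi: "\<forall>k1<m+2. \<forall>k2<m+2. k1 \<noteq> k2 \<longrightarrow> 4 \<le> 2 + length (M4 k1) + length (M4 k2)"
    by (auto simp: M4_def)
  have mx: "\<forall>k1<m+2. \<forall>k2<m+2. k1 \<noteq> k2 \<and> {k1,k2} \<noteq> {0,1} \<longrightarrow>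
       length (M4 k1) + length (M4 k2) < length (M4 0) + length (M4 1)"
  proof (intro allI impI)
    fix k1 k2 assume "k1 < m+2" "k2 < m+2" "k1 \<noteq> k2 \<and> {k1,k2} \<noteq> {0,1}"
    then have "2 \<le> k1 \<or> 2 \<le> k2" using two_helper[of k1 k2] by simp
    then show "length (M4 k1) + length (M4 k2) < length (M4 0) + length (M4 1)"
      using \<open>k1 < m+2\<close> \<open>k2 < m+2\<close> by (auto simp: M4_def)
  qed
  have K1: "1 < m+2" by simp
  show ?thesis using theta_values[OF th K1 cardV gi mx] unfolding val .
qed

lemma up5: "8 \<in> cc_values (2*m + 8) 6"
proof -
  have th: "theta M5 0 1 (m+2)"
    by unfold_locales (auto simp: M5_def)
  have cardV: "card (thV M5 0 1 (m+2)) = 2*m + 8"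
  proof -
    have "(\<Sum>k<m+2. length (M5 k)) = 2*m + 6" by (subst sum_shift2) (simp add: M5_def)
    then show ?thesis using theta.card_V[OF th] by simp
  qed
  have val: "2 + length (M5 0) + length (M5 1) = 8" by (simp add: M5_def)
  have gi: "\<forall>k1<m+2. \<forall>k2<m+2. k1 \<noteq> k2 \<longrightarrow> 6 \<le> 2 + length (M5 k1) + length (M5 k2)"
    by (auto simp: M5_def)
  have mx: "\<forall>k1<m+2. \<forall>k2<m+2. k1 \<noteq> k2 \<and> {k1,k2} \<noteq> {0,1} \<longrightarrow>
       length (M5 k1) + length (M5 k2) < length (M5 0) + length (M5 1)"
  proof (intro allI impI)
    fix k1 k2 assume "k1 < m+2" "k2 < m+2" "k1 \<noteq> k2 \<and> {k1,k2} \<noteq> {0,1}"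
    then have "2 \<le> k1 \<or> 2 \<le> k2" using two_helper[of k1 k2] by simp
    then show "length (M5 k1) + length (M5 k2) < length (M5 0) + length (M5 1)"
      using \<open>k1 < m+2\<close> \<open>k2 < m+2\<close> by (auto simp: M5_def)
  qed
  have K1: "1 < m+2" by simp
  show ?thesis using theta_values[OF th K1 cardV gi mx] unfolding val .
qed

lemma up5o: "8 \<in> cc_values (2*m + 9) 5"
proof -
  have th: "theta (M5o m) 0 1 (m+3)"
    by unfold_locales (auto simp: M5o_def M5_def)
  have cardV: "card (thV (M5o m) 0 1 (m+3)) = 2*m + 9"
  proof -
    have e: "m + 3 = Suc (m + 2)" by simp
    have "(\<Sum>k<m+3. length (M5o m k)) = (\<Sum>k<m+2. length (M5o m k)) + length (M5o m (m+2))"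
      unfolding e by (rule sum.lessThan_Suc)
    also have "length (M5o m (m+2)) = 1" by (simp add: M5o_def)
    also have "(\<Sum>k<m+2. length (M5o m k)) = 6 + 2*m"
      by (subst sum_shift2) (simp add: M5o_def M5_def)
    finally show ?thesis using theta.card_V[OF th] by simp
  qed
  have val: "2 + length (M5o m 0) + length (M5o m 1) = 8" by (simp add: M5o_def M5_def)
  have gi: "\<forall>k1<m+3. \<forall>k2<m+3. k1 \<noteq> k2 \<longrightarrow> 5 \<le> 2 + length ((M5o m) k1) + length ((M5o m) k2)"
    by (auto simp: M5o_def M5_def)
  have mx: "\<forall>k1<m+3. \<forall>k2<m+3. k1 \<noteq> k2 \<and> {k1,k2} \<noteq> {0,1} \<longrightarrow>
       length ((M5o m) k1) + length ((M5o m) k2) < length ((M5o m) 0) + length ((M5o m) 1)"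
  proof (intro allI impI)
    fix k1 k2 assume "k1 < m+3" "k2 < m+3" "k1 \<noteq> k2 \<and> {k1,k2} \<noteq> {0,1}"
    then have "2 \<le> k1 \<or> 2 \<le> k2" using two_helper[of k1 k2] by simp
    then show "length ((M5o m) k1) + length ((M5o m) k2) < length ((M5o m) 0) + length ((M5o m) 1)"
      using \<open>k1 < m+3\<close> \<open>k2 < m+3\<close> by (auto simp: M5o_def M5_def)
  qed
  have K1: "1 < m+3" by simp
  show ?thesis using theta_values[OF th K1 cardV gi mx] unfolding val .
qed

lemma up6o: "9 \<in> cc_values (2*m + 9) 6"
proof -
  have th: "theta M6o 0 1 (m+2)"
    by unfold_locales (auto simp: M6o_def)
  have cardV: "card (thV M6o 0 1 (m+2)) = 2*m + 9"
  proof -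
    have "(\<Sum>k<m+2. length (M6o k)) = 2*m + 7" by (subst sum_shift2) (simp add: M6o_def)
    then show ?thesis using theta.card_V[OF th] by simp
  qed
  have val: "2 + length (M6o 0) + length (M6o 1) = 9" by (simp add: M6o_def)
  have gi: "\<forall>k1<m+2. \<forall>k2<m+2. k1 \<noteq> k2 \<longrightarrow> 6 \<le> 2 + length (M6o k1) + length (M6o k2)"
    by (auto simp: M6o_def)
  have mx: "\<forall>k1<m+2. \<forall>k2<m+2. k1 \<noteq> k2 \<and> {k1,k2} \<noteq> {0,1} \<longrightarrow>
       length (M6o k1) + length (M6o k2) < length (M6o 0) + length (M6o 1)"
  proof (intro allI impI)
    fix k1 k2 assume "k1 < m+2" "k2 < m+2" "k1 \<noteq> k2 \<and> {k1,k2} \<noteq> {0,1}"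
    then have "2 \<le> k1 \<or> 2 \<le> k2" using two_helper[of k1 k2] by simp
    then show "length (M6o k1) + length (M6o k2) < length (M6o 0) + length (M6o 1)"
      using \<open>k1 < m+2\<close> \<open>k2 < m+2\<close> by (auto simp: M6o_def)
  qed
  have K1: "1 < m+2" by simp
  show ?thesis using theta_values[OF th K1 cardV gi mx] unfolding val .
qed


lemma rtranclp_walk:
  assumes "R\<^sup>*\<^sup>* a b"
  shows "\<exists>p. p \<noteq> [] \<and> hd p = a \<and> last p = b \<and> successively R p"
  using assms
proof (induction rule: converse_rtranclp_induct)
  case base then show ?case by (intro exI[of _ "[b]"]) simp
next
  case (step y z)
  then obtain p where p: "p \<noteq> []" "hd p = z" "last p = b" "successively R p" by blast
  then show ?case using step(1) by (intro exI[of _ "y # p"]) (auto simp: successively_Cons)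
qed

lemma walk_to_path:
  assumes "successively R p" "p \<noteq> []"
  shows "\<exists>q. q \<noteq> [] \<and> distinct q \<and> hd q = hd p \<and> last q = last p \<and> set q \<subseteq> set p \<and> successively R q"
  using assms
proof (induction "length p" arbitrary: p rule: less_induct)
  case less
  show ?case
  proof (cases "distinct p")
    case True then show ?thesis using less by blast
  next
    case False
    then obtain xs ys zs y where d: "p = xs @ [y] @ ys @ [y] @ zs" using not_distinct_decomp by blast
    let ?p' = "xs @ [y] @ zs"
    have s: "successively R ?p'"
      using less(2) unfolding d
      by (auto simp: successively_append_iff successively_Cons split: if_splits)
    have l: "length ?p' < length p" using d by simp
    have h: "hd ?p' = hd p" using d by (cases xs) auto
    have la: "last ?p' = last p" using d by (cases zs) auto
    have st: "set ?p' \<subseteq> set p" using d by auto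
    obtain q where "q \<noteq> [] \<and> distinct q \<and> hd q = hd ?p' \<and> last q = last ?p' \<and> set q \<subseteq> set ?p' \<and> successively R q"
      using less(1)[OF l s] by auto
    then show ?thesis using h la st by auto
  qed
qed

lemma first_hit:
  assumes "successively R p" "p \<noteq> []" "last p \<in> S"
  shows "\<exists>q. q \<noteq> [] \<and> hd q = hd p \<and> last q \<in> S \<and> (\<forall>x\<in>set (butlast q). x \<notin> S)
     \<and> set q \<subseteq> set p \<and> successively R q \<and> (distinct p \<longrightarrow> distinct q)"
  using assms
proof (induction p)
  case Nil then show ?case by simp
next
  case (Cons x p)
  show ?case
  proof (cases "x \<in> S")
    case True then show ?thesis by (intro exI[of _ "[x]"]) auto
  next
    case False
    then have pne: "p \<noteq> []" using Cons by auto
    have sp: "successively R p" using Cons(2) by (cases p) (auto simp: successively_Cons)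
    have lp: "last p \<in> S" using Cons(4) pne by simp
    obtain q where q: "q \<noteq> []" "hd q = hd p" "last q \<in> S" "\<forall>x\<in>set (butlast q). x \<notin> S"
      "set q \<subseteq> set p" "successively R q" "distinct p \<longrightarrow> distinct q"
      using Cons.IH[OF sp pne lp] by blast
    have "R x (hd p)" using Cons(2) pne by (simp add: successively_Cons)
    then have "successively R (x # q)" using q by (simp add: successively_Cons)
    moreover have "\<forall>y\<in>set (butlast (x # q)). y \<notin> S" using q False by auto
    moreover have "distinct (x # p) \<longrightarrow> distinct (x # q)" using q by auto
    ultimately show ?thesis using q by (intro exI[of _ "x # q"]) auto
  qed
qed


definition isfan :: "('a \<Rightarrow> 'a \<Rightarrow> bool) \<Rightarrow> 'a list \<Rightarrow> 'a \<Rightarrow> 'a list \<Rightarrow> 'a list \<Rightarrow> bool" where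
  "isfan E C v P Q \<longleftrightarrow> P \<noteq> [] \<and> Q \<noteq> [] \<and> hd P = v \<and> hd Q = v \<and> distinct P \<and> distinct Q
     \<and> successively E P \<and> successively E Q \<and> last P \<in> set C \<and> last Q \<in> set C \<and> last P \<noteq> last Q
     \<and> set P \<inter> set Q = {v} \<and> (\<forall>x\<in>set (butlast P). x \<notin> set C) \<and> (\<forall>x\<in>set (butlast Q). x \<notin> set C)"

lemma isfan_sym: "isfan E C v P Q \<Longrightarrow> isfan E C v Q P"
  unfolding isfan_def by auto

lemma set_bl: "R \<noteq> [] \<Longrightarrow> set R = insert (last R) (set (butlast R))"
  by (induction R) auto

lemma successively_set_W:
  "successively (\<lambda>x y. x \<in> W \<and> y \<in> W \<and> R x y) p \<Longrightarrow> p \<noteq> [] \<Longrightarrow> hd p \<in> W \<Longrightarrow> set p \<subseteq> W"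
proof (induction p)
  case (Cons a p) then show ?case by (cases p) (auto simp: successively_Cons)
qed simp

locale g2c =
  fixes V :: "'a set" and E :: "'a \<Rightarrow> 'a \<Rightarrow> bool"
  assumes sg: "simple_graph V E" and tc: "two_connected V E"
begin

lemma Esym: "E x y \<Longrightarrow> E y x" using sg unfolding simple_graph_def by blast
lemma EV: "E x y \<Longrightarrow> x \<in> V \<and> y \<in> V" using sg unfolding simple_graph_def by blast
lemma finV: "finite V" using sg unfolding simple_graph_def by blast
lemma Eirr: "\<not> E x x" using sg unfolding simple_graph_def by blast

lemma cardV: "card V > 2" using tc unfolding two_connected_def by blast

lemma conn_minus:
  assumes "S \<subseteq> V" "card S < 2" shows "connected_on (V - S) E"
  using tc assms unfolding two_connected_def by blast

lemma path_in:
  assumes "S \<subseteq> V" "card S < 2" "a \<in> V - S" "b \<in> V - S"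
  shows "\<exists>p. p \<noteq> [] \<and> distinct p \<and> hd p = a \<and> last p = b \<and> set p \<subseteq> V - S \<and> successively E p"
proof -
  let ?R = "\<lambda>x y. x \<in> V - S \<and> y \<in> V - S \<and> E x y"
  have "?R\<^sup>*\<^sup>* a b" using conn_minus[OF assms(1,2)] assms(3,4) unfolding connected_on_def by blast
  then obtain p where p: "p \<noteq> []" "hd p = a" "last p = b" "successively ?R p" using rtranclp_walk[of ?R a b] by blast
  obtain q where q: "q \<noteq> []" "distinct q" "hd q = a" "last q = b" "set q \<subseteq> set p" "successively ?R q"
    using walk_to_path[OF p(4) p(1)] p by auto
  have "set q \<subseteq> V - S" using successively_set_W[OF q(6) q(1)] q(3) assms(3) by blast
  moreover have "successively E q" by (rule successively_mono[OF q(6)]) auto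
  ultimately show ?thesis using q by blast
qed

lemma cycle_V: "is_cycle E C \<Longrightarrow> set C \<subseteq> V"
proof
  fix x assume c: "is_cycle E C" and x: "x \<in> set C"
  then obtain i where "i < length C" "C ! i = x" by (metis in_set_conv_nth)
  then have "E x (C ! ((i+1) mod length C))" using c unfolding is_cycle_def by blast
  then show "x \<in> V" using EV by blast
qed

lemma fan_base:
  assumes C: "is_cycle E C" and v: "v \<in> V" "v \<notin> set C" and u: "u \<in> set C" "E v u"
  shows "\<exists>P Q. isfan E C v P Q"
proof -
  have L: "3 \<le> length C" "distinct C" using C by (auto simp: is_cycle_def)
  have "\<exists>b\<in>set C. b \<noteq> u"
  proof (rule ccontr)
    assume "\<not> ?thesis"
    then have "set C \<subseteq> {u}" by auto
    then have "card (set C) \<le> 1" using card_mono[of "{u}" "set C"] by simp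
    then show False using L distinct_card[of C] by simp
  qed
  then obtain b where b: "b \<in> set C" "b \<noteq> u" by blast
  have bV: "b \<in> V" using cycle_V[OF C] b by blast
  have uV: "u \<in> V" using cycle_V[OF C] u by blast
  have vu: "v \<noteq> u" using v u by blast
  obtain p where p: "p \<noteq> []" "distinct p" "hd p = v" "last p = b" "set p \<subseteq> V - {u}" "successively E p"
    using path_in[of "{u}" v b] uV v vu bV b by auto
  obtain q where q: "q \<noteq> []" "hd q = v" "last q \<in> set C" "\<forall>x\<in>set (butlast q). x \<notin> set C"
     "set q \<subseteq> set p" "successively E q" "distinct q"
    using first_hit[OF p(6) p(1), of "set C"] p b by auto
  have uq: "u \<notin> set q" using q(5) p(5) by auto
  have vq: "v \<in> set q" using q(1,2) by (cases q) auto
  have "isfan E C v [v, u] q"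
    unfolding isfan_def using q uq vq vu u v by auto
  then show ?thesis by blast
qed

lemma fan_H1:
  assumes F: "isfan E C u P1 P2" and e: "E v u" and vP: "v \<in> set P1" and vC: "v \<notin> set C"
  shows "\<exists>P Q. isfan E C v P Q"
proof -
  have vu: "v \<noteq> u" using e Eirr by blast
  obtain A B where AB: "P1 = A @ v # B" using vP by (meson split_list)
  have F1: "P1 \<noteq> []" "hd P1 = u" "distinct P1" "successively E P1" "last P1 \<in> set C"
    "P2 \<noteq> []" "hd P2 = u" "distinct P2" "successively E P2" "last P2 \<in> set C" "last P1 \<noteq> last P2"
    "set P1 \<inter> set P2 = {u}" "\<forall>x\<in>set (butlast P1). x \<notin> set C" "\<forall>x\<in>set (butlast P2). x \<notin> set C"
    using F unfolding isfan_def by auto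
  have Ane: "A \<noteq> []" using AB F1(2) vu by auto
  have uA: "u \<in> set A" using AB F1(2) Ane by (cases A) auto
  have dAB: "v \<notin> set A" "v \<notin> set B" "set A \<inter> set B = {}" using F1(3) AB by auto
  have uB: "u \<notin> set B" using uA dAB by auto
  have Bne: "B \<noteq> []" using AB F1(5) vC by auto
  have lB: "last (v # B) = last P1" using AB Bne by simp
  have vP2: "v \<notin> set P2" using F1(12) vP vu by auto
  have BP2: "set B \<inter> set P2 = {}" using F1(12) AB uB by auto
  have sB: "successively E (v # B)" using F1(4) AB by (simp add: successively_append_iff)
  have hP2: "hd P2 = u" using F1 by simp
  have sP2: "successively E (v # P2)" using F1(9) F1(6) hP2 e by (cases P2) (auto simp: successively_Cons)
  have bl1: "butlast P1 = A @ v # butlast B" using AB Bne by (simp add: butlast_append)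
  have "\<forall>x\<in>set (butlast (v # B)). x \<notin> set C" using F1(13) bl1 vC Bne by (cases B) auto
  moreover have "\<forall>x\<in>set (butlast (v # P2)). x \<notin> set C" using F1(14) vC F1(6) by (cases P2) auto
  moreover have "last (v # P2) = last P2" using F1(6) by simp
  ultimately have "isfan E C v (v # B) (v # P2)"
    unfolding isfan_def using lB F1 dAB vP2 BP2 sB sP2 AB by auto
  then show ?thesis by blast
qed

lemma fan_H2:
  assumes F: "isfan E C u P1 P2" and e: "E v u" and vn: "v \<notin> set P1" "v \<notin> set P2" "v \<notin> set C"
    and R: "R \<noteq> []" "hd R = v" "distinct R" "successively E R" "u \<notin> set R"
       "\<forall>y\<in>set (butlast R). y \<notin> set P1 \<and> y \<notin> set P2 \<and> y \<notin> set C" "last R \<in> set P1"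
  shows "\<exists>P Q. isfan E C v P Q"
proof -
  let ?x = "last R"
  have F1: "P1 \<noteq> []" "hd P1 = u" "distinct P1" "successively E P1" "last P1 \<in> set C"
    "P2 \<noteq> []" "hd P2 = u" "distinct P2" "successively E P2" "last P2 \<in> set C" "last P1 \<noteq> last P2"
    "set P1 \<inter> set P2 = {u}" "\<forall>x\<in>set (butlast P1). x \<notin> set C" "\<forall>x\<in>set (butlast P2). x \<notin> set C"
    using F unfolding isfan_def by auto
  have xR: "?x \<in> set R" using R(1) by simp
  have xu: "?x \<noteq> u" using xR R(5) by auto
  obtain A B where AB: "P1 = A @ ?x # B" using R(7) by (meson split_list)
  have Ane: "A \<noteq> []" using AB F1(2) xu by auto
  have uA: "u \<in> set A" using AB F1(2) Ane by (cases A) auto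
  have dAB: "?x \<notin> set A" "?x \<notin> set B" "set A \<inter> set B = {}" using F1(3) AB by auto
  have uB: "u \<notin> set B" using uA dAB by auto
  have xP2: "?x \<notin> set P2" using F1(12) R(7) xu by auto
  have Rdec: "R = butlast R @ [?x]" using R(1) by simp
  have RB: "set R \<inter> set B = {}"
  proof -
    have "set (butlast R) \<inter> set B = {}" using R(6) AB by auto
    then show ?thesis using dAB set_bl[OF R(1)] by auto
  qed
  have RP2: "set R \<inter> set P2 = {}"
  proof -
    have "set (butlast R) \<inter> set P2 = {}" using R(6) by auto
    then show ?thesis using xP2 set_bl[OF R(1)] by auto
  qed
  have BP2: "set B \<inter> set P2 = {}" using F1(12) AB uB by auto
  have vB: "v \<notin> set B" using vn AB by auto
  have dP: "distinct (R @ B)" using R(3) F1(3) AB RB by auto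
  have dQ: "distinct (v # P2)" using F1(8) vn by auto
  have sxB: "successively E (?x # B)" using F1(4) AB by (simp add: successively_append_iff)
  have sP: "successively E (R @ B)"
  proof (cases B)
    case Nil then show ?thesis using R(4) by simp
  next
    case (Cons b B')
    then have "E ?x b" "successively E B" using sxB by (auto simp: successively_Cons)
    then show ?thesis using R(4) R(1) Cons by (simp add: successively_append_iff)
  qed
  have sQ: "successively E (v # P2)" using F1(9) F1(6) F1(7) e by (cases P2) (auto simp: successively_Cons)
  have lP: "last (R @ B) = last P1" using AB by (cases "B = []") auto
  have lQ: "last (v # P2) = last P2" using F1(6) by simp
  have int: "set (R @ B) \<inter> set (v # P2) = {v}"
  proof -
    have "v \<in> set R" using R(1,2) by (cases R) auto
    then show ?thesis using RP2 BP2 vB by auto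
  qed
  have blP: "\<forall>y\<in>set (butlast (R @ B)). y \<notin> set C"
  proof
    fix y assume y: "y \<in> set (butlast (R @ B))"
    show "y \<notin> set C"
    proof (cases "B = []")
      case True then show ?thesis using y R(6) by auto
    next
      case False
      then have bl: "butlast (R @ B) = R @ butlast B" by (simp add: butlast_append)
      have bl1: "butlast P1 = A @ ?x # butlast B" using AB False by (simp add: butlast_append)
      have "y \<in> set R \<or> y \<in> set (butlast B)" using y bl by auto
      then show ?thesis
      proof
        assume "y \<in> set R"
        then have "y \<in> set (butlast R) \<or> y = ?x" using set_bl[OF R(1)] by auto
        then show ?thesis using R(6) F1(13) bl1 by auto
      next
        assume "y \<in> set (butlast B)" then show ?thesis using F1(13) bl1 by auto
      qed
    qed
  qed
  have blQ: "\<forall>y\<in>set (butlast (v # P2)). y \<notin> set C" using F1(14) vn F1(6) by (cases P2) auto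
  have "isfan E C v (R @ B) (v # P2)"
    unfolding isfan_def using R(1,2) dP dQ sP sQ lP lQ F1(5,10,11) int blP blQ by auto
  then show ?thesis by blast
qed

lemma fan_H3:
  assumes F: "isfan E C u P1 P2" and e: "E v u" and vn: "v \<notin> set P1" "v \<notin> set C"
    and R: "R \<noteq> []" "hd R = v" "distinct R" "successively E R"
       "\<forall>y\<in>set (butlast R). y \<notin> set P1 \<and> y \<notin> set C" "last R \<in> set C" "last R \<notin> set P1"
  shows "\<exists>P Q. isfan E C v P Q"
proof -
  have F1: "P1 \<noteq> []" "hd P1 = u" "distinct P1" "successively E P1" "last P1 \<in> set C"
    "\<forall>x\<in>set (butlast P1). x \<notin> set C"
    using F unfolding isfan_def by auto
  have Rdec: "R = butlast R @ [last R]" using R(1) by simp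
  have RP1: "set R \<inter> set P1 = {}"
  proof -
    have "set (butlast R) \<inter> set P1 = {}" using R(5) by auto
    then show ?thesis using R(7) set_bl[OF R(1)] by auto
  qed
  have vR: "v \<in> set R" using R(1,2) by (cases R) auto
  have sP: "successively E (v # P1)" using F1 e by (cases P1) (auto simp: successively_Cons)
  have "last (v # P1) \<noteq> last R" using F1(1) R(7) by (metis last_ConsR last_in_set)
  moreover have "set (v # P1) \<inter> set R = {v}" using RP1 vR by auto
  moreover have "\<forall>y\<in>set (butlast (v # P1)). y \<notin> set C" using F1(6) vn F1(1) by (cases P1) auto
  moreover have "\<forall>y\<in>set (butlast R). y \<notin> set C" using R(5) by auto
  ultimately have "isfan E C v (v # P1) R"
    unfolding isfan_def using F1 R vn sP by auto
  then show ?thesis by blast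
qed

lemma fan_walk:
  assumes C: "is_cycle E C"
  shows "p \<noteq> [] \<Longrightarrow> successively E p \<Longrightarrow> last p \<in> set C \<Longrightarrow> hd p \<notin> set C \<Longrightarrow> hd p \<in> V
     \<Longrightarrow> \<exists>P Q. isfan E C (hd p) P Q"
proof (induction p)
  case Nil then show ?case by simp
next
  case (Cons v p)
  have pne: "p \<noteq> []" using Cons by auto
  let ?u = "hd p"
  have e: "E v ?u" using Cons(3) pne by (simp add: successively_Cons)
  have sp: "successively E p" using Cons(3) pne by (simp add: successively_Cons)
  have vC: "v \<notin> set C" "v \<in> V" using Cons by auto
  have "\<exists>P Q. isfan E C v P Q"
  proof (cases "?u \<in> set C")
    case True then show ?thesis using fan_base[OF C vC(2) vC(1) True e] by simp
  next
    case False
    have uV: "?u \<in> V" using e EV by blast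
    obtain P1 P2 where F: "isfan E C ?u P1 P2" using Cons.IH[OF pne sp] Cons(4) pne False uV by auto
    have vu: "v \<noteq> ?u" using e Eirr by blast
    show ?thesis
    proof (cases "v \<in> set P1")
      case True then show ?thesis using fan_H1[OF F e True vC(1)] by simp
    next
      case nP1: False
      show ?thesis
      proof (cases "v \<in> set P2")
        case True then show ?thesis using fan_H1[OF isfan_sym[OF F] e True vC(1)] by simp
      next
        case nP2: False
        have L: "3 \<le> length C" using C by (auto simp: is_cycle_def)
        then have hC: "hd C \<in> set C" by (cases C) auto
        have hCV: "hd C \<in> V - {?u}" using hC cycle_V[OF C] False by auto
        obtain q where q: "q \<noteq> []" "distinct q" "hd q = v" "last q = hd C" "set q \<subseteq> V - {?u}" "successively E q"
          using path_in[of "{?u}" v "hd C"] uV vC vu hCV by auto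
        let ?S = "set P1 \<union> set P2 \<union> set C"
        obtain R where R: "R \<noteq> []" "hd R = v" "last R \<in> ?S" "\<forall>x\<in>set (butlast R). x \<notin> ?S"
          "set R \<subseteq> set q" "successively E R" "distinct R"
          using first_hit[OF q(6) q(1), of ?S] q hC by auto
        have uR: "?u \<notin> set R" using R(5) q(5) by auto
        show ?thesis
        proof (cases "last R \<in> set P1")
          case True
          show ?thesis by (rule fan_H2[OF F e nP1 nP2 vC(1) R(1,2,7,6) uR _ True]) (use R(4) in auto)
        next
          case nR1: False
          show ?thesis
          proof (cases "last R \<in> set P2")
            case True
            show ?thesis by (rule fan_H2[OF isfan_sym[OF F] e nP2 nP1 vC(1) R(1,2,7,6) uR _ True]) (use R(4) in auto)
          next
            case False
            then have "last R \<in> set C" using R(3) nR1 by auto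
            show ?thesis by (rule fan_H3[OF F e nP1 vC(1) R(1,2,7,6) _ \<open>last R \<in> set C\<close> nR1]) (use R(4) in auto)
          qed
        qed
      qed
    qed
  qed
  then show ?case by simp
qed

theorem fan_exists:
  assumes C: "is_cycle E C" and v: "v \<in> V" "v \<notin> set C"
  shows "\<exists>P Q. isfan E C v P Q"
proof -
  have L: "3 \<le> length C" using C by (auto simp: is_cycle_def)
  then have hC: "hd C \<in> set C" by (cases C) auto
  have hCV: "hd C \<in> V" using hC cycle_V[OF C] by auto
  obtain q where q: "q \<noteq> []" "distinct q" "hd q = v" "last q = hd C" "set q \<subseteq> V - {}" "successively E q"
    using path_in[of "{}" v "hd C"] v hCV by auto
  show ?thesis using fan_walk[OF C q(1) q(6)] q hC v by auto
qed

end


lemma is_cycle_rotate: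
  assumes c: "is_cycle E C"
  shows "is_cycle E (rotate k C)"
  unfolding is_cycle_def
proof (intro conjI allI impI)
  let ?L = "length C"
  have L: "3 \<le> ?L" "distinct C" and e: "\<forall>i<?L. E (C ! i) (C ! ((i + 1) mod ?L))"
    using c by (auto simp: is_cycle_def)
  show "3 \<le> length (rotate k C)" using L by simp
  show "distinct (rotate k C)" using L by simp
  fix i assume i: "i < length (rotate k C)"
  then have i': "i < ?L" by simp
  have m: "(i + 1) mod ?L < ?L" using L by (intro mod_less_divisor) auto
  have r1: "rotate k C ! i = C ! ((k + i) mod ?L)" using nth_rotate[OF i'] .
  have r2: "rotate k C ! ((i + 1) mod ?L) = C ! ((k + (i + 1) mod ?L) mod ?L)" using nth_rotate[OF m] .
  have "(k + (i + 1) mod ?L) mod ?L = ((k + i) mod ?L + 1) mod ?L"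
    by (simp add: mod_add_right_eq mod_Suc_eq add.assoc[symmetric])
  moreover have "(k + i) mod ?L < ?L" using L by (intro mod_less_divisor) auto
  ultimately show "E (rotate k C ! i) (rotate k C ! ((i + 1) mod length (rotate k C)))"
    using e r1 r2 by simp
qed

lemma ear_cycles:
  assumes c: "is_cycle E C" and sym: "\<And>x y. E x y \<Longrightarrow> E y x"
    and ij: "i < j" "j < length C" and I: "I \<noteq> []" "set I \<inter> set C = {}" "distinct I"
    and s: "successively E (C ! i # I @ [C ! j])"
  shows "(\<exists>A. is_cycle E A \<and> length A = length I + 1 + (length C - (j - i)) \<and> set I \<subseteq> set A)
       \<and> (\<exists>B. is_cycle E B \<and> length B = length I + 1 + (j - i) \<and> set I \<subseteq> set B)"
proof -
  let ?L = "length C"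
  let ?C = "rotate i C"
  let ?d = "j - i"
  have c': "is_cycle E ?C" by (rule is_cycle_rotate[OF c])
  have L: "3 \<le> ?L" "distinct C" using c by (auto simp: is_cycle_def)
  have lC: "length ?C = ?L" by simp
  have d: "0 < ?d" "?d < ?L" using ij by auto
  have Cne: "C \<noteq> []" using L by auto
  have C0: "?C ! 0 = C ! i" using nth_rotate[of 0 C i] Cne ij by simp
  have Cd: "?C ! ?d = C ! j" using nth_rotate[of ?d C i] L ij by simp
  have sC: "successively E ?C" "E (last ?C) (hd ?C)" "distinct ?C" using c' by (auto simp: is_cycle_alt)
  have setC: "set ?C = set C" by simp
  obtain T where T: "?C = C ! i # T" using C0 L by (cases ?C) auto
  have lT: "length T = ?L - 1" using T lC by (metis length_tl list.sel(3))
  have aT: "C ! i \<notin> set T" "distinct T" using sC(3) T by auto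
  have sT: "successively E T" using sC(1) T by (cases T) (auto simp: successively_Cons)
  have aI: "C ! i \<notin> set I" "C ! j \<notin> set I" using I(2) ij L by auto
  have sI: "successively E (C ! i # I)" using s successively_append_iff[of E "C ! i # I" "[C ! j]"] by simp
  have eI: "E (last I) (C ! j)" using s I(1) successively_append_iff[of E "C ! i # I" "[C ! j]"] by simp
  have eI0: "E (C ! i) (hd I)" using s I(1) by (cases I) (auto simp: successively_Cons)
  have ITset: "set I \<inter> set T = {}" using I(2) T setC by (metis Un_iff disjoint_iff list.set_intros(2))
  let ?D = "drop (?d - 1) T"
  have Ddrop: "?D = drop ?d ?C" using T d by (cases ?d) auto
  have Dne: "?D \<noteq> []" using lT d by simp
  have hD: "hd ?D = C ! j" using Ddrop hd_drop_conv_nth[of ?d ?C] d Cd by simp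
  have lD: "last ?D = last ?C" using Ddrop d by simp
  have sD: "successively E ?D"
    using sT by (metis append_take_drop_id successively_append_iff)
  let ?A = "C ! i # I @ ?D"
  have "is_cycle E ?A"
    unfolding is_cycle_alt
  proof (intro conjI)
    show "3 \<le> length ?A" using I(1) Dne by (cases I; cases ?D) auto
    show "distinct ?A" using aI I(3) aT ITset set_drop_subset[of "?d - 1" T] by (auto simp: distinct_drop)
    have "successively E ((C ! i # I) @ ?D)"
      using sI sD eI hD Dne I(1) by (subst successively_append_iff) (simp add: last_ConsR)
    then show "successively E ?A" by simp
    show "E (last ?A) (hd ?A)" using sC(2) lD Dne T by simp
  qed
  moreover have "length ?A = length I + 1 + (?L - ?d)" using lT d by simp
  moreover have "set I \<subseteq> set ?A" by auto
  ultimately have A: "\<exists>A. is_cycle E A \<and> length A = length I + 1 + (?L - ?d) \<and> set I \<subseteq> set A" by blast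
  let ?G = "take ?d T"
  have Tne: "T \<noteq> []" using lT L by auto
  have Gne: "?G \<noteq> []" using d Tne by simp
  have lG: "last ?G = C ! j"
  proof -
    have "last ?G = ?G ! (?d - 1)" using Gne lT d by (simp add: last_conv_nth)
    also have "\<dots> = T ! (?d - 1)" using d by simp
    also have "\<dots> = ?C ! ?d" using T d by simp
    finally show ?thesis using Cd by simp
  qed
  have hG: "hd ?G = hd T" using d by simp
  have hT: "E (C ! i) (hd T)" using sC(1) T Gne by (cases T) (auto simp: successively_Cons)
  have sG: "successively E ?G"
    using sT by (metis append_take_drop_id successively_append_iff)
  have sGr: "successively E (rev ?G)" using sG sym by (simp add: successively_mono)
  let ?B = "C ! i # I @ rev ?G"
  have "is_cycle E ?B"
    unfolding is_cycle_alt
  proof (intro conjI)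
    show "3 \<le> length ?B" using I(1) Gne by (cases I; cases ?G) auto
    show "distinct ?B" using aI I(3) aT ITset set_take_subset[of ?d T] by auto
    have "successively E ((C ! i # I) @ rev ?G)"
      using sI sGr eI lG Gne I(1) by (subst successively_append_iff) (simp add: last_ConsR hd_rev)
    then show "successively E ?B" by simp
    show "E (last ?B) (hd ?B)" using hT hG Gne sym by (simp add: last_rev)
  qed
  moreover have "length ?B = length I + 1 + ?d" using lT d by simp
  moreover have "set I \<subseteq> set ?B" by auto
  ultimately have B: "\<exists>B. is_cycle E B \<and> length B = length I + 1 + ?d \<and> set I \<subseteq> set B" by blast
  show ?thesis using A B by blast
qed

context g2c
begin

lemma ear_from_fan:
  assumes F: "isfan E C v P Q" and vC: "v \<notin> set C"
  shows "\<exists>a b I. a \<in> set C \<and> b \<in> set C \<and> a \<noteq> b \<and> I \<noteq> [] \<and> v \<in> set I \<and> set I \<inter> set C = {}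
     \<and> distinct (a # I @ [b]) \<and> successively E (a # I @ [b])"
proof -
  have F1: "P \<noteq> []" "hd P = v" "distinct P" "successively E P" "last P \<in> set C"
    "Q \<noteq> []" "hd Q = v" "distinct Q" "successively E Q" "last Q \<in> set C" "last P \<noteq> last Q"
    "set P \<inter> set Q = {v}" "\<forall>x\<in>set (butlast P). x \<notin> set C" "\<forall>x\<in>set (butlast Q). x \<notin> set C"
    using F unfolding isfan_def by auto
  let ?a = "last P" and ?b = "last Q" and ?Pb = "butlast P" and ?Qb = "butlast Q"
  have Pd: "P = ?Pb @ [?a]" "Q = ?Qb @ [?b]" using F1 by simp_all
  have Pbne: "?Pb \<noteq> []" using F1(1,2,5) vC by (cases P rule: rev_cases) auto
  have Qbne: "?Qb \<noteq> []" using F1(6,7,10) vC by (cases Q rule: rev_cases) auto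
  have hPb: "hd ?Pb = v" using F1(2) Pbne by (metis Pd(1) hd_append2)
  have hQb: "hd ?Qb = v" using F1(7) Qbne by (metis Pd(2) hd_append2)
  let ?I = "rev ?Pb @ tl ?Qb"
  have vI: "v \<in> set ?I" using hPb Pbne by (cases ?Pb) auto
  have IC: "set ?I \<inter> set C = {}" using F1(13,14) Qbne by (auto dest: list.set_sel(2))
  have dP': "distinct (?Pb @ [?a])" using F1(3) Pd(1) by metis
  have dQ': "distinct (?Qb @ [?b])" using F1(8) Pd(2) by metis
  have aPb: "?a \<notin> set ?Pb" "distinct ?Pb" using dP' by auto
  have bQb: "?b \<notin> set ?Qb" "distinct ?Qb" using dQ' by auto
  have Qbd: "?Qb = v # tl ?Qb" using hQb Qbne by (cases ?Qb) auto
  have vtl: "v \<notin> set (tl ?Qb)" "distinct (tl ?Qb)" using bQb(2) Qbd by (metis distinct.simps(2))+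
  have tlQb_off: "\<forall>x\<in>set (tl ?Qb). x \<notin> set C" using F1(14) by (meson list.set_sel(2) Qbne)
  have aQb: "?a \<notin> set (tl ?Qb)" using tlQb_off F1(5) by blast
  have bPb: "?b \<notin> set ?Pb" using F1(13) F1(10) by blast
  have btl: "?b \<notin> set (tl ?Qb)" using bQb(1) Qbne by (meson list.set_sel(2))
  have PQd: "set ?Pb \<inter> set (tl ?Qb) = {}"
  proof -
    have "set ?Pb \<subseteq> set P" "set (tl ?Qb) \<subseteq> set Q" using Qbne
      by (auto dest: in_set_butlastD list.set_sel(2))
    then show ?thesis using F1(12) vtl(1) by auto
  qed
  have dist: "distinct (?a # ?I @ [?b])" using aPb bQb vtl aQb bPb btl PQd F1(11) by auto
  have sRP: "successively E (rev P)" using F1(4) Esym by (simp add: successively_mono)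
  have revP: "rev P = ?a # rev ?Pb" using Pd(1) by (metis rev_eq_Cons_iff rev_rev_ident)
  have tlQ: "tl Q = tl ?Qb @ [?b]" using Pd(2) Qbne by (metis tl_append2)
  have Qd: "Q = v # tl Q" using F1(6,7) by (cases Q) auto
  have sQ: "successively E (tl Q)" using F1(9) by (cases Q) (auto simp: successively_Cons)
  have tQne: "tl Q \<noteq> []" using tlQ by simp
  have "E (hd Q) (hd (tl Q))" using F1(9) F1(6) tQne by (cases Q) (auto simp: successively_Cons)
  then have eQ: "E v (hd (tl Q))" using F1(7) by simp
  have lrP: "last (rev P) = v" using F1(1,2) by (simp add: last_rev)
  have "successively E (rev P @ tl Q)"
    using sRP sQ eQ lrP tlQ by (subst successively_append_iff) simp
  moreover have "rev P @ tl Q = ?a # ?I @ [?b]" using revP tlQ by simp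
  ultimately have suc: "successively E (?a # ?I @ [?b])" by simp
  have "?I \<noteq> []" using Pbne by simp
  then show ?thesis using dist suc vI IC F1(5,10,11) by blast
qed

lemma ear_exists:
  assumes c: "is_cycle E C" and v: "v \<in> V" "v \<notin> set C"
  shows "\<exists>i j I. i < j \<and> j < length C \<and> I \<noteq> [] \<and> v \<in> set I \<and> set I \<inter> set C = {}
     \<and> distinct (C ! i # I @ [C ! j]) \<and> successively E (C ! i # I @ [C ! j])"
proof -
  obtain P Q where F: "isfan E C v P Q" using fan_exists[OF c v] by blast
  obtain a b I where e: "a \<in> set C" "b \<in> set C" "a \<noteq> b" "I \<noteq> []" "v \<in> set I" "set I \<inter> set C = {}"
     "distinct (a # I @ [b])" "successively E (a # I @ [b])"
    using ear_from_fan[OF F v(2)] by blast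
  obtain ia where ia: "ia < length C" "C ! ia = a" using e(1) by (metis in_set_conv_nth)
  obtain ib where ib: "ib < length C" "C ! ib = b" using e(2) by (metis in_set_conv_nth)
  have "ia \<noteq> ib" using ia ib e(3) by auto
  show ?thesis
  proof (cases "ia < ib")
    case True then show ?thesis using e ia ib by blast
  next
    case False
    then have lt: "ib < ia" using \<open>ia \<noteq> ib\<close> by simp
    have "successively (\<lambda>x y. E y x) (a # I @ [b])" by (rule successively_mono[OF e(8)]) (simp add: Esym)
    then have "successively E (rev (a # I @ [b]))" by (simp only: successively_rev)
    moreover have "rev (a # I @ [b]) = b # rev I @ [a]" by simp
    ultimately have s: "successively E (C ! ib # rev I @ [C ! ia])" using ia ib by simp
    have d: "distinct (C ! ib # rev I @ [C ! ia])" using e(7) ia ib by auto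
    show ?thesis using lt ia(1) e(4,5,6) s d by (intro exI[of _ ib] exI[of _ ia] exI[of _ "rev I"]) auto
  qed
qed

end


context g2c
begin

definition "cumset = {v \<in> V. \<exists>c. cummerbund E c \<and> v \<in> set c}"

lemma cc_eq: "cc V E = card cumset" unfolding cc_def cumset_def by simp

lemma cc_ge: "X \<subseteq> cumset \<Longrightarrow> card X \<le> cc V E"
  unfolding cc_eq by (rule card_mono) (auto simp: cumset_def finV)

lemma cyc_len_le: "is_cycle E c \<Longrightarrow> length c \<le> card V"
proof -
  assume c: "is_cycle E c"
  have "length c = card (set c)" using c by (simp add: is_cycle_def distinct_card)
  also have "\<dots> \<le> card V" using cycle_V[OF c] finV by (rule card_mono[rotated])
  finally show ?thesis .
qed

lemma nbr_in:
  assumes "S \<subseteq> V" "card S < 2" "a \<in> V - S" "b \<in> V - S" "a \<noteq> b"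
  shows "\<exists>y. y \<in> V - S \<and> E a y"
proof -
  obtain p where p: "p \<noteq> []" "distinct p" "hd p = a" "last p = b" "set p \<subseteq> V - S" "successively E p"
    using path_in[OF assms(1-4)] by blast
  obtain r where r: "p = a # r" using p(1,3) by (cases p) auto
  have "r \<noteq> []" using r p(4) assms(5) by auto
  then have "E a (hd r)" "hd r \<in> set p" using p(6) r by (auto simp: successively_Cons)
  then show ?thesis using p(5) by blast
qed

lemma cycle_ex: "\<exists>c. is_cycle E c"
proof -
  have c3: "card V > 2" by (rule cardV)
  then have "V \<noteq> {}" by auto
  then obtain x where x: "x \<in> V" by blast
  have "\<exists>z\<in>V. z \<noteq> x"
  proof (rule ccontr)
    assume "\<not> ?thesis" then have "V \<subseteq> {x}" by auto
    then have "card V \<le> 1" using card_mono[of "{x}" V] by simp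
    then show False using c3 by simp
  qed
  then obtain z where z: "z \<in> V" "z \<noteq> x" by blast
  obtain y where y: "y \<in> V" "E x y" using nbr_in[of "{}" x z] x z by auto
  have yx: "y \<noteq> x" using y Eirr by blast
  have "\<exists>t\<in>V. t \<noteq> x \<and> t \<noteq> y"
  proof (rule ccontr)
    assume "\<not> ?thesis" then have "V \<subseteq> {x,y}" by auto
    then have "card V \<le> card {x,y}" using card_mono[of "{x,y}" V] by simp
    also have "\<dots> \<le> 2" by (simp add: card_insert_le_m1)
    finally show False using c3 by simp
  qed
  then obtain t where t: "t \<in> V" "t \<noteq> x" "t \<noteq> y" by blast
  obtain z' where z': "z' \<in> V - {x}" "E y z'" using nbr_in[of "{x}" y t] x y t yx by auto
  obtain q where q: "q \<noteq> []" "distinct q" "hd q = z'" "last q = x" "set q \<subseteq> V - {y}" "successively E q"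
    using path_in[of "{y}" z' x] z' x y yx Eirr by auto
  have yq: "y \<notin> set q" using q(5) by auto
  have zx: "z' \<noteq> x" using z' by auto
  obtain r where r: "q = z' # r" using q(1,3) by (cases q) auto
  have "r \<noteq> []" using r q(4) zx by auto
  then have lq: "2 \<le> length q" using r by (cases r) auto
  have "is_cycle E (y # q)"
    unfolding is_cycle_alt using lq q yq z'(2) Esym y(2)
    by (cases q) (auto simp: successively_Cons)
  then show ?thesis by blast
qed

lemma longest_ex: "\<exists>C. is_cycle E C \<and> (\<forall>c. is_cycle E c \<longrightarrow> length c \<le> length C)"
proof -
  obtain c0 where "is_cycle E c0" using cycle_ex by blast
  moreover have "\<forall>c. is_cycle E c \<longrightarrow> length c < card V + 1" using cyc_len_le by fastforce
  ultimately show ?thesis using ex_has_greatest_nat[of "is_cycle E" c0 length "card V + 1"] by blast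
qed

lemma ear_full:
  assumes c: "is_cycle E C" and v: "v \<in> V" "v \<notin> set C"
  shows "\<exists>i j I. i < j \<and> j < length C \<and> I \<noteq> [] \<and> v \<in> set I \<and> set I \<inter> set C = {}
     \<and> distinct (C ! i # I @ [C ! j]) \<and> successively E (C ! i # I @ [C ! j])
     \<and> (\<exists>A. is_cycle E A \<and> length A = length I + 1 + (length C - (j - i)) \<and> set I \<subseteq> set A)
     \<and> (\<exists>B. is_cycle E B \<and> length B = length I + 1 + (j - i) \<and> set I \<subseteq> set B)"
proof -
  obtain i j I where e: "i < j" "j < length C" "I \<noteq> []" "v \<in> set I" "set I \<inter> set C = {}"
     "distinct (C ! i # I @ [C ! j])" "successively E (C ! i # I @ [C ! j])"
    using ear_exists[OF c v] by blast
  have "distinct I" using e(6) by simp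
  then show ?thesis using ear_cycles[OF c Esym e(1,2,3,5) _ e(7)] e by blast
qed

lemma cum_of:
  assumes "is_cycle E A" "\<forall>c. is_cycle E c \<longrightarrow> length c \<le> length C" "length A = length C"
  shows "set A \<subseteq> cumset"
  using assms cycle_V[OF assms(1)] unfolding cumset_def cummerbund_def by auto

lemma ear_arith:
  assumes C: "is_cycle E C" "\<forall>c. is_cycle E c \<longrightarrow> length c \<le> length C" and g: "girth_at_least E g"
    and v: "v \<in> V" "v \<notin> set C"
  shows "\<exists>i j I. i < j \<and> j < length C \<and> I \<noteq> [] \<and> v \<in> set I \<and> set I \<inter> set C = {}
     \<and> distinct (C ! i # I @ [C ! j]) \<and> successively E (C ! i # I @ [C ! j])
     \<and> length I + 1 + (length C - (j - i)) \<le> length C \<and> length I + 1 + (j - i) \<le> length C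
     \<and> g \<le> length I + 1 + (length C - (j - i)) \<and> g \<le> length I + 1 + (j - i)
     \<and> (length I + 1 + (length C - (j - i)) = length C \<or> length I + 1 + (j - i) = length C
          \<longrightarrow> set I \<subseteq> cumset)"
proof -
  obtain i j I A B where e: "i < j" "j < length C" "I \<noteq> []" "v \<in> set I" "set I \<inter> set C = {}"
     "distinct (C ! i # I @ [C ! j])" "successively E (C ! i # I @ [C ! j])"
     "is_cycle E A" "length A = length I + 1 + (length C - (j - i))" "set I \<subseteq> set A"
     "is_cycle E B" "length B = length I + 1 + (j - i)" "set I \<subseteq> set B"
    using ear_full[OF C(1) v] by blast
  have "length A \<le> length C" "length B \<le> length C" using C(2) e by auto
  moreover have "g \<le> length A" "g \<le> length B" using g e unfolding girth_at_least_def by auto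
  moreover have "length A = length C \<longrightarrow> set I \<subseteq> cumset" using cum_of[OF e(8) C(2)] e(10) by auto
  moreover have "length B = length C \<longrightarrow> set I \<subseteq> cumset" using cum_of[OF e(11) C(2)] e(13) by auto
  ultimately show ?thesis using e by (intro exI[of _ i] exI[of _ j] exI[of _ I]) auto
qed

lemma setC_cum: "is_cycle E C \<Longrightarrow> \<forall>c. is_cycle E c \<longrightarrow> length c \<le> length C \<Longrightarrow> set C \<subseteq> cumset"
  using cum_of by blast

lemma cc_geC: "is_cycle E C \<Longrightarrow> \<forall>c. is_cycle E c \<longrightarrow> length c \<le> length C \<Longrightarrow> length C \<le> cc V E"
  using cc_ge[OF setC_cum] by (simp add: is_cycle_def distinct_card)

lemma cc_all: "V \<subseteq> cumset \<Longrightarrow> cc V E = card V"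
  unfolding cc_eq by (rule arg_cong[of _ _ card]) (auto simp: cumset_def)

lemma cc_plus:
  assumes C: "is_cycle E C" "\<forall>c. is_cycle E c \<longrightarrow> length c \<le> length C"
    and I: "set I \<subseteq> cumset" "set I \<inter> set C = {}" "distinct I"
  shows "length C + length I \<le> cc V E"
proof -
  have "card (set C \<union> set I) = card (set C) + card (set I)"
    by (rule card_Un_disjoint) (use I in auto)
  then have "card (set C \<union> set I) = length C + length I"
    using I C(1) by (simp add: distinct_card is_cycle_def)
  moreover have "set C \<union> set I \<subseteq> cumset" using setC_cum[OF C] I by auto
  ultimately show ?thesis using cc_ge by metis
qed

theorem lower4:
  assumes g: "girth_at_least E 4" and n: "8 \<le> card V"
  shows "6 \<le> cc V E"
proof -
  obtain C where C: "is_cycle E C" "\<forall>c. is_cycle E c \<longrightarrow> length c \<le> length C" using longest_ex by blast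
  have L4: "4 \<le> length C" using g C unfolding girth_at_least_def by blast
  show ?thesis
  proof (cases "6 \<le> length C")
    case True then show ?thesis using cc_geC[OF C] by simp
  next
    case False
    have "V \<subseteq> cumset"
    proof
      fix v assume v: "v \<in> V"
      show "v \<in> cumset"
      proof (cases "v \<in> set C")
        case True then show ?thesis using setC_cum[OF C] by blast
      next
        case nC: False
        obtain i j I where e: "i < j" "j < length C" "I \<noteq> []" "v \<in> set I"
          "length I + 1 + (length C - (j - i)) \<le> length C" "length I + 1 + (j - i) \<le> length C"
          "(length I + 1 + (length C - (j - i)) = length C \<or> length I + 1 + (j - i) = length C
              \<longrightarrow> set I \<subseteq> cumset)"
          using ear_arith[OF C g v nC] by blast
        have "length I \<ge> 1" using e(3) by (cases I) auto
        then have "length I + 1 + (length C - (j - i)) = length C \<or> length I + 1 + (j - i) = length C"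
          using e(1,2,5,6) False L4 by arith
        then show ?thesis using e(7) e(4) by blast
      qed
    qed
    then show ?thesis using cc_all n by simp
  qed
qed

end


context g2c
begin

lemma L6_contra:
  assumes C: "is_cycle E [c0, c1, c2, c3, c4, c5]" and lo: "\<forall>c. is_cycle E c \<longrightarrow> length c \<le> 6"
    and g: "girth_at_least E 5"
    and dv: "v \<notin> set [c0, c1, c2, c3, c4, c5]" and dw: "w \<notin> set [c0, c1, c2, c3, c4, c5]" and vw: "v \<noteq> w"
    and i: "i < 3" "E v ([c0, c1, c2, c3, c4, c5] ! i)" "E v ([c0, c1, c2, c3, c4, c5] ! (i + 3))"
    and i': "i' < 3" "E w ([c0, c1, c2, c3, c4, c5] ! i')" "E w ([c0, c1, c2, c3, c4, c5] ! (i' + 3))"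
  shows False
proof -
  have cf: "distinct [c0, c1, c2, c3, c4, c5]" "E c0 c1" "E c1 c2" "E c2 c3" "E c3 c4" "E c4 c5" "E c5 c0"
    using C by (simp_all add: is_cycle_alt)
  note cfs = Esym[OF cf(2)] Esym[OF cf(3)] Esym[OF cf(4)] Esym[OF cf(5)] Esym[OF cf(6)] Esym[OF cf(7)]
  have nq: "c0 \<noteq> c1" "c0 \<noteq> c2" "c0 \<noteq> c3" "c0 \<noteq> c4" "c0 \<noteq> c5" "c1 \<noteq> c0" "c1 \<noteq> c2" "c1 \<noteq> c3" "c1 \<noteq> c4" "c1 \<noteq> c5" "c2 \<noteq> c0" "c2 \<noteq> c1" "c2 \<noteq> c3" "c2 \<noteq> c4" "c2 \<noteq> c5" "c3 \<noteq> c0" "c3 \<noteq> c1" "c3 \<noteq> c2" "c3 \<noteq> c4" "c3 \<noteq> c5" "c4 \<noteq> c0" "c4 \<noteq> c1" "c4 \<noteq> c2" "c4 \<noteq> c3" "c4 \<noteq> c5" "c5 \<noteq> c0" "c5 \<noteq> c1" "c5 \<noteq> c2" "c5 \<noteq> c3" "c5 \<noteq> c4" using cf(1) by auto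
  have nv: "v \<noteq> c0" "c0 \<noteq> v" "v \<noteq> c1" "c1 \<noteq> v" "v \<noteq> c2" "c2 \<noteq> v" "v \<noteq> c3" "c3 \<noteq> v" "v \<noteq> c4" "c4 \<noteq> v" "v \<noteq> c5" "c5 \<noteq> v" using dv by auto
  have nw: "w \<noteq> c0" "c0 \<noteq> w" "w \<noteq> c1" "c1 \<noteq> w" "w \<noteq> c2" "c2 \<noteq> w" "w \<noteq> c3" "c3 \<noteq> w" "w \<noteq> c4" "c4 \<noteq> w" "w \<noteq> c5" "c5 \<noteq> w" using dw by auto
  have vw2: "w \<noteq> v" using vw by simp
  have "i = 0 \<or> i = 1 \<or> i = 2" using i(1) by auto
  then have V1: "(E v c0 \<and> E v c3) \<or> (E v c1 \<and> E v c4) \<or> (E v c2 \<and> E v c5)" using i(2,3) by auto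
  have "i' = 0 \<or> i' = 1 \<or> i' = 2" using i'(1) by auto
  then have W1: "(E w c0 \<and> E w c3) \<or> (E w c1 \<and> E w c4) \<or> (E w c2 \<and> E w c5)" using i'(2,3) by auto
  have b00: False if a: "E v c0" "E v c3" "E w c0" "E w c3" 
  proof -
    have cyc: "is_cycle E [c0, v, c3, w]" using cf cfs nq a Esym[OF a(1)] Esym[OF a(2)] Esym[OF a(3)] Esym[OF a(4)] nv nw vw vw2 by (simp add: is_cycle_alt)
    then have "5 \<le> length [c0, v, c3, w]" using g unfolding girth_at_least_def by blast
    then show False by simp
  qed
  have b01: False if a: "E v c0" "E v c3" "E w c1" "E w c4" 
  proof -
    have cyc: "is_cycle E [c0, c5, c4, w, c1, c2, c3, v]" using cf cfs nq a Esym[OF a(1)] Esym[OF a(2)] Esym[OF a(3)] Esym[OF a(4)] nv nw vw vw2 by (simp add: is_cycle_alt)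
    then have "length [c0, c5, c4, w, c1, c2, c3, v] \<le> 6" using lo by blast
    then show False by simp
  qed
  have b02: False if a: "E v c0" "E v c3" "E w c2" "E w c5" 
  proof -
    have cyc: "is_cycle E [c0, c1, c2, w, c5, c4, c3, v]" using cf cfs nq a Esym[OF a(1)] Esym[OF a(2)] Esym[OF a(3)] Esym[OF a(4)] nv nw vw vw2 by (simp add: is_cycle_alt)
    then have "length [c0, c1, c2, w, c5, c4, c3, v] \<le> 6" using lo by blast
    then show False by simp
  qed
  have b10: False if a: "E v c1" "E v c4" "E w c0" "E w c3" 
  proof -
    have cyc: "is_cycle E [c0, c5, c4, v, c1, c2, c3, w]" using cf cfs nq a Esym[OF a(1)] Esym[OF a(2)] Esym[OF a(3)] Esym[OF a(4)] nv nw vw vw2 by (simp add: is_cycle_alt)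
    then have "length [c0, c5, c4, v, c1, c2, c3, w] \<le> 6" using lo by blast
    then show False by simp
  qed
  have b11: False if a: "E v c1" "E v c4" "E w c1" "E w c4" 
  proof -
    have cyc: "is_cycle E [c1, v, c4, w]" using cf cfs nq a Esym[OF a(1)] Esym[OF a(2)] Esym[OF a(3)] Esym[OF a(4)] nv nw vw vw2 by (simp add: is_cycle_alt)
    then have "5 \<le> length [c1, v, c4, w]" using g unfolding girth_at_least_def by blast
    then show False by simp
  qed
  have b12: False if a: "E v c1" "E v c4" "E w c2" "E w c5" 
  proof -
    have cyc: "is_cycle E [c0, c1, v, c4, c3, c2, w, c5]" using cf cfs nq a Esym[OF a(1)] Esym[OF a(2)] Esym[OF a(3)] Esym[OF a(4)] nv nw vw vw2 by (simp add: is_cycle_alt)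
    then have "length [c0, c1, v, c4, c3, c2, w, c5] \<le> 6" using lo by blast
    then show False by simp
  qed
  have b20: False if a: "E v c2" "E v c5" "E w c0" "E w c3" 
  proof -
    have cyc: "is_cycle E [c0, c1, c2, v, c5, c4, c3, w]" using cf cfs nq a Esym[OF a(1)] Esym[OF a(2)] Esym[OF a(3)] Esym[OF a(4)] nv nw vw vw2 by (simp add: is_cycle_alt)
    then have "length [c0, c1, c2, v, c5, c4, c3, w] \<le> 6" using lo by blast
    then show False by simp
  qed
  have b21: False if a: "E v c2" "E v c5" "E w c1" "E w c4" 
  proof -
    have cyc: "is_cycle E [c0, c1, w, c4, c3, c2, v, c5]" using cf cfs nq a Esym[OF a(1)] Esym[OF a(2)] Esym[OF a(3)] Esym[OF a(4)] nv nw vw vw2 by (simp add: is_cycle_alt)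
    then have "length [c0, c1, w, c4, c3, c2, v, c5] \<le> 6" using lo by blast
    then show False by simp
  qed
  have b22: False if a: "E v c2" "E v c5" "E w c2" "E w c5" 
  proof -
    have cyc: "is_cycle E [c2, v, c5, w]" using cf cfs nq a Esym[OF a(1)] Esym[OF a(2)] Esym[OF a(3)] Esym[OF a(4)] nv nw vw vw2 by (simp add: is_cycle_alt)
    then have "5 \<le> length [c2, v, c5, w]" using g unfolding girth_at_least_def by blast
    then show False by simp
  qed
  show False using V1 W1 b00 b01 b02 b10 b11 b12 b20 b21 b22 by blast
qed


lemma Pair7:
  assumes C: "is_cycle E [c0, c1, c2, c3, c4, c5, c6]" and lo: "\<forall>c. is_cycle E c \<longrightarrow> length c \<le> 7"
    and g: "girth_at_least E 5"
    and dv: "v \<notin> set [c0, c1, c2, c3, c4, c5, c6]" and dw: "w \<notin> set [c0, c1, c2, c3, c4, c5, c6]" and vw: "v \<noteq> w"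
    and k: "k < 7" "E v ([c0, c1, c2, c3, c4, c5, c6] ! k)" "E v ([c0, c1, c2, c3, c4, c5, c6] ! ((k + 3) mod 7))"
    and k': "k' < 7" "E w ([c0, c1, c2, c3, c4, c5, c6] ! k')" "E w ([c0, c1, c2, c3, c4, c5, c6] ! ((k' + 3) mod 7))"
  shows "k' = (k + 3) mod 7 \<or> k' = (k + 4) mod 7"
proof -
  have cf: "distinct [c0, c1, c2, c3, c4, c5, c6]" "E c0 c1" "E c1 c2" "E c2 c3" "E c3 c4" "E c4 c5" "E c5 c6" "E c6 c0"
    using C by (simp_all add: is_cycle_alt)
  note cfs = Esym[OF cf(2)] Esym[OF cf(3)] Esym[OF cf(4)] Esym[OF cf(5)] Esym[OF cf(6)] Esym[OF cf(7)] Esym[OF cf(8)]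
  have nq: "c0 \<noteq> c1" "c0 \<noteq> c2" "c0 \<noteq> c3" "c0 \<noteq> c4" "c0 \<noteq> c5" "c0 \<noteq> c6" "c1 \<noteq> c0" "c1 \<noteq> c2" "c1 \<noteq> c3" "c1 \<noteq> c4" "c1 \<noteq> c5" "c1 \<noteq> c6" "c2 \<noteq> c0" "c2 \<noteq> c1" "c2 \<noteq> c3" "c2 \<noteq> c4" "c2 \<noteq> c5" "c2 \<noteq> c6" "c3 \<noteq> c0" "c3 \<noteq> c1" "c3 \<noteq> c2" "c3 \<noteq> c4" "c3 \<noteq> c5" "c3 \<noteq> c6" "c4 \<noteq> c0" "c4 \<noteq> c1" "c4 \<noteq> c2" "c4 \<noteq> c3" "c4 \<noteq> c5" "c4 \<noteq> c6" "c5 \<noteq> c0" "c5 \<noteq> c1" "c5 \<noteq> c2" "c5 \<noteq> c3" "c5 \<noteq> c4" "c5 \<noteq> c6" "c6 \<noteq> c0" "c6 \<noteq> c1" "c6 \<noteq> c2" "c6 \<noteq> c3" "c6 \<noteq> c4" "c6 \<noteq> c5" using cf(1) by auto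
  have nv: "v \<noteq> c0" "c0 \<noteq> v" "v \<noteq> c1" "c1 \<noteq> v" "v \<noteq> c2" "c2 \<noteq> v" "v \<noteq> c3" "c3 \<noteq> v" "v \<noteq> c4" "c4 \<noteq> v" "v \<noteq> c5" "c5 \<noteq> v" "v \<noteq> c6" "c6 \<noteq> v" using dv by auto
  have nw: "w \<noteq> c0" "c0 \<noteq> w" "w \<noteq> c1" "c1 \<noteq> w" "w \<noteq> c2" "c2 \<noteq> w" "w \<noteq> c3" "c3 \<noteq> w" "w \<noteq> c4" "c4 \<noteq> w" "w \<noteq> c5" "c5 \<noteq> w" "w \<noteq> c6" "c6 \<noteq> w" using dw by auto
  have vw2: "w \<noteq> v" using vw by simp
  have b00: False if a: "E v c0" "E v c3" "E w c0" "E w c3" 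
  proof -
    have cyc: "is_cycle E [c0, v, c3, w]" using cf cfs nq a Esym[OF a(1)] Esym[OF a(2)] Esym[OF a(3)] Esym[OF a(4)] nv nw vw vw2 by (simp add: is_cycle_alt)
    then have "5 \<le> length [c0, v, c3, w]" using g unfolding girth_at_least_def by blast
    then show False by simp
  qed
  have b01: False if a: "E v c0" "E v c3" "E w c1" "E w c4" 
  proof -
    have cyc: "is_cycle E [c0, c6, c5, c4, w, c1, c2, c3, v]" using cf cfs nq a Esym[OF a(1)] Esym[OF a(2)] Esym[OF a(3)] Esym[OF a(4)] nv nw vw vw2 by (simp add: is_cycle_alt)
    then have "length [c0, c6, c5, c4, w, c1, c2, c3, v] \<le> 7" using lo by blast
    then show False by simp
  qed
  have b02: False if a: "E v c0" "E v c3" "E w c2" "E w c5" 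
  proof -
    have cyc: "is_cycle E [c0, c1, c2, w, c5, c4, c3, v]" using cf cfs nq a Esym[OF a(1)] Esym[OF a(2)] Esym[OF a(3)] Esym[OF a(4)] nv nw vw vw2 by (simp add: is_cycle_alt)
    then have "length [c0, c1, c2, w, c5, c4, c3, v] \<le> 7" using lo by blast
    then show False by simp
  qed
  have b05: False if a: "E v c0" "E v c3" "E w c5" "E w c1" 
  proof -
    have cyc: "is_cycle E [c0, c6, c5, w, c1, c2, c3, v]" using cf cfs nq a Esym[OF a(1)] Esym[OF a(2)] Esym[OF a(3)] Esym[OF a(4)] nv nw vw vw2 by (simp add: is_cycle_alt)
    then have "length [c0, c6, c5, w, c1, c2, c3, v] \<le> 7" using lo by blast
    then show False by simp
  qed
  have b06: False if a: "E v c0" "E v c3" "E w c6" "E w c2" 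
  proof -
    have cyc: "is_cycle E [c0, c1, c2, w, c6, c5, c4, c3, v]" using cf cfs nq a Esym[OF a(1)] Esym[OF a(2)] Esym[OF a(3)] Esym[OF a(4)] nv nw vw vw2 by (simp add: is_cycle_alt)
    then have "length [c0, c1, c2, w, c6, c5, c4, c3, v] \<le> 7" using lo by blast
    then show False by simp
  qed
  have b10: False if a: "E v c1" "E v c4" "E w c0" "E w c3" 
  proof -
    have cyc: "is_cycle E [c0, c6, c5, c4, v, c1, c2, c3, w]" using cf cfs nq a Esym[OF a(1)] Esym[OF a(2)] Esym[OF a(3)] Esym[OF a(4)] nv nw vw vw2 by (simp add: is_cycle_alt)
    then have "length [c0, c6, c5, c4, v, c1, c2, c3, w] \<le> 7" using lo by blast
    then show False by simp
  qed
  have b11: False if a: "E v c1" "E v c4" "E w c1" "E w c4" 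
  proof -
    have cyc: "is_cycle E [c1, v, c4, w]" using cf cfs nq a Esym[OF a(1)] Esym[OF a(2)] Esym[OF a(3)] Esym[OF a(4)] nv nw vw vw2 by (simp add: is_cycle_alt)
    then have "5 \<le> length [c1, v, c4, w]" using g unfolding girth_at_least_def by blast
    then show False by simp
  qed
  have b12: False if a: "E v c1" "E v c4" "E w c2" "E w c5" 
  proof -
    have cyc: "is_cycle E [c0, c1, v, c4, c3, c2, w, c5, c6]" using cf cfs nq a Esym[OF a(1)] Esym[OF a(2)] Esym[OF a(3)] Esym[OF a(4)] nv nw vw vw2 by (simp add: is_cycle_alt)
    then have "length [c0, c1, v, c4, c3, c2, w, c5, c6] \<le> 7" using lo by blast
    then show False by simp
  qed
  have b13: False if a: "E v c1" "E v c4" "E w c3" "E w c6" 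
  proof -
    have cyc: "is_cycle E [c1, c2, c3, w, c6, c5, c4, v]" using cf cfs nq a Esym[OF a(1)] Esym[OF a(2)] Esym[OF a(3)] Esym[OF a(4)] nv nw vw vw2 by (simp add: is_cycle_alt)
    then have "length [c1, c2, c3, w, c6, c5, c4, v] \<le> 7" using lo by blast
    then show False by simp
  qed
  have b16: False if a: "E v c1" "E v c4" "E w c6" "E w c2" 
  proof -
    have cyc: "is_cycle E [c0, c1, v, c4, c3, c2, w, c6]" using cf cfs nq a Esym[OF a(1)] Esym[OF a(2)] Esym[OF a(3)] Esym[OF a(4)] nv nw vw vw2 by (simp add: is_cycle_alt)
    then have "length [c0, c1, v, c4, c3, c2, w, c6] \<le> 7" using lo by blast
    then show False by simp
  qed
  have b20: False if a: "E v c2" "E v c5" "E w c0" "E w c3" 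
  proof -
    have cyc: "is_cycle E [c0, c1, c2, v, c5, c4, c3, w]" using cf cfs nq a Esym[OF a(1)] Esym[OF a(2)] Esym[OF a(3)] Esym[OF a(4)] nv nw vw vw2 by (simp add: is_cycle_alt)
    then have "length [c0, c1, c2, v, c5, c4, c3, w] \<le> 7" using lo by blast
    then show False by simp
  qed
  have b21: False if a: "E v c2" "E v c5" "E w c1" "E w c4" 
  proof -
    have cyc: "is_cycle E [c0, c1, w, c4, c3, c2, v, c5, c6]" using cf cfs nq a Esym[OF a(1)] Esym[OF a(2)] Esym[OF a(3)] Esym[OF a(4)] nv nw vw vw2 by (simp add: is_cycle_alt)
    then have "length [c0, c1, w, c4, c3, c2, v, c5, c6] \<le> 7" using lo by blast
    then show False by simp
  qed
  have b22: False if a: "E v c2" "E v c5" "E w c2" "E w c5" 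
  proof -
    have cyc: "is_cycle E [c2, v, c5, w]" using cf cfs nq a Esym[OF a(1)] Esym[OF a(2)] Esym[OF a(3)] Esym[OF a(4)] nv nw vw vw2 by (simp add: is_cycle_alt)
    then have "5 \<le> length [c2, v, c5, w]" using g unfolding girth_at_least_def by blast
    then show False by simp
  qed
  have b23: False if a: "E v c2" "E v c5" "E w c3" "E w c6" 
  proof -
    have cyc: "is_cycle E [c0, c1, c2, v, c5, c4, c3, w, c6]" using cf cfs nq a Esym[OF a(1)] Esym[OF a(2)] Esym[OF a(3)] Esym[OF a(4)] nv nw vw vw2 by (simp add: is_cycle_alt)
    then have "length [c0, c1, c2, v, c5, c4, c3, w, c6] \<le> 7" using lo by blast
    then show False by simp
  qed
  have b24: False if a: "E v c2" "E v c5" "E w c4" "E w c0" 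
  proof -
    have cyc: "is_cycle E [c0, c6, c5, v, c2, c3, c4, w]" using cf cfs nq a Esym[OF a(1)] Esym[OF a(2)] Esym[OF a(3)] Esym[OF a(4)] nv nw vw vw2 by (simp add: is_cycle_alt)
    then have "length [c0, c6, c5, v, c2, c3, c4, w] \<le> 7" using lo by blast
    then show False by simp
  qed
  have b31: False if a: "E v c3" "E v c6" "E w c1" "E w c4" 
  proof -
    have cyc: "is_cycle E [c1, c2, c3, v, c6, c5, c4, w]" using cf cfs nq a Esym[OF a(1)] Esym[OF a(2)] Esym[OF a(3)] Esym[OF a(4)] nv nw vw vw2 by (simp add: is_cycle_alt)
    then have "length [c1, c2, c3, v, c6, c5, c4, w] \<le> 7" using lo by blast
    then show False by simp
  qed
  have b32: False if a: "E v c3" "E v c6" "E w c2" "E w c5" 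
  proof -
    have cyc: "is_cycle E [c0, c1, c2, w, c5, c4, c3, v, c6]" using cf cfs nq a Esym[OF a(1)] Esym[OF a(2)] Esym[OF a(3)] Esym[OF a(4)] nv nw vw vw2 by (simp add: is_cycle_alt)
    then have "length [c0, c1, c2, w, c5, c4, c3, v, c6] \<le> 7" using lo by blast
    then show False by simp
  qed
  have b33: False if a: "E v c3" "E v c6" "E w c3" "E w c6" 
  proof -
    have cyc: "is_cycle E [c3, v, c6, w]" using cf cfs nq a Esym[OF a(1)] Esym[OF a(2)] Esym[OF a(3)] Esym[OF a(4)] nv nw vw vw2 by (simp add: is_cycle_alt)
    then have "5 \<le> length [c3, v, c6, w]" using g unfolding girth_at_least_def by blast
    then show False by simp
  qed
  have b34: False if a: "E v c3" "E v c6" "E w c4" "E w c0" 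
  proof -
    have cyc: "is_cycle E [c0, c1, c2, c3, v, c6, c5, c4, w]" using cf cfs nq a Esym[OF a(1)] Esym[OF a(2)] Esym[OF a(3)] Esym[OF a(4)] nv nw vw vw2 by (simp add: is_cycle_alt)
    then have "length [c0, c1, c2, c3, v, c6, c5, c4, w] \<le> 7" using lo by blast
    then show False by simp
  qed
  have b35: False if a: "E v c3" "E v c6" "E w c5" "E w c1" 
  proof -
    have cyc: "is_cycle E [c0, c1, w, c5, c4, c3, v, c6]" using cf cfs nq a Esym[OF a(1)] Esym[OF a(2)] Esym[OF a(3)] Esym[OF a(4)] nv nw vw vw2 by (simp add: is_cycle_alt)
    then have "length [c0, c1, w, c5, c4, c3, v, c6] \<le> 7" using lo by blast
    then show False by simp
  qed
  have b42: False if a: "E v c4" "E v c0" "E w c2" "E w c5" 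
  proof -
    have cyc: "is_cycle E [c0, c6, c5, w, c2, c3, c4, v]" using cf cfs nq a Esym[OF a(1)] Esym[OF a(2)] Esym[OF a(3)] Esym[OF a(4)] nv nw vw vw2 by (simp add: is_cycle_alt)
    then have "length [c0, c6, c5, w, c2, c3, c4, v] \<le> 7" using lo by blast
    then show False by simp
  qed
  have b43: False if a: "E v c4" "E v c0" "E w c3" "E w c6" 
  proof -
    have cyc: "is_cycle E [c0, c1, c2, c3, w, c6, c5, c4, v]" using cf cfs nq a Esym[OF a(1)] Esym[OF a(2)] Esym[OF a(3)] Esym[OF a(4)] nv nw vw vw2 by (simp add: is_cycle_alt)
    then have "length [c0, c1, c2, c3, w, c6, c5, c4, v] \<le> 7" using lo by blast
    then show False by simp
  qed
  have b44: False if a: "E v c4" "E v c0" "E w c4" "E w c0" 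
  proof -
    have cyc: "is_cycle E [c0, v, c4, w]" using cf cfs nq a Esym[OF a(1)] Esym[OF a(2)] Esym[OF a(3)] Esym[OF a(4)] nv nw vw vw2 by (simp add: is_cycle_alt)
    then have "5 \<le> length [c0, v, c4, w]" using g unfolding girth_at_least_def by blast
    then show False by simp
  qed
  have b45: False if a: "E v c4" "E v c0" "E w c5" "E w c1" 
  proof -
    have cyc: "is_cycle E [c0, c6, c5, w, c1, c2, c3, c4, v]" using cf cfs nq a Esym[OF a(1)] Esym[OF a(2)] Esym[OF a(3)] Esym[OF a(4)] nv nw vw vw2 by (simp add: is_cycle_alt)
    then have "length [c0, c6, c5, w, c1, c2, c3, c4, v] \<le> 7" using lo by blast
    then show False by simp
  qed
  have b46: False if a: "E v c4" "E v c0" "E w c6" "E w c2" 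
  proof -
    have cyc: "is_cycle E [c0, c1, c2, w, c6, c5, c4, v]" using cf cfs nq a Esym[OF a(1)] Esym[OF a(2)] Esym[OF a(3)] Esym[OF a(4)] nv nw vw vw2 by (simp add: is_cycle_alt)
    then have "length [c0, c1, c2, w, c6, c5, c4, v] \<le> 7" using lo by blast
    then show False by simp
  qed
  have b50: False if a: "E v c5" "E v c1" "E w c0" "E w c3" 
  proof -
    have cyc: "is_cycle E [c0, c6, c5, v, c1, c2, c3, w]" using cf cfs nq a Esym[OF a(1)] Esym[OF a(2)] Esym[OF a(3)] Esym[OF a(4)] nv nw vw vw2 by (simp add: is_cycle_alt)
    then have "length [c0, c6, c5, v, c1, c2, c3, w] \<le> 7" using lo by blast
    then show False by simp
  qed
  have b53: False if a: "E v c5" "E v c1" "E w c3" "E w c6" 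
  proof -
    have cyc: "is_cycle E [c0, c1, v, c5, c4, c3, w, c6]" using cf cfs nq a Esym[OF a(1)] Esym[OF a(2)] Esym[OF a(3)] Esym[OF a(4)] nv nw vw vw2 by (simp add: is_cycle_alt)
    then have "length [c0, c1, v, c5, c4, c3, w, c6] \<le> 7" using lo by blast
    then show False by simp
  qed
  have b54: False if a: "E v c5" "E v c1" "E w c4" "E w c0" 
  proof -
    have cyc: "is_cycle E [c0, c6, c5, v, c1, c2, c3, c4, w]" using cf cfs nq a Esym[OF a(1)] Esym[OF a(2)] Esym[OF a(3)] Esym[OF a(4)] nv nw vw vw2 by (simp add: is_cycle_alt)
    then have "length [c0, c6, c5, v, c1, c2, c3, c4, w] \<le> 7" using lo by blast
    then show False by simp
  qed
  have b55: False if a: "E v c5" "E v c1" "E w c5" "E w c1" 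
  proof -
    have cyc: "is_cycle E [c1, v, c5, w]" using cf cfs nq a Esym[OF a(1)] Esym[OF a(2)] Esym[OF a(3)] Esym[OF a(4)] nv nw vw vw2 by (simp add: is_cycle_alt)
    then have "5 \<le> length [c1, v, c5, w]" using g unfolding girth_at_least_def by blast
    then show False by simp
  qed
  have b56: False if a: "E v c5" "E v c1" "E w c6" "E w c2" 
  proof -
    have cyc: "is_cycle E [c0, c1, v, c5, c4, c3, c2, w, c6]" using cf cfs nq a Esym[OF a(1)] Esym[OF a(2)] Esym[OF a(3)] Esym[OF a(4)] nv nw vw vw2 by (simp add: is_cycle_alt)
    then have "length [c0, c1, v, c5, c4, c3, c2, w, c6] \<le> 7" using lo by blast
    then show False by simp
  qed
  have b60: False if a: "E v c6" "E v c2" "E w c0" "E w c3" 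
  proof -
    have cyc: "is_cycle E [c0, c1, c2, v, c6, c5, c4, c3, w]" using cf cfs nq a Esym[OF a(1)] Esym[OF a(2)] Esym[OF a(3)] Esym[OF a(4)] nv nw vw vw2 by (simp add: is_cycle_alt)
    then have "length [c0, c1, c2, v, c6, c5, c4, c3, w] \<le> 7" using lo by blast
    then show False by simp
  qed
  have b61: False if a: "E v c6" "E v c2" "E w c1" "E w c4" 
  proof -
    have cyc: "is_cycle E [c0, c1, w, c4, c3, c2, v, c6]" using cf cfs nq a Esym[OF a(1)] Esym[OF a(2)] Esym[OF a(3)] Esym[OF a(4)] nv nw vw vw2 by (simp add: is_cycle_alt)
    then have "length [c0, c1, w, c4, c3, c2, v, c6] \<le> 7" using lo by blast
    then show False by simp
  qed
  have b64: False if a: "E v c6" "E v c2" "E w c4" "E w c0" 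
  proof -
    have cyc: "is_cycle E [c0, c1, c2, v, c6, c5, c4, w]" using cf cfs nq a Esym[OF a(1)] Esym[OF a(2)] Esym[OF a(3)] Esym[OF a(4)] nv nw vw vw2 by (simp add: is_cycle_alt)
    then have "length [c0, c1, c2, v, c6, c5, c4, w] \<le> 7" using lo by blast
    then show False by simp
  qed
  have b65: False if a: "E v c6" "E v c2" "E w c5" "E w c1" 
  proof -
    have cyc: "is_cycle E [c0, c1, w, c5, c4, c3, c2, v, c6]" using cf cfs nq a Esym[OF a(1)] Esym[OF a(2)] Esym[OF a(3)] Esym[OF a(4)] nv nw vw vw2 by (simp add: is_cycle_alt)
    then have "length [c0, c1, w, c5, c4, c3, c2, v, c6] \<le> 7" using lo by blast
    then show False by simp
  qed
  have b66: False if a: "E v c6" "E v c2" "E w c6" "E w c2" 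
  proof -
    have cyc: "is_cycle E [c2, v, c6, w]" using cf cfs nq a Esym[OF a(1)] Esym[OF a(2)] Esym[OF a(3)] Esym[OF a(4)] nv nw vw vw2 by (simp add: is_cycle_alt)
    then have "5 \<le> length [c2, v, c6, w]" using g unfolding girth_at_least_def by blast
    then show False by simp
  qed
  have "k = 0 \<or> k = 1 \<or> k = 2 \<or> k = 3 \<or> k = 4 \<or> k = 5 \<or> k = 6" using k(1) by auto
  then show ?thesis
  proof (elim disjE)
    assume kk: "k = 0"
    have v1: "E v c0" "E v c3" using k kk by simp_all
    have "k' = 0 \<or> k' = 1 \<or> k' = 2 \<or> k' = 3 \<or> k' = 4 \<or> k' = 5 \<or> k' = 6" using k'(1) by auto
    then show ?thesis
    proof (elim disjE)
      assume kk': "k' = 0"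
      have w1: "E w c0" "E w c3" using k' kk' by simp_all
      show ?thesis using b00[OF v1 w1] by simp
    next
      assume kk': "k' = 1"
      have w1: "E w c1" "E w c4" using k' kk' by simp_all
      show ?thesis using b01[OF v1 w1] by simp
    next
      assume kk': "k' = 2"
      have w1: "E w c2" "E w c5" using k' kk' by simp_all
      show ?thesis using b02[OF v1 w1] by simp
    next
      assume kk': "k' = 3"
      have w1: "E w c3" "E w c6" using k' kk' by simp_all
      show ?thesis using kk kk' by simp
    next
      assume kk': "k' = 4"
      have w1: "E w c4" "E w c0" using k' kk' by simp_all
      show ?thesis using kk kk' by simp
    next
      assume kk': "k' = 5"
      have w1: "E w c5" "E w c1" using k' kk' by simp_all
      show ?thesis using b05[OF v1 w1] by simp
    next
      assume kk': "k' = 6"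
      have w1: "E w c6" "E w c2" using k' kk' by simp_all
      show ?thesis using b06[OF v1 w1] by simp
    qed
  next
    assume kk: "k = 1"
    have v1: "E v c1" "E v c4" using k kk by simp_all
    have "k' = 0 \<or> k' = 1 \<or> k' = 2 \<or> k' = 3 \<or> k' = 4 \<or> k' = 5 \<or> k' = 6" using k'(1) by auto
    then show ?thesis
    proof (elim disjE)
      assume kk': "k' = 0"
      have w1: "E w c0" "E w c3" using k' kk' by simp_all
      show ?thesis using b10[OF v1 w1] by simp
    next
      assume kk': "k' = 1"
      have w1: "E w c1" "E w c4" using k' kk' by simp_all
      show ?thesis using b11[OF v1 w1] by simp
    next
      assume kk': "k' = 2"
      have w1: "E w c2" "E w c5" using k' kk' by simp_all
      show ?thesis using b12[OF v1 w1] by simp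
    next
      assume kk': "k' = 3"
      have w1: "E w c3" "E w c6" using k' kk' by simp_all
      show ?thesis using b13[OF v1 w1] by simp
    next
      assume kk': "k' = 4"
      have w1: "E w c4" "E w c0" using k' kk' by simp_all
      show ?thesis using kk kk' by simp
    next
      assume kk': "k' = 5"
      have w1: "E w c5" "E w c1" using k' kk' by simp_all
      show ?thesis using kk kk' by simp
    next
      assume kk': "k' = 6"
      have w1: "E w c6" "E w c2" using k' kk' by simp_all
      show ?thesis using b16[OF v1 w1] by simp
    qed
  next
    assume kk: "k = 2"
    have v1: "E v c2" "E v c5" using k kk by simp_all
    have "k' = 0 \<or> k' = 1 \<or> k' = 2 \<or> k' = 3 \<or> k' = 4 \<or> k' = 5 \<or> k' = 6" using k'(1) by auto
    then show ?thesis
    proof (elim disjE)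
      assume kk': "k' = 0"
      have w1: "E w c0" "E w c3" using k' kk' by simp_all
      show ?thesis using b20[OF v1 w1] by simp
    next
      assume kk': "k' = 1"
      have w1: "E w c1" "E w c4" using k' kk' by simp_all
      show ?thesis using b21[OF v1 w1] by simp
    next
      assume kk': "k' = 2"
      have w1: "E w c2" "E w c5" using k' kk' by simp_all
      show ?thesis using b22[OF v1 w1] by simp
    next
      assume kk': "k' = 3"
      have w1: "E w c3" "E w c6" using k' kk' by simp_all
      show ?thesis using b23[OF v1 w1] by simp
    next
      assume kk': "k' = 4"
      have w1: "E w c4" "E w c0" using k' kk' by simp_all
      show ?thesis using b24[OF v1 w1] by simp
    next
      assume kk': "k' = 5"
      have w1: "E w c5" "E w c1" using k' kk' by simp_all
      show ?thesis using kk kk' by simp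
    next
      assume kk': "k' = 6"
      have w1: "E w c6" "E w c2" using k' kk' by simp_all
      show ?thesis using kk kk' by simp
    qed
  next
    assume kk: "k = 3"
    have v1: "E v c3" "E v c6" using k kk by simp_all
    have "k' = 0 \<or> k' = 1 \<or> k' = 2 \<or> k' = 3 \<or> k' = 4 \<or> k' = 5 \<or> k' = 6" using k'(1) by auto
    then show ?thesis
    proof (elim disjE)
      assume kk': "k' = 0"
      have w1: "E w c0" "E w c3" using k' kk' by simp_all
      show ?thesis using kk kk' by simp
    next
      assume kk': "k' = 1"
      have w1: "E w c1" "E w c4" using k' kk' by simp_all
      show ?thesis using b31[OF v1 w1] by simp
    next
      assume kk': "k' = 2"
      have w1: "E w c2" "E w c5" using k' kk' by simp_all
      show ?thesis using b32[OF v1 w1] by simp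
    next
      assume kk': "k' = 3"
      have w1: "E w c3" "E w c6" using k' kk' by simp_all
      show ?thesis using b33[OF v1 w1] by simp
    next
      assume kk': "k' = 4"
      have w1: "E w c4" "E w c0" using k' kk' by simp_all
      show ?thesis using b34[OF v1 w1] by simp
    next
      assume kk': "k' = 5"
      have w1: "E w c5" "E w c1" using k' kk' by simp_all
      show ?thesis using b35[OF v1 w1] by simp
    next
      assume kk': "k' = 6"
      have w1: "E w c6" "E w c2" using k' kk' by simp_all
      show ?thesis using kk kk' by simp
    qed
  next
    assume kk: "k = 4"
    have v1: "E v c4" "E v c0" using k kk by simp_all
    have "k' = 0 \<or> k' = 1 \<or> k' = 2 \<or> k' = 3 \<or> k' = 4 \<or> k' = 5 \<or> k' = 6" using k'(1) by auto
    then show ?thesis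
    proof (elim disjE)
      assume kk': "k' = 0"
      have w1: "E w c0" "E w c3" using k' kk' by simp_all
      show ?thesis using kk kk' by simp
    next
      assume kk': "k' = 1"
      have w1: "E w c1" "E w c4" using k' kk' by simp_all
      show ?thesis using kk kk' by simp
    next
      assume kk': "k' = 2"
      have w1: "E w c2" "E w c5" using k' kk' by simp_all
      show ?thesis using b42[OF v1 w1] by simp
    next
      assume kk': "k' = 3"
      have w1: "E w c3" "E w c6" using k' kk' by simp_all
      show ?thesis using b43[OF v1 w1] by simp
    next
      assume kk': "k' = 4"
      have w1: "E w c4" "E w c0" using k' kk' by simp_all
      show ?thesis using b44[OF v1 w1] by simp
    next
      assume kk': "k' = 5"
      have w1: "E w c5" "E w c1" using k' kk' by simp_all
      show ?thesis using b45[OF v1 w1] by simp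
    next
      assume kk': "k' = 6"
      have w1: "E w c6" "E w c2" using k' kk' by simp_all
      show ?thesis using b46[OF v1 w1] by simp
    qed
  next
    assume kk: "k = 5"
    have v1: "E v c5" "E v c1" using k kk by simp_all
    have "k' = 0 \<or> k' = 1 \<or> k' = 2 \<or> k' = 3 \<or> k' = 4 \<or> k' = 5 \<or> k' = 6" using k'(1) by auto
    then show ?thesis
    proof (elim disjE)
      assume kk': "k' = 0"
      have w1: "E w c0" "E w c3" using k' kk' by simp_all
      show ?thesis using b50[OF v1 w1] by simp
    next
      assume kk': "k' = 1"
      have w1: "E w c1" "E w c4" using k' kk' by simp_all
      show ?thesis using kk kk' by simp
    next
      assume kk': "k' = 2"
      have w1: "E w c2" "E w c5" using k' kk' by simp_all
      show ?thesis using kk kk' by simp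
    next
      assume kk': "k' = 3"
      have w1: "E w c3" "E w c6" using k' kk' by simp_all
      show ?thesis using b53[OF v1 w1] by simp
    next
      assume kk': "k' = 4"
      have w1: "E w c4" "E w c0" using k' kk' by simp_all
      show ?thesis using b54[OF v1 w1] by simp
    next
      assume kk': "k' = 5"
      have w1: "E w c5" "E w c1" using k' kk' by simp_all
      show ?thesis using b55[OF v1 w1] by simp
    next
      assume kk': "k' = 6"
      have w1: "E w c6" "E w c2" using k' kk' by simp_all
      show ?thesis using b56[OF v1 w1] by simp
    qed
  next
    assume kk: "k = 6"
    have v1: "E v c6" "E v c2" using k kk by simp_all
    have "k' = 0 \<or> k' = 1 \<or> k' = 2 \<or> k' = 3 \<or> k' = 4 \<or> k' = 5 \<or> k' = 6" using k'(1) by auto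
    then show ?thesis
    proof (elim disjE)
      assume kk': "k' = 0"
      have w1: "E w c0" "E w c3" using k' kk' by simp_all
      show ?thesis using b60[OF v1 w1] by simp
    next
      assume kk': "k' = 1"
      have w1: "E w c1" "E w c4" using k' kk' by simp_all
      show ?thesis using b61[OF v1 w1] by simp
    next
      assume kk': "k' = 2"
      have w1: "E w c2" "E w c5" using k' kk' by simp_all
      show ?thesis using kk kk' by simp
    next
      assume kk': "k' = 3"
      have w1: "E w c3" "E w c6" using k' kk' by simp_all
      show ?thesis using kk kk' by simp
    next
      assume kk': "k' = 4"
      have w1: "E w c4" "E w c0" using k' kk' by simp_all
      show ?thesis using b64[OF v1 w1] by simp
    next
      assume kk': "k' = 5"
      have w1: "E w c5" "E w c1" using k' kk' by simp_all
      show ?thesis using b65[OF v1 w1] by simp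
    next
      assume kk': "k' = 6"
      have w1: "E w c6" "E w c2" using k' kk' by simp_all
      show ?thesis using b66[OF v1 w1] by simp
    qed
  qed
qed


lemma S3core:
  assumes C: "is_cycle E [c0, c1, c2, c3, c4, c5, c6, c7]" and lo: "\<forall>c. is_cycle E c \<longrightarrow> length c \<le> 8"
    and g: "girth_at_least E 6"
    and H: "\<forall>c x. is_cycle E c \<longrightarrow> length c = 8 \<longrightarrow> x \<in> set c \<longrightarrow> x \<in> set [c0, c1, c2, c3, c4, c5, c6, c7]"
    and dv: "v \<notin> set [c0, c1, c2, c3, c4, c5, c6, c7]" and ev: "E v c0" "E v c4"
    and dw: "w \<notin> set [c0, c1, c2, c3, c4, c5, c6, c7]" and wv: "w \<noteq> v"
    and W1: "(E w c0 \<and> (E w c4 \<or> (\<exists>y. y \<notin> set [c0, c1, c2, c3, c4, c5, c6, c7] \<and> y \<noteq> w \<and> E w y \<and> E y c4))) \<or> (E w c1 \<and> (E w c5 \<or> (\<exists>y. y \<notin> set [c0, c1, c2, c3, c4, c5, c6, c7] \<and> y \<noteq> w \<and> E w y \<and> E y c5))) \<or> (E w c2 \<and> (E w c6 \<or> (\<exists>y. y \<notin> set [c0, c1, c2, c3, c4, c5, c6, c7] \<and> y \<noteq> w \<and> E w y \<and> E y c6))) \<or> (E w c3 \<and> (E w c7 \<or> (\<exists>y. y \<notin> set [c0, c1, c2, c3, c4, c5, c6, c7] \<and> y \<noteq> w \<and> E w y \<and> E y c7))) \<or> (E w c4 \<and> (E w c0 \<or> (\<exists>y. y \<notin> set [c0,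 c1, c2, c3, c4, c5, c6, c7] \<and> y \<noteq> w \<and> E w y \<and> E y c0))) \<or> (E w c5 \<and> (E w c1 \<or> (\<exists>y. y \<notin> set [c0, c1, c2, c3, c4, c5, c6, c7] \<and> y \<noteq> w \<and> E w y \<and> E y c1))) \<or> (E w c6 \<and> (E w c2 \<or> (\<exists>y. y \<notin> set [c0, c1, c2, c3, c4, c5, c6, c7] \<and> y \<noteq> w \<and> E w y \<and> E y c2))) \<or> (E w c7 \<and> (E w c3 \<or> (\<exists>y. y \<notin> set [c0, c1, c2, c3, c4, c5, c6, c7] \<and> y \<noteq> w \<and> E w y \<and> E y c3)))"
  shows False
proof -
  have cf: "distinct [c0, c1, c2, c3, c4, c5, c6, c7]" "E c0 c1" "E c1 c2" "E c2 c3" "E c3 c4" "E c4 c5" "E c5 c6" "E c6 c7" "E c7 c0"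
    using C by (simp_all add: is_cycle_alt)
  note cfs = Esym[OF cf(2)] Esym[OF cf(3)] Esym[OF cf(4)] Esym[OF cf(5)] Esym[OF cf(6)] Esym[OF cf(7)] Esym[OF cf(8)] Esym[OF cf(9)]
  have nq: "c0 \<noteq> c1" "c0 \<noteq> c2" "c0 \<noteq> c3" "c0 \<noteq> c4" "c0 \<noteq> c5" "c0 \<noteq> c6" "c0 \<noteq> c7" "c1 \<noteq> c0" "c1 \<noteq> c2" "c1 \<noteq> c3" "c1 \<noteq> c4" "c1 \<noteq> c5" "c1 \<noteq> c6" "c1 \<noteq> c7" "c2 \<noteq> c0" "c2 \<noteq> c1" "c2 \<noteq> c3" "c2 \<noteq> c4" "c2 \<noteq> c5" "c2 \<noteq> c6" "c2 \<noteq> c7" "c3 \<noteq> c0" "c3 \<noteq> c1" "c3 \<noteq> c2" "c3 \<noteq> c4" "c3 \<noteq> c5" "c3 \<noteq> c6" "c3 \<noteq> c7" "c4 \<noteq> c0" "c4 \<noteq> c1" "c4 \<noteq> c2" "c4 \<noteq> c3" "c4 \<noteq> c5" "c4 \<noteq> c6" "c4 \<noteq> c7" "c5 \<noteq> c0" "c5 \<noteq> c1" "c5 \<noteq> c2" "c5 \<noteq> c3" "c5 \<noteq> c4" "c5 \<noteq> c6" "c5 \<noteq> c7" "c6 \<noteq> c0" "c6 \<noteq> c1" "c6 \<noteq> c2" "c6 \<noteq> c3" "c6 \<noteq> c4" "c6 \<noteq> c5" "c6 \<noteq> c7" "c7 \<noteq> c0" "c7 \<noteq> c1" "c7 \<noteq>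 c2" "c7 \<noteq> c3" "c7 \<noteq> c4" "c7 \<noteq> c5" "c7 \<noteq> c6" using cf(1) by auto
  have nv: "v \<noteq> c0" "c0 \<noteq> v" "v \<noteq> c1" "c1 \<noteq> v" "v \<noteq> c2" "c2 \<noteq> v" "v \<noteq> c3" "c3 \<noteq> v" "v \<noteq> c4" "c4 \<noteq> v" "v \<noteq> c5" "c5 \<noteq> v" "v \<noteq> c6" "c6 \<noteq> v" "v \<noteq> c7" "c7 \<noteq> v" using dv by auto
  have nw: "w \<noteq> c0" "c0 \<noteq> w" "w \<noteq> c1" "c1 \<noteq> w" "w \<noteq> c2" "c2 \<noteq> w" "w \<noteq> c3" "c3 \<noteq> w" "w \<noteq> c4" "c4 \<noteq> w" "w \<noteq> c5" "c5 \<noteq> w" "w \<noteq> c6" "c6 \<noteq> w" "w \<noteq> c7" "c7 \<noteq> w" using dw by auto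
  have vw2: "v \<noteq> w" using wv by simp
  note evs = ev Esym[OF ev(1)] Esym[OF ev(2)]
  have t1_0: False if a: "E w c0" "E w c4" 
  proof -
    have cyc: "is_cycle E [c0, v, c4, w]" using cf cfs nq a Esym[OF a(1)] Esym[OF a(2)] nv nw wv vw2 evs by (simp add: is_cycle_alt)
    then have "6 \<le> length [c0, v, c4, w]" using g unfolding girth_at_least_def by blast
    then show False by simp
  qed
  have t2v_0: False if a: "E w c0" "E w v" "E v c4" 
  proof -
    have cyc: "is_cycle E [c0, v, w]" using cf cfs nq a Esym[OF a(1)] Esym[OF a(2)] Esym[OF a(3)] nv nw wv vw2 evs by (simp add: is_cycle_alt)
    then have "6 \<le> length [c0, v, w]" using g unfolding girth_at_least_def by blast
    then show False by simp
  qed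
  have t2_0: False if a: "y \<notin> set [c0, c1, c2, c3, c4, c5, c6, c7]" "y \<noteq> w" "y \<noteq> v" "E w c0" "E w y" "E y c4" for y
  proof -
    have ny: "y \<noteq> c0" "c0 \<noteq> y" "y \<noteq> c1" "c1 \<noteq> y" "y \<noteq> c2" "c2 \<noteq> y" "y \<noteq> c3" "c3 \<noteq> y" "y \<noteq> c4" "c4 \<noteq> y" "y \<noteq> c5" "c5 \<noteq> y" "y \<noteq> c6" "c6 \<noteq> y" "y \<noteq> c7" "c7 \<noteq> y" using a(1) by auto
    have yw: "w \<noteq> y" "v \<noteq> y" using a(2,3) by auto
    note yv = yw
    have cyc: "is_cycle E [c0, v, c4, y, w]" using cf cfs nq a Esym[OF a(4)] Esym[OF a(5)] Esym[OF a(6)] nv nw wv vw2 evs ny a(2,3) yw yv by (simp add: is_cycle_alt)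
    then have "6 \<le> length [c0, v, c4, y, w]" using g unfolding girth_at_least_def by blast
    then show False by simp
  qed
  have t1_1: False if a: "E w c1" "E w c5" 
  proof -
    have cyc: "is_cycle E [c0, c7, c6, c5, w, c1, c2, c3, c4, v]" using cf cfs nq a Esym[OF a(1)] Esym[OF a(2)] nv nw wv vw2 evs by (simp add: is_cycle_alt)
    then have "length [c0, c7, c6, c5, w, c1, c2, c3, c4, v] \<le> 8" using lo by blast
    then show False by simp
  qed
  have t2v_1: False if a: "E w c1" "E w v" "E v c5" 
  proof -
    have cyc: "is_cycle E [c4, c5, v]" using cf cfs nq a Esym[OF a(1)] Esym[OF a(2)] Esym[OF a(3)] nv nw wv vw2 evs by (simp add: is_cycle_alt)
    then have "6 \<le> length [c4, c5, v]" using g unfolding girth_at_least_def by blast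
    then show False by simp
  qed
  have t2_1: False if a: "y \<notin> set [c0, c1, c2, c3, c4, c5, c6, c7]" "y \<noteq> w" "y \<noteq> v" "E w c1" "E w y" "E y c5" for y
  proof -
    have ny: "y \<noteq> c0" "c0 \<noteq> y" "y \<noteq> c1" "c1 \<noteq> y" "y \<noteq> c2" "c2 \<noteq> y" "y \<noteq> c3" "c3 \<noteq> y" "y \<noteq> c4" "c4 \<noteq> y" "y \<noteq> c5" "c5 \<noteq> y" "y \<noteq> c6" "c6 \<noteq> y" "y \<noteq> c7" "c7 \<noteq> y" using a(1) by auto
    have yw: "w \<noteq> y" "v \<noteq> y" using a(2,3) by auto
    note yv = yw
    have cyc: "is_cycle E [c0, c7, c6, c5, y, w, c1, c2, c3, c4, v]" using cf cfs nq a Esym[OF a(4)] Esym[OF a(5)] Esym[OF a(6)] nv nw wv vw2 evs ny a(2,3) yw yv by (simp add: is_cycle_alt)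
    then have "length [c0, c7, c6, c5, y, w, c1, c2, c3, c4, v] \<le> 8" using lo by blast
    then show False by simp
  qed
  have t1_2: False if a: "E w c2" "E w c6" 
  proof -
    have cyc: "is_cycle E [c0, c1, c2, w, c6, c5, c4, v]" using cf cfs nq a Esym[OF a(1)] Esym[OF a(2)] nv nw wv vw2 evs by (simp add: is_cycle_alt)
    then have "w \<in> set [c0, c1, c2, c3, c4, c5, c6, c7]" using H[rule_format, OF cyc, of w] by simp
    then show False using dw by simp
  qed
  have t2v_2: False if a: "E w c2" "E w v" "E v c6" 
  proof -
    have cyc: "is_cycle E [c0, c7, c6, v]" using cf cfs nq a Esym[OF a(1)] Esym[OF a(2)] Esym[OF a(3)] nv nw wv vw2 evs by (simp add: is_cycle_alt)
    then have "6 \<le> length [c0, c7, c6, v]" using g unfolding girth_at_least_def by blast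
    then show False by simp
  qed
  have t2_2: False if a: "y \<notin> set [c0, c1, c2, c3, c4, c5, c6, c7]" "y \<noteq> w" "y \<noteq> v" "E w c2" "E w y" "E y c6" for y
  proof -
    have ny: "y \<noteq> c0" "c0 \<noteq> y" "y \<noteq> c1" "c1 \<noteq> y" "y \<noteq> c2" "c2 \<noteq> y" "y \<noteq> c3" "c3 \<noteq> y" "y \<noteq> c4" "c4 \<noteq> y" "y \<noteq> c5" "c5 \<noteq> y" "y \<noteq> c6" "c6 \<noteq> y" "y \<noteq> c7" "c7 \<noteq> y" using a(1) by auto
    have yw: "w \<noteq> y" "v \<noteq> y" using a(2,3) by auto
    note yv = yw
    have cyc: "is_cycle E [c0, c1, c2, w, y, c6, c5, c4, v]" using cf cfs nq a Esym[OF a(4)] Esym[OF a(5)] Esym[OF a(6)] nv nw wv vw2 evs ny a(2,3) yw yv by (simp add: is_cycle_alt)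
    then have "length [c0, c1, c2, w, y, c6, c5, c4, v] \<le> 8" using lo by blast
    then show False by simp
  qed
  have t1_3: False if a: "E w c3" "E w c7" 
  proof -
    have cyc: "is_cycle E [c0, c1, c2, c3, w, c7, c6, c5, c4, v]" using cf cfs nq a Esym[OF a(1)] Esym[OF a(2)] nv nw wv vw2 evs by (simp add: is_cycle_alt)
    then have "length [c0, c1, c2, c3, w, c7, c6, c5, c4, v] \<le> 8" using lo by blast
    then show False by simp
  qed
  have t2v_3: False if a: "E w c3" "E w v" "E v c7" 
  proof -
    have cyc: "is_cycle E [c0, c7, v]" using cf cfs nq a Esym[OF a(1)] Esym[OF a(2)] Esym[OF a(3)] nv nw wv vw2 evs by (simp add: is_cycle_alt)
    then have "6 \<le> length [c0, c7, v]" using g unfolding girth_at_least_def by blast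
    then show False by simp
  qed
  have t2_3: False if a: "y \<notin> set [c0, c1, c2, c3, c4, c5, c6, c7]" "y \<noteq> w" "y \<noteq> v" "E w c3" "E w y" "E y c7" for y
  proof -
    have ny: "y \<noteq> c0" "c0 \<noteq> y" "y \<noteq> c1" "c1 \<noteq> y" "y \<noteq> c2" "c2 \<noteq> y" "y \<noteq> c3" "c3 \<noteq> y" "y \<noteq> c4" "c4 \<noteq> y" "y \<noteq> c5" "c5 \<noteq> y" "y \<noteq> c6" "c6 \<noteq> y" "y \<noteq> c7" "c7 \<noteq> y" using a(1) by auto
    have yw: "w \<noteq> y" "v \<noteq> y" using a(2,3) by auto
    note yv = yw
    have cyc: "is_cycle E [c0, c1, c2, c3, w, y, c7, c6, c5, c4, v]" using cf cfs nq a Esym[OF a(4)] Esym[OF a(5)] Esym[OF a(6)] nv nw wv vw2 evs ny a(2,3) yw yv by (simp add: is_cycle_alt)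
    then have "length [c0, c1, c2, c3, w, y, c7, c6, c5, c4, v] \<le> 8" using lo by blast
    then show False by simp
  qed
  have t1_4: False if a: "E w c4" "E w c0" 
  proof -
    have cyc: "is_cycle E [c0, v, c4, w]" using cf cfs nq a Esym[OF a(1)] Esym[OF a(2)] nv nw wv vw2 evs by (simp add: is_cycle_alt)
    then have "6 \<le> length [c0, v, c4, w]" using g unfolding girth_at_least_def by blast
    then show False by simp
  qed
  have t2v_4: False if a: "E w c4" "E w v" "E v c0" 
  proof -
    have cyc: "is_cycle E [c4, v, w]" using cf cfs nq a Esym[OF a(1)] Esym[OF a(2)] Esym[OF a(3)] nv nw wv vw2 evs by (simp add: is_cycle_alt)
    then have "6 \<le> length [c4, v, w]" using g unfolding girth_at_least_def by blast
    then show False by simp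
  qed
  have t2_4: False if a: "y \<notin> set [c0, c1, c2, c3, c4, c5, c6, c7]" "y \<noteq> w" "y \<noteq> v" "E w c4" "E w y" "E y c0" for y
  proof -
    have ny: "y \<noteq> c0" "c0 \<noteq> y" "y \<noteq> c1" "c1 \<noteq> y" "y \<noteq> c2" "c2 \<noteq> y" "y \<noteq> c3" "c3 \<noteq> y" "y \<noteq> c4" "c4 \<noteq> y" "y \<noteq> c5" "c5 \<noteq> y" "y \<noteq> c6" "c6 \<noteq> y" "y \<noteq> c7" "c7 \<noteq> y" using a(1) by auto
    have yw: "w \<noteq> y" "v \<noteq> y" using a(2,3) by auto
    note yv = yw
    have cyc: "is_cycle E [c0, v, c4, w, y]" using cf cfs nq a Esym[OF a(4)] Esym[OF a(5)] Esym[OF a(6)] nv nw wv vw2 evs ny a(2,3) yw yv by (simp add: is_cycle_alt)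
    then have "6 \<le> length [c0, v, c4, w, y]" using g unfolding girth_at_least_def by blast
    then show False by simp
  qed
  have t1_5: False if a: "E w c5" "E w c1" 
  proof -
    have cyc: "is_cycle E [c0, c7, c6, c5, w, c1, c2, c3, c4, v]" using cf cfs nq a Esym[OF a(1)] Esym[OF a(2)] nv nw wv vw2 evs by (simp add: is_cycle_alt)
    then have "length [c0, c7, c6, c5, w, c1, c2, c3, c4, v] \<le> 8" using lo by blast
    then show False by simp
  qed
  have t2v_5: False if a: "E w c5" "E w v" "E v c1" 
  proof -
    have cyc: "is_cycle E [c0, c1, v]" using cf cfs nq a Esym[OF a(1)] Esym[OF a(2)] Esym[OF a(3)] nv nw wv vw2 evs by (simp add: is_cycle_alt)
    then have "6 \<le> length [c0, c1, v]" using g unfolding girth_at_least_def by blast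
    then show False by simp
  qed
  have t2_5: False if a: "y \<notin> set [c0, c1, c2, c3, c4, c5, c6, c7]" "y \<noteq> w" "y \<noteq> v" "E w c5" "E w y" "E y c1" for y
  proof -
    have ny: "y \<noteq> c0" "c0 \<noteq> y" "y \<noteq> c1" "c1 \<noteq> y" "y \<noteq> c2" "c2 \<noteq> y" "y \<noteq> c3" "c3 \<noteq> y" "y \<noteq> c4" "c4 \<noteq> y" "y \<noteq> c5" "c5 \<noteq> y" "y \<noteq> c6" "c6 \<noteq> y" "y \<noteq> c7" "c7 \<noteq> y" using a(1) by auto
    have yw: "w \<noteq> y" "v \<noteq> y" using a(2,3) by auto
    note yv = yw
    have cyc: "is_cycle E [c0, c7, c6, c5, w, y, c1, c2, c3, c4, v]" using cf cfs nq a Esym[OF a(4)] Esym[OF a(5)] Esym[OF a(6)] nv nw wv vw2 evs ny a(2,3) yw yv by (simp add: is_cycle_alt)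
    then have "length [c0, c7, c6, c5, w, y, c1, c2, c3, c4, v] \<le> 8" using lo by blast
    then show False by simp
  qed
  have t1_6: False if a: "E w c6" "E w c2" 
  proof -
    have cyc: "is_cycle E [c0, c1, c2, w, c6, c5, c4, v]" using cf cfs nq a Esym[OF a(1)] Esym[OF a(2)] nv nw wv vw2 evs by (simp add: is_cycle_alt)
    then have "w \<in> set [c0, c1, c2, c3, c4, c5, c6, c7]" using H[rule_format, OF cyc, of w] by simp
    then show False using dw by simp
  qed
  have t2v_6: False if a: "E w c6" "E w v" "E v c2" 
  proof -
    have cyc: "is_cycle E [c0, c1, c2, v]" using cf cfs nq a Esym[OF a(1)] Esym[OF a(2)] Esym[OF a(3)] nv nw wv vw2 evs by (simp add: is_cycle_alt)
    then have "6 \<le> length [c0, c1, c2, v]" using g unfolding girth_at_least_def by blast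
    then show False by simp
  qed
  have t2_6: False if a: "y \<notin> set [c0, c1, c2, c3, c4, c5, c6, c7]" "y \<noteq> w" "y \<noteq> v" "E w c6" "E w y" "E y c2" for y
  proof -
    have ny: "y \<noteq> c0" "c0 \<noteq> y" "y \<noteq> c1" "c1 \<noteq> y" "y \<noteq> c2" "c2 \<noteq> y" "y \<noteq> c3" "c3 \<noteq> y" "y \<noteq> c4" "c4 \<noteq> y" "y \<noteq> c5" "c5 \<noteq> y" "y \<noteq> c6" "c6 \<noteq> y" "y \<noteq> c7" "c7 \<noteq> y" using a(1) by auto
    have yw: "w \<noteq> y" "v \<noteq> y" using a(2,3) by auto
    note yv = yw
    have cyc: "is_cycle E [c0, c1, c2, y, w, c6, c5, c4, v]" using cf cfs nq a Esym[OF a(4)] Esym[OF a(5)] Esym[OF a(6)] nv nw wv vw2 evs ny a(2,3) yw yv by (simp add: is_cycle_alt)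
    then have "length [c0, c1, c2, y, w, c6, c5, c4, v] \<le> 8" using lo by blast
    then show False by simp
  qed
  have t1_7: False if a: "E w c7" "E w c3" 
  proof -
    have cyc: "is_cycle E [c0, c1, c2, c3, w, c7, c6, c5, c4, v]" using cf cfs nq a Esym[OF a(1)] Esym[OF a(2)] nv nw wv vw2 evs by (simp add: is_cycle_alt)
    then have "length [c0, c1, c2, c3, w, c7, c6, c5, c4, v] \<le> 8" using lo by blast
    then show False by simp
  qed
  have t2v_7: False if a: "E w c7" "E w v" "E v c3" 
  proof -
    have cyc: "is_cycle E [c3, c4, v]" using cf cfs nq a Esym[OF a(1)] Esym[OF a(2)] Esym[OF a(3)] nv nw wv vw2 evs by (simp add: is_cycle_alt)
    then have "6 \<le> length [c3, c4, v]" using g unfolding girth_at_least_def by blast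
    then show False by simp
  qed
  have t2_7: False if a: "y \<notin> set [c0, c1, c2, c3, c4, c5, c6, c7]" "y \<noteq> w" "y \<noteq> v" "E w c7" "E w y" "E y c3" for y
  proof -
    have ny: "y \<noteq> c0" "c0 \<noteq> y" "y \<noteq> c1" "c1 \<noteq> y" "y \<noteq> c2" "c2 \<noteq> y" "y \<noteq> c3" "c3 \<noteq> y" "y \<noteq> c4" "c4 \<noteq> y" "y \<noteq> c5" "c5 \<noteq> y" "y \<noteq> c6" "c6 \<noteq> y" "y \<noteq> c7" "c7 \<noteq> y" using a(1) by auto
    have yw: "w \<noteq> y" "v \<noteq> y" using a(2,3) by auto
    note yv = yw
    have cyc: "is_cycle E [c0, c1, c2, c3, y, w, c7, c6, c5, c4, v]" using cf cfs nq a Esym[OF a(4)] Esym[OF a(5)] Esym[OF a(6)] nv nw wv vw2 evs ny a(2,3) yw yv by (simp add: is_cycle_alt)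
    then have "length [c0, c1, c2, c3, y, w, c7, c6, c5, c4, v] \<le> 8" using lo by blast
    then show False by simp
  qed
  have u_0: False if a: "E w c0" "E w y" "E y c4" "y \<notin> set [c0, c1, c2, c3, c4, c5, c6, c7]" "y \<noteq> w" for y
  proof (cases "y = v")
    case True then show False using t2v_0 a by simp
  next
    case False then show False using t2_0 a by blast
  qed
  have u_1: False if a: "E w c1" "E w y" "E y c5" "y \<notin> set [c0, c1, c2, c3, c4, c5, c6, c7]" "y \<noteq> w" for y
  proof (cases "y = v")
    case True then show False using t2v_1 a by simp
  next
    case False then show False using t2_1 a by blast
  qed
  have u_2: False if a: "E w c2" "E w y" "E y c6" "y \<notin> set [c0, c1, c2, c3, c4, c5, c6, c7]" "y \<noteq> w" for y
  proof (cases "y = v")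
    case True then show False using t2v_2 a by simp
  next
    case False then show False using t2_2 a by blast
  qed
  have u_3: False if a: "E w c3" "E w y" "E y c7" "y \<notin> set [c0, c1, c2, c3, c4, c5, c6, c7]" "y \<noteq> w" for y
  proof (cases "y = v")
    case True then show False using t2v_3 a by simp
  next
    case False then show False using t2_3 a by blast
  qed
  have u_4: False if a: "E w c4" "E w y" "E y c0" "y \<notin> set [c0, c1, c2, c3, c4, c5, c6, c7]" "y \<noteq> w" for y
  proof (cases "y = v")
    case True then show False using t2v_4 a by simp
  next
    case False then show False using t2_4 a by blast
  qed
  have u_5: False if a: "E w c5" "E w y" "E y c1" "y \<notin> set [c0, c1, c2, c3, c4, c5, c6, c7]" "y \<noteq> w" for y
  proof (cases "y = v")
    case True then show False using t2v_5 a by simp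
  next
    case False then show False using t2_5 a by blast
  qed
  have u_6: False if a: "E w c6" "E w y" "E y c2" "y \<notin> set [c0, c1, c2, c3, c4, c5, c6, c7]" "y \<noteq> w" for y
  proof (cases "y = v")
    case True then show False using t2v_6 a by simp
  next
    case False then show False using t2_6 a by blast
  qed
  have u_7: False if a: "E w c7" "E w y" "E y c3" "y \<notin> set [c0, c1, c2, c3, c4, c5, c6, c7]" "y \<noteq> w" for y
  proof (cases "y = v")
    case True then show False using t2v_7 a by simp
  next
    case False then show False using t2_7 a by blast
  qed
  from W1 show False
    apply (elim disjE conjE exE)
    using t1_0 t1_1 t1_2 t1_3 t1_4 t1_5 t1_6 t1_7 u_0 u_1 u_2 u_3 u_4 u_5 u_6 u_7 by metis+
qed


end


lemma len6: "length xs = 6 \<Longrightarrow> \<exists>a b c d e f. xs = [a,b,c,d,e,f]"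
  by (simp add: numeral_eq_Suc length_Suc_conv) blast
lemma len7: "length xs = 7 \<Longrightarrow> \<exists>a b c d e f g. xs = [a,b,c,d,e,f,g]"
  by (simp add: numeral_eq_Suc length_Suc_conv) blast
lemma len8: "length xs = 8 \<Longrightarrow> \<exists>a b c d e f g h. xs = [a,b,c,d,e,f,g,h]"
  by (simp add: numeral_eq_Suc length_Suc_conv) blast

lemma two_elems: "finite A \<Longrightarrow> 2 \<le> card A \<Longrightarrow> \<exists>a\<in>A. \<exists>b\<in>A. a \<noteq> b"
proof -
  assume f: "finite A" and c: "2 \<le> card A"
  then obtain a where a: "a \<in> A" by fastforce
  have "card (A - {a}) \<ge> 1" using c a f by simp
  then have "A - {a} \<noteq> {}" by (intro notI) simp
  then obtain b where "b \<in> A - {a}" by blast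
  then show ?thesis using a by blast
qed

lemma three_elems: "finite A \<Longrightarrow> 3 \<le> card A \<Longrightarrow> \<exists>a\<in>A. \<exists>b\<in>A. \<exists>c\<in>A. a \<noteq> b \<and> a \<noteq> c \<and> b \<noteq> c"
proof -
  assume f: "finite A" and c: "3 \<le> card A"
  then obtain a where a: "a \<in> A" by fastforce
  have "card (A - {a}) \<ge> 2" using c a f by simp
  then have "A - {a} \<noteq> {}" by (intro notI) simp
  then obtain b where b: "b \<in> A - {a}" by blast
  have "card (A - {a} - {b}) \<ge> 1" using c a b f by simp
  then have "A - {a} - {b} \<noteq> {}" by (intro notI) simp
  then obtain d where "d \<in> A - {a} - {b}" by blast
  then show ?thesis using a b by blast
qed

lemma inv_even:
  assumes "finite A" "\<forall>x\<in>A. f x \<in> A \<and> f x \<noteq> x \<and> f (f x) = x"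
  shows "even (card A)"
  using assms
proof (induction "card A" arbitrary: A rule: less_induct)
  case less
  show ?case
  proof (cases "A = {}")
    case True then show ?thesis by simp
  next
    case False
    then obtain x where x: "x \<in> A" by blast
    let ?A = "A - {x, f x}"
    have fx: "f x \<in> A" "f x \<noteq> x" using less(3) x by auto
    have c2: "card {x, f x} = 2" using fx by simp
    have sub: "{x, f x} \<subseteq> A" using x fx by auto
    have "card ?A = card A - card {x, f x}" using card_Diff_subset[OF _ sub] by simp
    moreover have "card {x, f x} \<le> card A" using card_mono[OF less(2) sub] .
    ultimately have cA: "card ?A + 2 = card A" using c2 by simp
    have "\<forall>y\<in>?A. f y \<in> ?A \<and> f y \<noteq> y \<and> f (f y) = y"
    proof
      fix y assume y: "y \<in> ?A"
      have "f y \<in> A" "f y \<noteq> y" "f (f y) = y" using less(3) y by auto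
      moreover have "f y \<noteq> x"
      proof
        assume "f y = x" then have "f x = y" using \<open>f (f y) = y\<close> by simp
        then show False using y by auto
      qed
      moreover have "f y \<noteq> f x"
      proof
        assume "f y = f x" then have "f (f y) = f (f x)" by simp
        then have "y = x" using \<open>f (f y) = y\<close> less(3) x by simp
        then show False using y by auto
      qed
      ultimately show "f y \<in> ?A \<and> f y \<noteq> y \<and> f (f y) = y" by auto
    qed
    moreover have "card ?A < card A" using cA by simp
    moreover have "finite ?A" using less(2) by simp
    ultimately have "even (card ?A)" using less(1) by blast
    then show ?thesis using cA by (metis even_add even_numeral)
  qed
qed


context g2c
begin

definition P8 :: "'a list \<Rightarrow> bool" where
  "P8 C \<longleftrightarrow> is_cycle E C \<and> length C = 8 \<and> (\<forall>c. is_cycle E c \<longrightarrow> length c \<le> 8) \<and> girth_at_least E 6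
     \<and> (\<forall>c x. is_cycle E c \<longrightarrow> length c = 8 \<longrightarrow> x \<in> set c \<longrightarrow> x \<in> set C)"

lemma P8_rot: "P8 C \<Longrightarrow> P8 (rotate k C)"
  unfolding P8_def using is_cycle_rotate by auto

lemma factA_lt:
  assumes P: "P8 C" and ij: "i < j" "j < 8" and I: "I \<noteq> []" "set I \<inter> set C = {}"
    and d: "distinct (C ! i # I @ [C ! j])" and s: "successively E (C ! i # I @ [C ! j])"
  shows "j = i + 4 \<and> (length I = 1 \<or> length I = 2)"
proof -
  have c: "is_cycle E C" and l8: "length C = 8" and lo: "\<forall>c. is_cycle E c \<longrightarrow> length c \<le> 8"
    and g: "girth_at_least E 6" and H: "\<forall>c x. is_cycle E c \<longrightarrow> length c = 8 \<longrightarrow> x \<in> set c \<longrightarrow> x \<in> set C"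
    using P unfolding P8_def by auto
  have dI: "distinct I" using d by simp
  obtain A B where AB: "is_cycle E A" "length A = length I + 1 + (length C - (j - i))" "set I \<subseteq> set A"
    "is_cycle E B" "length B = length I + 1 + (j - i)" "set I \<subseteq> set B"
    using ear_cycles[OF c Esym ij(1) _ I(1,2) dI s] ij l8 by auto
  have hI1: "hd I \<in> set I" using hd_in_set[OF I(1)] .
  have hI: "hd I \<in> set I" "hd I \<notin> set C" using I(2) hI1 by blast+
  have "length A \<noteq> 8" using H AB(1,3) hI by blast
  moreover have "length B \<noteq> 8" using H AB(4,6) hI by blast
  moreover have "length A \<le> 8" "length B \<le> 8" using lo AB by auto
  moreover have "6 \<le> length A" "6 \<le> length B" using g AB unfolding girth_at_least_def by auto
  moreover have "length I \<ge> 1" using I(1) by (cases I) auto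
  ultimately show ?thesis using AB(2,5) l8 ij by arith
qed

lemma factA:
  assumes P: "P8 C" and ij: "i \<noteq> j" "i < 8" "j < 8" and I: "I \<noteq> []" "set I \<inter> set C = {}"
    and d: "distinct (C ! i # I @ [C ! j])" and s: "successively E (C ! i # I @ [C ! j])"
  shows "(j = i + 4 \<or> i = j + 4) \<and> (length I = 1 \<or> length I = 2)"
proof (cases "i < j")
  case True then show ?thesis using factA_lt[OF P True ij(3) I d s] by simp
next
  case False
  then have ji: "j < i" using ij by simp
  have "successively (\<lambda>x y. E y x) (C ! i # I @ [C ! j])" by (rule successively_mono[OF s]) (simp add: Esym)
  then have "successively E (rev (C ! i # I @ [C ! j]))" by (simp only: successively_rev)
  then have s': "successively E (C ! j # rev I @ [C ! i])" by simp
  have d': "distinct (C ! j # rev I @ [C ! i])" using d by auto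
  have "rev I \<noteq> []" "set (rev I) \<inter> set C = {}" using I by auto
  from factA_lt[OF P ji ij(2) this d' s'] show ?thesis by simp
qed

lemma classify:
  assumes P: "P8 C" and v: "v \<in> V" "v \<notin> set C"
  shows "\<exists>k k'. k < 8 \<and> k' < 8 \<and> (k' = k + 4 \<or> k = k' + 4) \<and> E v (C ! k)
     \<and> (E v (C ! k') \<or> (\<exists>y. y \<notin> set C \<and> y \<noteq> v \<and> E v y \<and> E y (C ! k')))"
proof -
  have c: "is_cycle E C" and l8: "length C = 8" using P unfolding P8_def by auto
  obtain i j I where e: "i < j" "j < length C" "I \<noteq> []" "v \<in> set I" "set I \<inter> set C = {}"
     "distinct (C ! i # I @ [C ! j])" "successively E (C ! i # I @ [C ! j])"
    using ear_exists[OF c v] by blast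
  have f: "j = i + 4" "length I = 1 \<or> length I = 2" using factA_lt[OF P e(1) _ e(3,5,6,7)] e(2) l8 by auto
  show ?thesis
  proof (cases "length I = 1")
    case True
    then obtain a where a: "I = [a]" by (cases I) auto
    then have av: "a = v" using e(4) by simp
    have "E (C ! i) v" "E v (C ! j)" using e(7) a av by simp_all
    then show ?thesis using f(1) e(1,2) l8 Esym by (intro exI[of _ i] exI[of _ j]) auto
  next
    case False
    then have "length I = 2" using f(2) by simp
    then obtain a b where ab: "I = [a, b]" by (cases I; cases "tl I") auto
    have ed: "E (C ! i) a" "E a b" "E b (C ! j)" using e(7) ab by simp_all
    have nd: "a \<noteq> b" "a \<notin> set C" "b \<notin> set C" using e(5,6) ab by auto
    have "v = a \<or> v = b" using e(4) ab by simp
    then show ?thesis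
    proof
      assume va: "v = a"
      show ?thesis using ed nd va f(1) e(1,2) l8 Esym by (intro exI[of _ i] exI[of _ j]) auto
    next
      assume vb: "v = b"
      show ?thesis using ed nd vb f(1) e(1,2) l8 Esym by (intro exI[of _ j] exI[of _ i]) auto
    qed
  qed
qed

lemma W1_of:
  assumes "\<exists>k k'. k < 8 \<and> k' < 8 \<and> (k' = k + 4 \<or> k = k' + 4) \<and> E w ([c0, c1, c2, c3, c4, c5, c6, c7] ! k)
     \<and> (E w ([c0, c1, c2, c3, c4, c5, c6, c7] ! k') \<or> (\<exists>y. y \<notin> set [c0, c1, c2, c3, c4, c5, c6, c7] \<and> y \<noteq> w \<and> E w y \<and> E y ([c0, c1, c2, c3, c4, c5, c6, c7] ! k')))"
  shows "(E w c0 \<and> (E w c4 \<or> (\<exists>y. y \<notin> set [c0, c1, c2, c3, c4, c5, c6, c7] \<and> y \<noteq> w \<and> E w y \<and> E y c4))) \<or> (E w c1 \<and> (E w c5 \<or> (\<exists>y. y \<notin> set [c0, c1, c2, c3, c4, c5, c6, c7] \<and> y \<noteq> w \<and> E w y \<and> E y c5))) \<or> (E w c2 \<and> (E w c6 \<or> (\<exists>y. y \<notin> set [c0, c1, c2, c3, c4, c5, c6, c7] \<and> y \<noteq> w \<and> E w y \<and> E y c6))) \<or> (E w c3 \<and> (E w c7 \<or> (\<exists>y. y \<notin> set [c0, c1, c2, c3, c4, c5, c6, c7] \<and> y \<noteq> w \<and> E w y \<and> E y c7))) \<or> (E w c4 \<and> (E w c0 \<or> (\<exists>y. y \<notin> set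 [c0, c1, c2, c3, c4, c5, c6, c7] \<and> y \<noteq> w \<and> E w y \<and> E y c0))) \<or> (E w c5 \<and> (E w c1 \<or> (\<exists>y. y \<notin> set [c0, c1, c2, c3, c4, c5, c6, c7] \<and> y \<noteq> w \<and> E w y \<and> E y c1))) \<or> (E w c6 \<and> (E w c2 \<or> (\<exists>y. y \<notin> set [c0, c1, c2, c3, c4, c5, c6, c7] \<and> y \<noteq> w \<and> E w y \<and> E y c2))) \<or> (E w c7 \<and> (E w c3 \<or> (\<exists>y. y \<notin> set [c0, c1, c2, c3, c4, c5, c6, c7] \<and> y \<noteq> w \<and> E w y \<and> E y c3)))"
proof -
  obtain k k' where k: "k < 8" "k' < 8" "k' = k + 4 \<or> k = k' + 4" "E w ([c0, c1, c2, c3, c4, c5, c6, c7] ! k)"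
     "E w ([c0, c1, c2, c3, c4, c5, c6, c7] ! k') \<or> (\<exists>y. y \<notin> set [c0, c1, c2, c3, c4, c5, c6, c7] \<and> y \<noteq> w \<and> E w y \<and> E y ([c0, c1, c2, c3, c4, c5, c6, c7] ! k'))"
    using assms by blast
  have "k = 0 \<or> k = 1 \<or> k = 2 \<or> k = 3 \<or> k = 4 \<or> k = 5 \<or> k = 6 \<or> k = 7" using k(1) by auto
  then show ?thesis
  proof (elim disjE)
    assume "k = 0" then have "k' = 4" using k by auto
    then show ?thesis using k \<open>k = 0\<close> by simp
  next
    assume "k = 1" then have "k' = 5" using k by auto
    then show ?thesis using k \<open>k = 1\<close> by simp
  next
    assume "k = 2" then have "k' = 6" using k by auto
    then show ?thesis using k \<open>k = 2\<close> by simp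
  next
    assume "k = 3" then have "k' = 7" using k by auto
    then show ?thesis using k \<open>k = 3\<close> by simp
  next
    assume "k = 4" then have "k' = 0" using k by auto
    then show ?thesis using k \<open>k = 4\<close> by simp
  next
    assume "k = 5" then have "k' = 1" using k by auto
    then show ?thesis using k \<open>k = 5\<close> by simp
  next
    assume "k = 6" then have "k' = 2" using k by auto
    then show ?thesis using k \<open>k = 6\<close> by simp
  next
    assume "k = 7" then have "k' = 3" using k by auto
    then show ?thesis using k \<open>k = 7\<close> by simp
  qed
qed

lemma S3:
  assumes P: "P8 C" and v: "v \<in> V" "v \<notin> set C" and w: "w \<in> V" "w \<notin> set C" "w \<noteq> v"
    and ij: "i < 8" "j < 8" "i \<noteq> j" and e: "E v (C ! i)" "E v (C ! j)"
  shows False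
proof -
  have c: "is_cycle E C" and l8: "length C = 8" using P unfolding P8_def by auto
  have dC: "distinct C" using c by (simp add: is_cycle_def)
  have "C ! i \<noteq> C ! j" using dC ij l8 by (simp add: nth_eq_iff_index_eq)
  then have d: "distinct (C ! i # [v] @ [C ! j])" using v(2) ij l8 by (auto intro: nth_mem)
  have s: "successively E (C ! i # [v] @ [C ! j])" using e Esym by simp
  have "j = i + 4 \<or> i = j + 4" using factA[OF P ij(3,1,2) _ _ d s] v(2) by auto
  then obtain a b where ab: "a < 8" "b = a + 4" "E v (C ! a)" "E v (C ! b)" "b < 8"
  proof
    assume "j = i + 4" then show ?thesis using that[of i j] ij e by simp
  next
    assume "i = j + 4" then show ?thesis using that[of j i] ij e by simp
  qed
  let ?C = "rotate a C"
  have P': "P8 ?C" by (rule P8_rot[OF P])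
  have l8': "length ?C = 8" using l8 by simp
  obtain d0 d1 d2 d3 d4 d5 d6 d7 where D: "?C = [d0, d1, d2, d3, d4, d5, d6, d7]"
    using len8[OF l8'] by blast
  have "?C ! 0 = C ! a" using nth_rotate[of 0 C a] l8 ab by simp
  then have e0: "E v d0" using ab D by simp
  have "?C ! 4 = C ! ((a + 4) mod 8)" using nth_rotate[of 4 C a] l8 by simp
  also have "\<dots> = C ! b" using ab by simp
  finally have e4: "E v d4" using ab D by simp
  have P'': "P8 [d0, d1, d2, d3, d4, d5, d6, d7]" using P' D by simp
  have cls: "\<exists>k k'. k < 8 \<and> k' < 8 \<and> (k' = k + 4 \<or> k = k' + 4) \<and> E w ([d0, d1, d2, d3, d4, d5, d6, d7] ! k)
     \<and> (E w ([d0, d1, d2, d3, d4, d5, d6, d7] ! k') \<or> (\<exists>y. y \<notin> set [d0, d1, d2, d3, d4, d5, d6, d7] \<and> y \<noteq> w \<and> E w y \<and> E y ([d0, d1, d2, d3, d4, d5, d6, d7] ! k')))"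
    using classify[OF P'' w(1)] w(2) D by (metis set_rotate)
  note W = W1_of[OF cls]
  have dv: "v \<notin> set [d0, d1, d2, d3, d4, d5, d6, d7]" using v(2) D by (metis set_rotate)
  have dw: "w \<notin> set [d0, d1, d2, d3, d4, d5, d6, d7]" using w(2) D by (metis set_rotate)
  show False
    by (rule S3core[of d0 d1 d2 d3 d4 d5 d6 d7 v w, OF _ _ _ _ dv e0 e4 dw w(3) W])
       (use P'' in \<open>auto simp: P8_def\<close>)
qed

end


context g2c
begin

lemma S4_ex:
  assumes P: "P8 C" and O2: "2 \<le> card (V - set C)" and v: "v \<in> V" "v \<notin> set C"
  shows "\<exists>y. y \<in> V \<and> y \<notin> set C \<and> E v y"
proof -
  obtain k k' where k: "k < 8" "k' < 8" "k' = k + 4 \<or> k = k' + 4" "E v (C ! k)"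
     "E v (C ! k') \<or> (\<exists>y. y \<notin> set C \<and> y \<noteq> v \<and> E v y \<and> E y (C ! k'))"
    using classify[OF P v] by blast
  show ?thesis
  proof (cases "E v (C ! k')")
    case True
    obtain a b where ab: "a \<in> V - set C" "b \<in> V - set C" "a \<noteq> b" using two_elems[OF _ O2] finV by blast
    obtain w where w: "w \<in> V" "w \<notin> set C" "w \<noteq> v" using ab by (metis DiffE)
    have "k \<noteq> k'" using k(3) by auto
    then show ?thesis using S3[OF P v w k(1,2) _ k(4) True] by blast
  next
    case False
    then obtain y where "y \<notin> set C" "E v y" using k(5) by blast
    then show ?thesis using EV by blast
  qed
qed

lemma ky_of:
  assumes P: "P8 C" and v: "v \<notin> set C" and y: "y \<notin> set C" and e: "E v y"
    and k: "k < 8" "E v (C ! k)" and ky: "ky < 8" "E y (C ! ky)"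
  shows "ky = k + 4 \<or> k = ky + 4"
proof -
  have c: "is_cycle E C" and l8: "length C = 8" and g: "girth_at_least E 6" using P unfolding P8_def by auto
  have dC: "distinct C" using c by (simp add: is_cycle_def)
  have vy: "v \<noteq> y" using e Eirr by blast
  have kin: "C ! k \<in> set C" "C ! ky \<in> set C" using k ky l8 by (auto intro: nth_mem)
  show ?thesis
  proof (cases "k = ky")
    case True
    have "is_cycle E [v, y, C ! k]"
      unfolding is_cycle_alt using e ky True k vy v y kin Esym by auto
    then show ?thesis using g unfolding girth_at_least_def by fastforce
  next
    case False
    have "C ! k \<noteq> C ! ky" using dC False k ky l8 by (simp add: nth_eq_iff_index_eq)
    then have d: "distinct (C ! k # [v, y] @ [C ! ky])" using v y vy kin by auto
    have s: "successively E (C ! k # [v, y] @ [C ! ky])" using e k ky Esym by simp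
    show ?thesis using factA[OF P False k(1) ky(1) _ _ d s] v y by auto
  qed
qed

lemma S4_un:
  assumes P: "P8 C" and v: "v \<in> V" "v \<notin> set C" and y: "y \<in> V" "y \<notin> set C" and z: "z \<in> V" "z \<notin> set C"
    and e: "E v y" "E v z"
  shows "y = z"
proof (rule ccontr)
  assume yz: "y \<noteq> z"
  have c: "is_cycle E C" and l8: "length C = 8" and g: "girth_at_least E 6" using P unfolding P8_def by auto
  obtain k where k: "k < 8" "E v (C ! k)" using classify[OF P v] by blast
  obtain ky where ky: "ky < 8" "E y (C ! ky)" using classify[OF P y] by blast
  obtain kz where kz: "kz < 8" "E z (C ! kz)" using classify[OF P z] by blast
  have "ky = k + 4 \<or> k = ky + 4" by (rule ky_of[OF P v(2) y(2) e(1) k ky])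
  moreover have "kz = k + 4 \<or> k = kz + 4" by (rule ky_of[OF P v(2) z(2) e(2) k kz])
  ultimately have "ky = kz" using ky kz k by arith
  then have ez: "E z (C ! ky)" using kz by simp
  have vy: "v \<noteq> y" "v \<noteq> z" using e Eirr by blast+
  have kin: "C ! ky \<in> set C" using ky l8 by (auto intro: nth_mem)
  have "is_cycle E [v, y, C ! ky, z]"
    unfolding is_cycle_alt using e ky(2) ez vy yz v y z kin Esym by auto
  then show False using g unfolding girth_at_least_def by fastforce
qed

lemma L8_even:
  assumes P: "P8 C" and O2: "2 \<le> card (V - set C)"
  shows "even (card (V - set C))"
proof -
  let ?O = "V - set C"
  define f where "f v = (THE y. y \<in> ?O \<and> E v y)" for v
  have fv: "f v \<in> ?O \<and> E v (f v)" if v: "v \<in> ?O" for v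
  proof -
    obtain y where y: "y \<in> V" "y \<notin> set C" "E v y" using S4_ex[OF P O2] v by blast
    have "\<exists>!y. y \<in> ?O \<and> E v y"
    proof
      show "y \<in> ?O \<and> E v y" using y by blast
    next
      fix z assume "z \<in> ?O \<and> E v z"
      then show "z = y" using S4_un[OF P _ _ _ _ _ _ _ y(3)] v y by blast
    qed
    then show ?thesis unfolding f_def by (rule theI')
  qed
  have "\<forall>x\<in>?O. f x \<in> ?O \<and> f x \<noteq> x \<and> f (f x) = x"
  proof
    fix x assume x: "x \<in> ?O"
    have a: "f x \<in> ?O" "E x (f x)" using fv[OF x] by auto
    have b: "f (f x) \<in> ?O" "E (f x) (f (f x))" using fv[OF a(1)] by auto
    have "f (f x) = x" using S4_un[OF P _ _ _ _ _ _ b(2) Esym[OF a(2)]] a b x by blast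
    moreover have "f x \<noteq> x" using a(2) Eirr by auto
    ultimately show "f x \<in> ?O \<and> f x \<noteq> x \<and> f (f x) = x" using a by blast
  qed
  then show ?thesis using inv_even[of ?O f] finV by blast
qed

end


lemma ar_6_6: "(m::nat) \<ge> 1 \<Longrightarrow> i < j \<Longrightarrow> j < L \<Longrightarrow> L = 6 \<Longrightarrow> m+1+(L-(j-i)) \<le> L \<Longrightarrow> m+1+(j-i) \<le> L \<Longrightarrow> 6 \<le> m+1+(L-(j-i)) \<Longrightarrow> 6 \<le> m+1+(j-i) \<Longrightarrow> m+1+(L-(j-i)) = L \<or> m+1+(j-i) = L"
  by arith
lemma ar_7_6: "(m::nat) \<ge> 1 \<Longrightarrow> i < j \<Longrightarrow> j < L \<Longrightarrow> L = 7 \<Longrightarrow> m+1+(L-(j-i)) \<le> L \<Longrightarrow> m+1+(j-i) \<le> L \<Longrightarrow> 6 \<le> m+1+(L-(j-i)) \<Longrightarrow> 6 \<le> m+1+(j-i) \<Longrightarrow> m = 2 \<and> (m+1+(L-(j-i)) = L \<or> m+1+(j-i) = L)"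
  by arith
lemma ar_5_5: "(m::nat) \<ge> 1 \<Longrightarrow> i < j \<Longrightarrow> j < L \<Longrightarrow> L = 5 \<Longrightarrow> m+1+(L-(j-i)) \<le> L \<Longrightarrow> m+1+(j-i) \<le> L \<Longrightarrow> 5 \<le> m+1+(L-(j-i)) \<Longrightarrow> 5 \<le> m+1+(j-i) \<Longrightarrow> False"
  by arith
lemma ar_6_5a: "(m::nat) = 1 \<Longrightarrow> i < j \<Longrightarrow> j < L \<Longrightarrow> L = 6 \<Longrightarrow> m+1+(L-(j-i)) \<le> L \<Longrightarrow> m+1+(j-i) \<le> L \<Longrightarrow> 5 \<le> m+1+(L-(j-i)) \<Longrightarrow> 5 \<le> m+1+(j-i) \<Longrightarrow> j = i + 3 \<and> i < 3"
  by arith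
lemma ar_6_5b: "(m::nat) \<ge> 1 \<Longrightarrow> m \<noteq> 1 \<Longrightarrow> i < j \<Longrightarrow> j < L \<Longrightarrow> L = 6 \<Longrightarrow> m+1+(L-(j-i)) \<le> L \<Longrightarrow> m+1+(j-i) \<le> L \<Longrightarrow> 5 \<le> m+1+(L-(j-i)) \<Longrightarrow> 5 \<le> m+1+(j-i) \<Longrightarrow> m = 2 \<and> (m+1+(L-(j-i)) = L \<or> m+1+(j-i) = L)"
  by arith
lemma ar_7_5a: "(m::nat) = 1 \<Longrightarrow> i < j \<Longrightarrow> j < L \<Longrightarrow> L = 7 \<Longrightarrow> m+1+(L-(j-i)) \<le> L \<Longrightarrow> m+1+(j-i) \<le> L \<Longrightarrow> 5 \<le> m+1+(L-(j-i)) \<Longrightarrow> 5 \<le> m+1+(j-i) \<Longrightarrow> j = i + 3 \<or> j = i + 4"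
  by arith
lemma ar_7_5b: "(m::nat) \<ge> 1 \<Longrightarrow> m \<noteq> 1 \<Longrightarrow> i < j \<Longrightarrow> j < L \<Longrightarrow> L = 7 \<Longrightarrow> m+1+(L-(j-i)) \<le> L \<Longrightarrow> m+1+(j-i) \<le> L \<Longrightarrow> 5 \<le> m+1+(L-(j-i)) \<Longrightarrow> 5 \<le> m+1+(j-i) \<Longrightarrow> m = 2 \<and> (m+1+(L-(j-i)) = L \<or> m+1+(j-i) = L)"
  by arith

lemma R7_contra:
  assumes "(k1::nat) < 7" "k2 < 7" "k3 < 7"
    "k2 = (k1 + 3) mod 7 \<or> k2 = (k1 + 4) mod 7"
    "k3 = (k1 + 3) mod 7 \<or> k3 = (k1 + 4) mod 7"
    "k3 = (k2 + 3) mod 7 \<or> k3 = (k2 + 4) mod 7"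
  shows False
proof -
  have "k1 = 0 \<or> k1 = 1 \<or> k1 = 2 \<or> k1 = 3 \<or> k1 = 4 \<or> k1 = 5 \<or> k1 = 6" using assms(1) by auto
  then show False using assms(4-6) by auto
qed

context g2c
begin

lemma card_O: "is_cycle E C \<Longrightarrow> card V = length C + card (V - set C)"
proof -
  assume c: "is_cycle E C"
  have "card V = card (set C) + card (V - set C)"
    using cycle_V[OF c] finV by (metis card_Diff_subset card_mono le_add_diff_inverse finite_subset)
  then show ?thesis using c by (simp add: is_cycle_def distinct_card)
qed

theorem lower6:
  assumes g: "girth_at_least E 6" and n: "12 \<le> card V"
  shows "8 \<le> cc V E \<and> (odd (card V) \<longrightarrow> 9 \<le> cc V E)"
proof -
  obtain C where C: "is_cycle E C" "\<forall>c. is_cycle E c \<longrightarrow> length c \<le> length C" using longest_ex by blast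
  have L6: "6 \<le> length C" using g C unfolding girth_at_least_def by blast
  have cO: "card V = length C + card (V - set C)" by (rule card_O[OF C(1)])
  have ccL: "length C \<le> cc V E" by (rule cc_geC[OF C])
  consider "length C = 6" | "length C = 7" | "length C = 8" | "9 \<le> length C" using L6 by arith
  then show ?thesis
  proof cases
    case 1
    have "V \<subseteq> cumset"
    proof
      fix v assume v: "v \<in> V"
      show "v \<in> cumset"
      proof (cases "v \<in> set C")
        case True then show ?thesis using setC_cum[OF C] by blast
      next
        case nC: False
        obtain i j I where e: "i < j" "j < length C" "I \<noteq> []" "v \<in> set I"
          "length I + 1 + (length C - (j - i)) \<le> length C" "length I + 1 + (j - i) \<le> length C"
          "6 \<le> length I + 1 + (length C - (j - i))" "6 \<le> length I + 1 + (j - i)"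
          "(length I + 1 + (length C - (j - i)) = length C \<or> length I + 1 + (j - i) = length C
              \<longrightarrow> set I \<subseteq> cumset)"
          using ear_arith[OF C g v nC] by blast
        have m1: "length I \<ge> 1" using e(3) by (cases I) auto
        have "length I + 1 + (length C - (j - i)) = length C \<or> length I + 1 + (j - i) = length C"
          using ar_6_6[OF m1 e(1) e(2) 1 e(5-8)] .
        then show ?thesis using e(9) e(4) by blast
      qed
    qed
    then show ?thesis using cc_all n by simp
  next
    case 2
    have "card (V - set C) \<ge> 1" using cO n 2 by simp
    then have "V - set C \<noteq> {}" by (intro notI) simp
    then obtain v where v: "v \<in> V" "v \<notin> set C" by blast
    obtain i j I where e: "i < j" "j < length C" "I \<noteq> []" "set I \<inter> set C = {}"
      "distinct (C ! i # I @ [C ! j])"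
      "length I + 1 + (length C - (j - i)) \<le> length C" "length I + 1 + (j - i) \<le> length C"
      "6 \<le> length I + 1 + (length C - (j - i))" "6 \<le> length I + 1 + (j - i)"
      "(length I + 1 + (length C - (j - i)) = length C \<or> length I + 1 + (j - i) = length C
          \<longrightarrow> set I \<subseteq> cumset)"
      using ear_arith[OF C g v] by blast
    have m1: "length I \<ge> 1" using e(3) by (cases I) auto
    have m: "length I = 2"
      "length I + 1 + (length C - (j - i)) = length C \<or> length I + 1 + (j - i) = length C"
      using ar_7_6[OF m1 e(1) e(2) 2 e(6-9)] by auto
    have "length C + length I \<le> cc V E" using cc_plus[OF C] e(10) m(2) e(4,5) by auto
    then show ?thesis using 2 m(1) by simp
  next
    case 3
    have "odd (card V) \<longrightarrow> 9 \<le> cc V E"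
    proof
      assume odd: "odd (card V)"
      show "9 \<le> cc V E"
      proof (rule ccontr)
        assume "\<not> 9 \<le> cc V E"
        then have c8: "card cumset \<le> 8" using cc_eq by simp
        have sub: "set C \<subseteq> cumset" by (rule setC_cum[OF C])
        have fin: "finite cumset" using finV by (simp add: cumset_def)
        have "card (set C) = 8" using C(1) 3 by (simp add: is_cycle_def distinct_card)
        then have eq: "set C = cumset" using card_subset_eq[OF fin sub] c8 card_mono[OF fin sub] by simp
        have H: "\<forall>c x. is_cycle E c \<longrightarrow> length c = 8 \<longrightarrow> x \<in> set c \<longrightarrow> x \<in> set C"
        proof (intro allI impI)
          fix c x assume c: "is_cycle E c" "length c = 8" "x \<in> set c"
          have "cummerbund E c" unfolding cummerbund_def using c C 3 by simp
          moreover have "x \<in> V" using cycle_V[OF c(1)] c(3) by blast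
          ultimately have "x \<in> cumset" unfolding cumset_def using c(3) by blast
          then show "x \<in> set C" using eq by simp
        qed
        have lo8: "\<forall>c. is_cycle E c \<longrightarrow> length c \<le> 8" using C(2) 3 by simp
        have P: "P8 C" unfolding P8_def using C(1) 3 lo8 g H by blast
        have "2 \<le> card (V - set C)" using cO n 3 by simp
        then have "even (card (V - set C))" by (rule L8_even[OF P])
        then have "even (card V)" using cO 3 by simp
        then show False using odd by simp
      qed
    qed
    then show ?thesis using ccL 3 by simp
  next
    case 4 then show ?thesis using ccL by simp
  qed
qed

lemma chord6:
  assumes C: "is_cycle E C" "\<forall>c. is_cycle E c \<longrightarrow> length c \<le> length C" and l: "length C = 6"
    and g: "girth_at_least E 5" and v: "v \<in> V" "v \<notin> set C"
  shows "8 \<le> cc V E \<or> (\<exists>i<3. E v (C ! i) \<and> E v (C ! (i + 3)))"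
proof -
  obtain i j I where e: "i < j" "j < length C" "I \<noteq> []" "v \<in> set I" "set I \<inter> set C = {}"
    "distinct (C ! i # I @ [C ! j])" "successively E (C ! i # I @ [C ! j])"
    "length I + 1 + (length C - (j - i)) \<le> length C" "length I + 1 + (j - i) \<le> length C"
    "5 \<le> length I + 1 + (length C - (j - i))" "5 \<le> length I + 1 + (j - i)"
    "(length I + 1 + (length C - (j - i)) = length C \<or> length I + 1 + (j - i) = length C
        \<longrightarrow> set I \<subseteq> cumset)"
    using ear_arith[OF C g v] by blast
  have m1: "length I \<ge> 1" using e(3) by (cases I) auto
  show ?thesis
  proof (cases "length I = 1")
    case True
    then obtain a where a: "I = [a]" by (cases I) auto
    then have "a = v" using e(4) by simp
    then have ed: "E (C ! i) v" "E v (C ! j)" using e(7) a by simp_all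
    have "j = i + 3" "i < 3" using ar_6_5a[OF True e(1) e(2) l e(8-11)] by auto
    then show ?thesis using ed Esym by blast
  next
    case False
    then have "length I = 2" "length I + 1 + (length C - (j - i)) = length C \<or> length I + 1 + (j - i) = length C"
      using ar_6_5b[OF m1 False e(1) e(2) l e(8-11)] by auto
    then have sI: "set I \<subseteq> cumset" using e(12) by blast
    have dI: "distinct I" using e(6) by simp
    have "length C + length I \<le> cc V E" using cc_plus[OF C sI e(5) dI] .
    then show ?thesis using l \<open>length I = 2\<close> by simp
  qed
qed

lemma chord7:
  assumes C: "is_cycle E C" "\<forall>c. is_cycle E c \<longrightarrow> length c \<le> length C" and l: "length C = 7"
    and g: "girth_at_least E 5" and v: "v \<in> V" "v \<notin> set C"
  shows "8 \<le> cc V E \<or> (\<exists>k<7. E v (C ! k) \<and> E v (C ! ((k + 3) mod 7)))"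
proof -
  obtain i j I where e: "i < j" "j < length C" "I \<noteq> []" "v \<in> set I" "set I \<inter> set C = {}"
    "distinct (C ! i # I @ [C ! j])" "successively E (C ! i # I @ [C ! j])"
    "length I + 1 + (length C - (j - i)) \<le> length C" "length I + 1 + (j - i) \<le> length C"
    "5 \<le> length I + 1 + (length C - (j - i))" "5 \<le> length I + 1 + (j - i)"
    "(length I + 1 + (length C - (j - i)) = length C \<or> length I + 1 + (j - i) = length C
        \<longrightarrow> set I \<subseteq> cumset)"
    using ear_arith[OF C g v] by blast
  have m1: "length I \<ge> 1" using e(3) by (cases I) auto
  show ?thesis
  proof (cases "length I = 1")
    case True
    then obtain a where a: "I = [a]" by (cases I) auto
    then have "a = v" using e(4) by simp
    then have ed: "E v (C ! i)" "E v (C ! j)" using e(7) a Esym by simp_all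
    have "j = i + 3 \<or> j = i + 4" using ar_7_5a[OF True e(1) e(2) l e(8-11)] .
    then show ?thesis
    proof
      assume "j = i + 3"
      then show ?thesis using ed e(1,2) l by (intro disjI2 exI[of _ i]) auto
    next
      assume ji: "j = i + 4"
      then have "(j + 3) mod 7 = i" using e(2) l by simp
      then show ?thesis using ed e(1,2) l by (intro disjI2 exI[of _ j]) auto
    qed
  next
    case False
    then have "length I = 2" "length I + 1 + (length C - (j - i)) = length C \<or> length I + 1 + (j - i) = length C"
      using ar_7_5b[OF m1 False e(1) e(2) l e(8-11)] by auto
    then have sI: "set I \<subseteq> cumset" using e(12) by blast
    have dI: "distinct I" using e(6) by simp
    have "length C + length I \<le> cc V E" using cc_plus[OF C sI e(5) dI] .
    then show ?thesis using l \<open>length I = 2\<close> by simp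
  qed
qed

theorem lower5:
  assumes g: "girth_at_least E 5" and n: "10 \<le> card V"
  shows "8 \<le> cc V E"
proof -
  obtain C where C: "is_cycle E C" "\<forall>c. is_cycle E c \<longrightarrow> length c \<le> length C" using longest_ex by blast
  have L5: "5 \<le> length C" using g C unfolding girth_at_least_def by blast
  have cO: "card V = length C + card (V - set C)" by (rule card_O[OF C(1)])
  have ccL: "length C \<le> cc V E" by (rule cc_geC[OF C])
  have fO: "finite (V - set C)" using finV by simp
  consider "length C = 5" | "length C = 6" | "length C = 7" | "8 \<le> length C" using L5 by arith
  then show ?thesis
  proof cases
    case 1
    have "card (V - set C) \<ge> 1" using cO n 1 by simp
    then have "V - set C \<noteq> {}" by (intro notI) simp
    then obtain v where v: "v \<in> V" "v \<notin> set C" by blast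
    obtain i j I where e: "i < j" "j < length C" "I \<noteq> []" "v \<in> set I" "set I \<inter> set C = {}"
      "distinct (C ! i # I @ [C ! j])" "successively E (C ! i # I @ [C ! j])"
      "length I + 1 + (length C - (j - i)) \<le> length C" "length I + 1 + (j - i) \<le> length C"
      "5 \<le> length I + 1 + (length C - (j - i))" "5 \<le> length I + 1 + (j - i)"
      "(length I + 1 + (length C - (j - i)) = length C \<or> length I + 1 + (j - i) = length C
          \<longrightarrow> set I \<subseteq> cumset)"
      using ear_arith[OF C g v] by blast
    have m1: "length I \<ge> 1" using e(3) by (cases I) auto
    show ?thesis using ar_5_5[OF m1 e(1) e(2) 1 e(8-11)] by simp
  next
    case 2
    have "2 \<le> card (V - set C)" using cO n 2 by simp
    then obtain v w where vw: "v \<in> V - set C" "w \<in> V - set C" "v \<noteq> w" using two_elems[OF fO] by blast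
    show ?thesis
    proof (rule ccontr)
      assume nc: "\<not> 8 \<le> cc V E"
      obtain i where i: "i < 3" "E v (C ! i)" "E v (C ! (i + 3))" using chord6[OF C 2 g] vw nc by blast
      obtain i' where i': "i' < 3" "E w (C ! i')" "E w (C ! (i' + 3))" using chord6[OF C 2 g] vw nc by blast
      obtain c0 c1 c2 c3 c4 c5 where D: "C = [c0, c1, c2, c3, c4, c5]" using len6[OF 2] by blast
      have lo: "\<forall>c. is_cycle E c \<longrightarrow> length c \<le> 6" using C(2) 2 by simp
      have C6: "is_cycle E [c0, c1, c2, c3, c4, c5]" using C(1) D by simp
      have dv: "v \<notin> set [c0, c1, c2, c3, c4, c5]" using vw(1) D by simp
      have dw: "w \<notin> set [c0, c1, c2, c3, c4, c5]" using vw(2) D by simp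
      have iv: "E v ([c0, c1, c2, c3, c4, c5] ! i)" "E v ([c0, c1, c2, c3, c4, c5] ! (i + 3))" using i D by simp_all
      have iw: "E w ([c0, c1, c2, c3, c4, c5] ! i')" "E w ([c0, c1, c2, c3, c4, c5] ! (i' + 3))" using i' D by simp_all
      show False by (rule L6_contra[OF C6 lo g dv dw vw(3) i(1) iv i'(1) iw])
    qed
  next
    case 3
    have "3 \<le> card (V - set C)" using cO n 3 by simp
    then obtain u v w where uvw: "u \<in> V - set C" "v \<in> V - set C" "w \<in> V - set C" "u \<noteq> v" "u \<noteq> w" "v \<noteq> w"
      using three_elems[OF fO] by blast
    show ?thesis
    proof (rule ccontr)
      assume nc: "\<not> 8 \<le> cc V E"
      obtain k1 where k1: "k1 < 7" "E u (C ! k1)" "E u (C ! ((k1 + 3) mod 7))" using chord7[OF C 3 g] uvw nc by blast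
      obtain k2 where k2: "k2 < 7" "E v (C ! k2)" "E v (C ! ((k2 + 3) mod 7))" using chord7[OF C 3 g] uvw nc by blast
      obtain k3 where k3: "k3 < 7" "E w (C ! k3)" "E w (C ! ((k3 + 3) mod 7))" using chord7[OF C 3 g] uvw nc by blast
      obtain c0 c1 c2 c3 c4 c5 c6 where D: "C = [c0, c1, c2, c3, c4, c5, c6]" using len7[OF 3] by blast
      have lo: "\<forall>c. is_cycle E c \<longrightarrow> length c \<le> 7" using C(2) 3 by simp
      have C7: "is_cycle E [c0, c1, c2, c3, c4, c5, c6]" using C(1) D by simp
      have du: "u \<notin> set [c0, c1, c2, c3, c4, c5, c6]" using uvw(1) D by simp
      have dv: "v \<notin> set [c0, c1, c2, c3, c4, c5, c6]" using uvw(2) D by simp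
      have dw: "w \<notin> set [c0, c1, c2, c3, c4, c5, c6]" using uvw(3) D by simp
      have e1: "E u ([c0, c1, c2, c3, c4, c5, c6] ! k1)" "E u ([c0, c1, c2, c3, c4, c5, c6] ! ((k1 + 3) mod 7))"
        using k1 D by simp_all
      have e2: "E v ([c0, c1, c2, c3, c4, c5, c6] ! k2)" "E v ([c0, c1, c2, c3, c4, c5, c6] ! ((k2 + 3) mod 7))"
        using k2 D by simp_all
      have e3: "E w ([c0, c1, c2, c3, c4, c5, c6] ! k3)" "E w ([c0, c1, c2, c3, c4, c5, c6] ! ((k3 + 3) mod 7))"
        using k3 D by simp_all
      have r12: "k2 = (k1 + 3) mod 7 \<or> k2 = (k1 + 4) mod 7"
        by (rule Pair7[OF C7 lo g du dv uvw(4) k1(1) e1 k2(1) e2])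
      have r13: "k3 = (k1 + 3) mod 7 \<or> k3 = (k1 + 4) mod 7"
        by (rule Pair7[OF C7 lo g du dw uvw(5) k1(1) e1 k3(1) e3])
      have r23: "k3 = (k2 + 3) mod 7 \<or> k3 = (k2 + 4) mod 7"
        by (rule Pair7[OF C7 lo g dv dw uvw(6) k2(1) e2 k3(1) e3])
      show False using R7_contra[OF k1(1) k2(1) k3(1) r12 r13 r23] .
    qed
  next
    case 4 then show ?thesis using ccL by simp
  qed
qed

end


lemma girth_mono: "girth_at_least E g \<Longrightarrow> g' \<le> g \<Longrightarrow> girth_at_least E g'"
  unfolding girth_at_least_def by force

lemma cc_values_mono: "x \<in> cc_values n g \<Longrightarrow> g' \<le> g \<Longrightarrow> x \<in> cc_values n g'"
  unfolding cc_values_def using girth_mono by blast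

lemma lower_gen:
  assumes "x \<in> cc_values n g"
  obtains V :: "nat set" and E where "g2c V E" "card V = n" "girth_at_least E g" "x = cc V E"
  using assms unfolding cc_values_def g2c_def by blast

theorem theorem16:
  shows "(\<forall>n::nat. n \<ge> 8 \<longrightarrow> is_minimum (cc_values n 4) 6)
       \<and> (\<forall>n::nat. n \<ge> 10 \<longrightarrow> is_minimum (cc_values n 5) 8)
       \<and> (\<forall>n::nat. n \<ge> 12 \<and> even n \<longrightarrow> is_minimum (cc_values n 6) 8)
       \<and> (\<forall>n::nat. n \<ge> 13 \<and> odd n \<longrightarrow> is_minimum (cc_values n 6) 9)"
proof (intro conjI allI impI)
  fix n :: nat assume n: "8 \<le> n"
  have "6 \<in> cc_values n 4" using up4[of "n - 6"] n by simp
  moreover have "\<forall>x\<in>cc_values n 4. 6 \<le> x"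
  proof
    fix x assume "x \<in> cc_values n 4"
    then obtain V :: "nat set" and E where h: "g2c V E" "card V = n" "girth_at_least E 4" "x = cc V E"
      by (rule lower_gen)
    show "6 \<le> x" using g2c.lower4[OF h(1) h(3)] h(2,4) n by simp
  qed
  ultimately show "is_minimum (cc_values n 4) 6" unfolding is_minimum_def by blast
next
  fix n :: nat assume n: "10 \<le> n"
  have "8 \<in> cc_values n 5"
  proof (cases "even n")
    case True
    have "n = 2 * ((n - 8) div 2) + 8" using n True by presburger
    then obtain m where "n = 2 * m + 8" by blast
    then show ?thesis using cc_values_mono[OF up5[of m]] by simp
  next
    case False
    have "n = 2 * ((n - 9) div 2) + 9" using n False by presburger
    then obtain m where "n = 2 * m + 9" by blast
    then show ?thesis using up5o[of m] by simp
  qed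
  moreover have "\<forall>x\<in>cc_values n 5. 8 \<le> x"
  proof
    fix x assume "x \<in> cc_values n 5"
    then obtain V :: "nat set" and E where h: "g2c V E" "card V = n" "girth_at_least E 5" "x = cc V E"
      by (rule lower_gen)
    show "8 \<le> x" using g2c.lower5[OF h(1) h(3)] h(2,4) n by simp
  qed
  ultimately show "is_minimum (cc_values n 5) 8" unfolding is_minimum_def by blast
next
  fix n :: nat assume n: "12 \<le> n \<and> even n"
  have "n = 2 * ((n - 8) div 2) + 8" using n by presburger
  then obtain m where "n = 2 * m + 8" by blast
  then have "8 \<in> cc_values n 6" using up5[of m] by simp
  moreover have "\<forall>x\<in>cc_values n 6. 8 \<le> x"
  proof
    fix x assume "x \<in> cc_values n 6"
    then obtain V :: "nat set" and E where h: "g2c V E" "card V = n" "girth_at_least E 6" "x = cc V E"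
      by (rule lower_gen)
    show "8 \<le> x" using g2c.lower6[OF h(1) h(3)] h(2,4) n by simp
  qed
  ultimately show "is_minimum (cc_values n 6) 8" unfolding is_minimum_def by blast
next
  fix n :: nat assume n: "13 \<le> n \<and> odd n"
  have "n = 2 * ((n - 9) div 2) + 9" using n by presburger
  then obtain m where "n = 2 * m + 9" by blast
  then have "9 \<in> cc_values n 6" using up6o[of m] by simp
  moreover have "\<forall>x\<in>cc_values n 6. 9 \<le> x"
  proof
    fix x assume "x \<in> cc_values n 6"
    then obtain V :: "nat set" and E where h: "g2c V E" "card V = n" "girth_at_least E 6" "x = cc V E"
      by (rule lower_gen)
    show "9 \<le> x" using g2c.lower6[OF h(1) h(3)] h(2,4) n by simp
  qed
  ultimately show "is_minimum (cc_values n 6) 9" unfolding is_minimum_def by blast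
qed


end
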